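(* $\ddot{\varphi}(n): \ddot{H}\ddot{B}\rightarrow \ddot{B}\ddot{H}$ is a monoidal comonad distributive law on $\overline{\mathcal{H}}^{i,j}(Vec_\Bbbk)$ for any $n \in \mathbb{Z}$ if and only if $\varphi$ is a Hom-cotwistor and, for any $a,b \in B$, $h,g \in H$, satisfies (M5) $\sum h^\varphi g^\phi \otimes a^\varphi b^\phi = \sum (hg)^\varphi \otimes (ab)^\varphi$; (M6) $\sum {1_H}^\varphi \otimes {1_B}^\varphi = 1_H \otimes 1_B$.
   Context: $\Bbbk$ is a field of characteristic $0$; all spaces are finite dimensional. For integers $i,j$, $\overline{\mathcal{H}}^{i,j}(Vec_\Bbbk)$ is the monoidal category whose objects are pairs $(X,\alpha_X)$ with $X$ a finite dimensional $\Bbbk$-space and $\alpha_X$ a linear automorphism, morphisms are linear maps commuting with the $\alpha$'s, $(X,\alpha_X)\otimes(Y,\alpha_Y)=(X\otimes Y,\alpha_X\otimes\alpha_Y)$, unit $(\Bbbk,id)$, associativity constraint $a_{X,Y,Z}((x\otimes y)\otimes z)=\alpha_X^{i+1}(x)\otimes(y\otimes\alpha_Z^{-j-1}(z))$, unit constraints $l_X(\lambda\otimes x)=\lambda\alpha_X^{j+1}(x)$, $r_X(x\otimes\lambda)=\lambda\alpha_X^{i+1}(x)$. $(B,\alpha_B)$ and $(H,\alpha_H)$ are Hom-bialgebras over $\Bbbk$ with bijective structure maps. $\ddot{B}=\_\otimes B$, $\ddot{H}=\_\otimes H$ are comonads via $\delta_X(x\otimes h)=(\alpha_X(x)\otimes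 h_1)\otimes\alpha_H^{-1}(h_2)$, $\epsilon_X(x\otimes h)=\varepsilon_H(h)\alpha_X^{-1}(x)$, and monoidal functors via $\ddot{H}_2(X,Y)((x\otimes a)\otimes(y\otimes b))=(x\otimes y)\otimes\alpha_H^i(a)\alpha_H^j(b)$, $\ddot{H}_0(\lambda)=\lambda\otimes 1_H$ (similarly for $B$). $\varphi:B \otimes H\rightarrow H \otimes B$, $\varphi(b\otimes h)=\sum h^\varphi\otimes b^\varphi$, is $\Bbbk$-linear with $\varphi \circ (\alpha_B \otimes \alpha_H) = (\alpha_H \otimes \alpha_B) \circ \varphi$; $\phi$ denotes another copy of $\varphi$. For $n\in\mathbb{Z}$, $\ddot{\varphi}(n)_X((x \otimes b) \otimes h)= \sum (x \otimes {\alpha_H(h)}^\varphi) \otimes \alpha_B^{n}({\alpha_B^{-n-1}(b)}^\varphi)$. $\varphi$ is a Hom-cotwistor if for all $b,h$: (M1) $\sum {{\alpha_H(h)}^\varphi}^\phi \otimes {b_1}^\phi \otimes {b_2}^\varphi = \sum \alpha_H(h^\varphi) \otimes {b^\varphi}_1 \otimes {b^\varphi}_2$; (M2) $\sum {h_1}^\varphi \otimes {h_2}^\phi \otimes { {\alpha_B(b)}^\varphi}^\phi = \sum {h^\varphi}_1 \otimes {h^\varphi}_2 \otimes \alpha_B(b^\varphi)$; (M3) $\sum \varepsilon_H(h^\varphi) b^\varphi = \varepsilon_H(h) b$; (M4) $\sum \varepsilon_B(b^\varphi) h^\varphi = \varepsilon_B(b) h$. For comonads $(F,\Delta,\varepsilon)$,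 $(G,\delta,\epsilon)$ (here $F=\ddot H$, $G=\ddot B$), a comonad distributive law $\psi:FG\to GF$ satisfies $\delta F\circ\psi=G\psi\circ\psi G\circ F\delta$, $G\Delta\circ\psi=\psi F\circ F\psi\circ\Delta G$, $G\varepsilon\circ\psi=\varepsilon G$, $\epsilon F\circ\psi=F\epsilon$. It is a monoidal comonad distributive law if moreover $\psi_{M\otimes N}\circ F(G_2(M,N))\circ F_2(GM,GN) = G(F_2(M,N))\circ G_2(FM,FN)\circ (\psi_M \otimes \psi_N)$ for all $M,N$, and $\psi_I \circ F(G_0) \circ F_0 = G(F_0)\circ G_0$. *)

theory Defs
  imports Main
begin

text \<open>A finite dimensional space of dimension d is modelled as k^d, i.e. the set
  of coordinate vectors nat => k vanishing at indices >= d.  The tensor product k^d (x) k^e is k^(d*e),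
  with (v (x) w) at index p*e+q equal to v p * w q; in these coordinates the
  canonical reassociation X(x)(Y(x)Z) = (X(x)Y)(x)Z is the identity, and k (x) X
  = k^(1*d) = X (x) k = k^d.\<close>

type_synonym 'k vect = "nat \<Rightarrow> 'k"
type_synonym 'k lmap = "'k vect \<Rightarrow> 'k vect"
type_synonym 'k object = "nat \<times> 'k lmap"

definition vsp :: "nat \<Rightarrow> ('k::zero) vect set" where
  "vsp d = {v. \<forall>p\<ge>d. v p = 0}"

definition ebasis :: "nat \<Rightarrow> ('k::{zero,one}) vect" where
  "ebasis i = (\<lambda>p. if p = i then 1 else 0)"

definition tv :: "nat \<Rightarrow> ('k::times) vect \<Rightarrow> 'k vect \<Rightarrow> 'k vect" where
  "tv e v w = (\<lambda>p. v (p div e) * w (p mod e))"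

text \<open>tensor product f (x) g of linear maps f : k^d1 -> k^e1, g : k^d2 -> k^e2\<close>
definition tmap :: "nat \<Rightarrow> nat \<Rightarrow> nat \<Rightarrow> ('k::comm_semiring_1) lmap \<Rightarrow> 'k lmap \<Rightarrow> 'k lmap" where
  "tmap d1 d2 e2 f g u = (\<lambda>p. \<Sum>q<d1*d2.
      u q * f (ebasis (q div d2)) (p div e2) * g (ebasis (q mod d2)) (p mod e2))"

definition lin :: "nat \<Rightarrow> nat \<Rightarrow> ('k::semiring_1) lmap \<Rightarrow> bool" where
  "lin d e f \<longleftrightarrow> (\<forall>v\<in>vsp d. f v \<in> vsp e)
     \<and> (\<forall>u\<in>vsp d. \<forall>v\<in>vsp d. f (\<lambda>p. u p + v p) = (\<lambda>p. f u p + f v p))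
     \<and> (\<forall>c. \<forall>v\<in>vsp d. f (\<lambda>p. c * v p) = (\<lambda>p. c * f v p))"

definition linf :: "nat \<Rightarrow> (('k::semiring_1) vect \<Rightarrow> 'k) \<Rightarrow> bool" where
  "linf d c \<longleftrightarrow> (\<forall>u\<in>vsp d. \<forall>v\<in>vsp d. c (\<lambda>p. u p + v p) = c u + c v)
     \<and> (\<forall>a. \<forall>v\<in>vsp d. c (\<lambda>p. a * v p) = a * c v)"

text \<open>a linear functional viewed as a linear map into k = k^1\<close>
definition eps1 :: "(('k::zero) vect \<Rightarrow> 'k) \<Rightarrow> 'k lmap" where
  "eps1 c = (\<lambda>v p. if p = 0 then c v else 0)"

definition mapeq :: "nat \<Rightarrow> ('k::zero) lmap \<Rightarrow> 'k lmap \<Rightarrow> bool" where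
  "mapeq d f g \<longleftrightarrow> (\<forall>v\<in>vsp d. f v = g v)"

definition zpow :: "nat \<Rightarrow> ('k::zero) lmap \<Rightarrow> int \<Rightarrow> 'k lmap" where
  "zpow d f i = (if 0 \<le> i then f ^^ nat i else (inv_into (vsp d) f) ^^ nat (- i))"

text \<open>the middle swap (X1(x)X2)(x)(X3(x)X4) -> (X1(x)X3)(x)(X2(x)X4)\<close>
definition sw :: "nat \<Rightarrow> nat \<Rightarrow> nat \<Rightarrow> nat \<Rightarrow> ('k::zero) lmap" where
  "sw d1 d2 d3 d4 u = (\<lambda>p. if p < d1*d3*(d2*d4) then
     u (((p div (d2*d4)) div d3 * d2 + (p mod (d2*d4)) div d4) * (d3*d4)
        + ((p div (d2*d4)) mod d3 * d4 + (p mod (d2*d4)) mod d4)) else 0)"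

text \<open>product in the tensor product A1 (x) A2 of two algebras:
  (a1 (x) a2)(b1 (x) b2) = a1 b1 (x) a2 b2, extended bilinearly\<close>
definition tprod :: "nat \<Rightarrow> ('k::comm_semiring_1) lmap \<Rightarrow> nat \<Rightarrow> 'k lmap \<Rightarrow> 'k vect \<Rightarrow> 'k vect \<Rightarrow> 'k vect" where
  "tprod d1 m1 d2 m2 x y = (\<lambda>p. \<Sum>q<d1*d2. \<Sum>r<d1*d2. x q * y r *
      tv d2 (m1 (tv d1 (ebasis (q div d2)) (ebasis (r div d2))))
            (m2 (tv d2 (ebasis (q mod d2)) (ebasis (r mod d2)))) p)"

record 'k hbialg =
  hdim :: nat
  hmul :: "'k lmap"          \<comment> \<open>A (x) A -> A\<close>
  hone :: "'k vect"
  hcomul :: "'k lmap"        \<comment> \<open>A -> A (x) A\<close>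
  hcounit :: "'k vect \<Rightarrow> 'k"
  halpha :: "'k lmap"

definition hom_bialgebra :: "('k::field) hbialg \<Rightarrow> bool" where
  "hom_bialgebra A \<longleftrightarrow>
    (let d = hdim A; m = hmul A; u = hone A; c = hcomul A; e = hcounit A; al = halpha A;
         mul = (\<lambda>a b. m (tv d a b)) in
     lin (d*d) d m \<and> u \<in> vsp d \<and> lin d (d*d) c \<and> linf d e \<and> lin d d al
     \<and> bij_betw al (vsp d) (vsp d)
     \<comment> \<open>Hom-associativity and Hom-unitality\<close>
     \<and> (\<forall>a\<in>vsp d. \<forall>b\<in>vsp d. \<forall>x\<in>vsp d. mul (al a) (mul b x) = mul (mul a b) (al x))
     \<and> (\<forall>a\<in>vsp d. mul u a = al a \<and> mul a u = al a)
     \<comment> \<open>Hom-coassociativity and Hom-counitality\<close>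
     \<and> (\<forall>a\<in>vsp d. tmap d d (d*d) al c (c a) = tmap d d d c al (c a))
     \<and> (\<forall>a\<in>vsp d. tmap d d 1 id (eps1 e) (c a) = al a \<and> tmap d d d (eps1 e) id (c a) = al a)
     \<comment> \<open>alpha is a morphism of the structure\<close>
     \<and> (\<forall>a\<in>vsp d. \<forall>b\<in>vsp d. al (mul a b) = mul (al a) (al b)) \<and> al u = u
     \<and> (\<forall>a\<in>vsp d. c (al a) = tmap d d d al al (c a)) \<and> (\<forall>a\<in>vsp d. e (al a) = e a)
     \<comment> \<open>comultiplication and counit are algebra maps\<close>
     \<and> (\<forall>a\<in>vsp d. \<forall>b\<in>vsp d. c (mul a b) = tprod d m d m (c a) (c b)) \<and> c u = tv d u u
     \<and> (\<forall>a\<in>vsp d. \<forall>b\<in>vsp d. e (mul a b) = e a * e b) \<and> e u = 1)"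

definition obj :: "('k::field) object \<Rightarrow> bool" where
  "obj X \<longleftrightarrow> lin (fst X) (fst X) (snd X) \<and> bij_betw (snd X) (vsp (fst X)) (vsp (fst X))"

definition mor :: "('k::field) object \<Rightarrow> 'k object \<Rightarrow> 'k lmap \<Rightarrow> bool" where
  "mor X Y f \<longleftrightarrow> lin (fst X) (fst Y) f \<and> (\<forall>v\<in>vsp (fst X). f (snd X v) = snd Y (f v))"

definition unit_obj :: "('k::field) object" where
  "unit_obj = (1, id)"

definition otens :: "('k::field) object \<Rightarrow> 'k object \<Rightarrow> 'k object" where
  "otens X Y = (fst X * fst Y, tmap (fst X) (fst Y) (fst Y) (snd X) (snd Y))"

text \<open>the functor _ (x) A on objects and on morphisms (d = dimension of the source)\<close>
definition fobj :: "('k::field) hbialg \<Rightarrow> 'k object \<Rightarrow> 'k object" where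
  "fobj A X = (fst X * hdim A, tmap (fst X) (hdim A) (hdim A) (snd X) (halpha A))"

definition fmor :: "('k::field) hbialg \<Rightarrow> nat \<Rightarrow> 'k lmap \<Rightarrow> 'k lmap" where
  "fmor A d f = tmap d (hdim A) (hdim A) f id"

text \<open>comultiplication delta_X(x (x) h) = (alpha_X x (x) h_1) (x) alpha^-1 h_2\<close>
definition cdelta :: "('k::field) hbialg \<Rightarrow> 'k object \<Rightarrow> 'k lmap" where
  "cdelta A X = tmap (fst X) (hdim A) (hdim A * hdim A) (snd X)
     (\<lambda>h. tmap (hdim A) (hdim A) (hdim A) id (inv_into (vsp (hdim A)) (halpha A)) (hcomul A h))"

text \<open>counit epsilon_X(x (x) h) = eps(h) alpha_X^-1 x\<close>
definition cepsilon :: "('k::field) hbialg \<Rightarrow> 'k object \<Rightarrow> 'k lmap" where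
  "cepsilon A X = tmap (fst X) (hdim A) 1 (inv_into (vsp (fst X)) (snd X)) (eps1 (hcounit A))"

text \<open>monoidal structure A_2(X,Y)((x (x) a) (x) (y (x) b)) = (x (x) y) (x) alpha^i(a) alpha^j(b)\<close>
definition mon2 :: "int \<Rightarrow> int \<Rightarrow> ('k::field) hbialg \<Rightarrow> 'k object \<Rightarrow> 'k object \<Rightarrow> 'k lmap" where
  "mon2 i j A X Y = tmap (fst X * fst Y) (hdim A * hdim A) (hdim A) id
      (\<lambda>c. hmul A (tmap (hdim A) (hdim A) (hdim A)
                     (zpow (hdim A) (halpha A) i) (zpow (hdim A) (halpha A) j) c))
    \<circ> sw (fst X) (hdim A) (fst Y) (hdim A)"

definition mon0 :: "('k::field) hbialg \<Rightarrow> 'k lmap" where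
  "mon0 A u = tv (hdim A) u (hone A)"

text \<open>Monoidal comonad distributive law psi : F G -> G F with F = H.. (comultiplication
  Delta = cdelta H, counit cepsilon H) and G = B.. (delta = cdelta B, counit cepsilon B).
  psi is a family of linear maps indexed by the objects.\<close>
definition mon_comonad_distr_law ::
  "int \<Rightarrow> int \<Rightarrow> ('k::field) hbialg \<Rightarrow> 'k hbialg \<Rightarrow> ('k object \<Rightarrow> 'k lmap) \<Rightarrow> bool" where
  "mon_comonad_distr_law i j (B::'k hbialg) H psi \<longleftrightarrow>
    (let F = fobj H; G = fobj B; Fm = fmor H; Gm = fmor B in
     \<comment> \<open>psi is a natural transformation F G -> G F\<close>
     (\<forall>X::'k object. obj X \<longrightarrow> mor (F (G X)) (G (F X)) (psi X))
     \<and> (\<forall>(X::'k object) (Y::'k object) (f::'k lmap). obj X \<longrightarrow> obj Y \<longrightarrow> mor X Y f \<longrightarrow>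
          mapeq (fst (F (G X))) (psi Y \<circ> Fm (fst (G X)) (Gm (fst X) f))
                                (Gm (fst (F X)) (Fm (fst X) f) \<circ> psi X))
     \<comment> \<open>comonad distributive law axioms\<close>
     \<and> (\<forall>X::'k object. obj X \<longrightarrow>
          mapeq (fst (F (G X))) (cdelta B (F X) \<circ> psi X)
            (Gm (fst (F (G X))) (psi X) \<circ> psi (G X) \<circ> Fm (fst (G X)) (cdelta B X)))
     \<and> (\<forall>X::'k object. obj X \<longrightarrow>
          mapeq (fst (F (G X))) (Gm (fst (F X)) (cdelta H X) \<circ> psi X)
            (psi (F X) \<circ> Fm (fst (F (G X))) (psi X) \<circ> cdelta H (G X)))
     \<and> (\<forall>X::'k object. obj X \<longrightarrow>
          mapeq (fst (F (G X))) (Gm (fst (F X)) (cepsilon H X) \<circ> psi X) (cepsilon H (G X)))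
     \<and> (\<forall>X::'k object. obj X \<longrightarrow>
          mapeq (fst (F (G X))) (cepsilon B (F X) \<circ> psi X) (Fm (fst (G X)) (cepsilon B X)))
     \<comment> \<open>monoidality\<close>
     \<and> (\<forall>(M::'k object) (N::'k object). obj M \<longrightarrow> obj N \<longrightarrow>
          mapeq (fst (otens (F (G M)) (F (G N))))
            (psi (otens M N) \<circ> Fm (fst (otens (G M) (G N))) (mon2 i j B M N)
               \<circ> mon2 i j H (G M) (G N))
            (Gm (fst (otens (F M) (F N))) (mon2 i j H M N) \<circ> mon2 i j B (F M) (F N)
               \<circ> tmap (fst (F (G M))) (fst (F (G N))) (fst (G (F N))) (psi M) (psi N)))
     \<and> mapeq 1 (psi unit_obj \<circ> Fm (fst (unit_obj::'k object)) (mon0 B) \<circ> mon0 H)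
               (Gm (fst (unit_obj::'k object)) (mon0 H) \<circ> mon0 B))"

text \<open>phi : B (x) H -> H (x) B, a linear map k^(dB*dH) -> k^(dH*dB)\<close>
definition ddphi :: "int \<Rightarrow> ('k::field) hbialg \<Rightarrow> 'k hbialg \<Rightarrow> 'k lmap \<Rightarrow> 'k object \<Rightarrow> 'k lmap" where
  "ddphi n B H phi X = tmap (fst X) (hdim B * hdim H) (hdim H * hdim B) id
     (tmap (hdim H) (hdim B) (hdim B) id (zpow (hdim B) (halpha B) n)
       \<circ> phi \<circ> tmap (hdim B) (hdim H) (hdim H) (zpow (hdim B) (halpha B) (- n - 1)) (halpha H))"

definition hom_cotwistor :: "('k::field) hbialg \<Rightarrow> 'k hbialg \<Rightarrow> 'k lmap \<Rightarrow> bool" where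
  "hom_cotwistor B H phi \<longleftrightarrow>
    (let dB = hdim B; dH = hdim H in
     \<comment> \<open>(M1)\<close>
     (\<forall>b\<in>vsp dB. \<forall>h\<in>vsp dH.
        tmap (dB*dH) dB dB phi id
          (tmap dB (dB*dH) (dH*dB) id phi (tv dH (hcomul B b) (halpha H h)))
        = tmap dH dB (dB*dB) (halpha H) (hcomul B) (phi (tv dH b h)))
     \<comment> \<open>(M2)\<close>
     \<and> (\<forall>b\<in>vsp dB. \<forall>h\<in>vsp dH.
        tmap dH (dB*dH) (dH*dB) id phi
          (tmap (dB*dH) dH dH phi id (tv (dH*dH) (halpha B b) (hcomul H h)))
        = tmap dH dB dB (hcomul H) (halpha B) (phi (tv dH b h)))
     \<comment> \<open>(M3)\<close>
     \<and> (\<forall>b\<in>vsp dB. \<forall>h\<in>vsp dH.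
        tmap dH dB dB (eps1 (hcounit H)) id (phi (tv dH b h)) = (\<lambda>p. hcounit H h * b p))
     \<comment> \<open>(M4)\<close>
     \<and> (\<forall>b\<in>vsp dB. \<forall>h\<in>vsp dH.
        tmap dH dB 1 id (eps1 (hcounit B)) (phi (tv dH b h)) = (\<lambda>p. hcounit B b * h p)))"

definition cond_M5 :: "('k::field) hbialg \<Rightarrow> 'k hbialg \<Rightarrow> 'k lmap \<Rightarrow> bool" where
  "cond_M5 B H phi \<longleftrightarrow>
    (let dB = hdim B; dH = hdim H in
     \<forall>a\<in>vsp dB. \<forall>b\<in>vsp dB. \<forall>h\<in>vsp dH. \<forall>g\<in>vsp dH.
       tprod dH (hmul H) dB (hmul B) (phi (tv dH a h)) (phi (tv dH b g))
       = phi (tv dH (hmul B (tv dB a b)) (hmul H (tv dH h g))))"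

definition cond_M6 :: "('k::field) hbialg \<Rightarrow> 'k hbialg \<Rightarrow> 'k lmap \<Rightarrow> bool" where
  "cond_M6 B H phi \<longleftrightarrow> phi (tv (hdim H) (hone B) (hone H)) = tv (hdim B) (hone H) (hone B)"

end

theory Submission
  imports Defs
begin


lemma divmod_bound: "(q::nat) < d1*d2 \<Longrightarrow> q div d2 < d1 \<and> q mod d2 < d2"
  by (metis less_mult_imp_div_less mod_less_divisor mult_0_right neq0_conv not_less0)

lemma sum_split_mult:
  fixes F :: "nat \<Rightarrow> 'a::comm_monoid_add"
  shows "(\<Sum>q<m*d. F q) = (\<Sum>a<m. \<Sum>b<d. F (a*d+b))"
proof (induction m)
  case 0 then show ?case by simp
next
  case (Suc m)
  have e: "{..<Suc m * d} = {..<m*d} \<union> {m*d..<m*d+d}" by auto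
  have r: "(\<Sum>q\<in>{m*d..<m*d+d}. F q) = (\<Sum>b<d. F (m*d+b))"
    by (rule sum.reindex_bij_witness[where i="\<lambda>b. m*d+b" and j="\<lambda>q. q - m*d"]) auto
  have "(\<Sum>q<Suc m*d. F q) = (\<Sum>q<m*d. F q) + (\<Sum>q\<in>{m*d..<m*d+d}. F q)"
    unfolding e by (rule sum.union_disjoint) auto
  then show ?case using Suc r by simp
qed

lemma vsp_zero[simp]: "(\<lambda>p. 0) \<in> vsp d" by (simp add: vsp_def)
lemma vsp_add: "(u::'k::field vect) \<in> vsp d \<Longrightarrow> v \<in> vsp d \<Longrightarrow> (\<lambda>p. u p + v p) \<in> vsp d"
  by (simp add: vsp_def)
lemma vsp_smult: "v \<in> vsp d \<Longrightarrow> (\<lambda>p. (c::'k::field) * v p) \<in> vsp d"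
  by (simp add: vsp_def)
lemma vspD: "v \<in> vsp d \<Longrightarrow> d \<le> p \<Longrightarrow> v p = 0" by (simp add: vsp_def)
lemma vspI: "(\<And>p. d \<le> p \<Longrightarrow> v p = 0) \<Longrightarrow> v \<in> vsp d" by (simp add: vsp_def)
lemma vsp_sum: "(\<And>q. q \<in> S \<Longrightarrow> w q \<in> vsp d) \<Longrightarrow> (\<lambda>p. \<Sum>q\<in>S. (c q::'k::field) * w q p) \<in> vsp d"
  by (simp add: vsp_def)
lemma ebasis_vsp[simp]: "i < d \<Longrightarrow> ebasis i \<in> vsp d" by (simp add: vsp_def ebasis_def)

lemma linD1: "lin d e f \<Longrightarrow> v \<in> vsp d \<Longrightarrow> f v \<in> vsp e" by (simp add: lin_def)
lemma linD2: "lin d e f \<Longrightarrow> u \<in> vsp d \<Longrightarrow> v \<in> vsp d \<Longrightarrow> f (\<lambda>p. u p + v p) = (\<lambda>p. f u p + f v p)"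
  by (simp add: lin_def)
lemma linD3: "lin d e f \<Longrightarrow> v \<in> vsp d \<Longrightarrow> f (\<lambda>p. c * v p) = (\<lambda>p. c * f v p)"
  by (simp add: lin_def)

lemma lin_zero:
  assumes "lin d e (f::'k::field lmap)" shows "f (\<lambda>p. 0) = (\<lambda>p. 0)"
  using linD3[OF assms vsp_zero[of d], of 0] by simp

lemma lin_sum:
  fixes f :: "'k::field lmap"
  assumes "lin d e f" "finite S" "\<And>q. q \<in> S \<Longrightarrow> w q \<in> vsp d"
  shows "f (\<lambda>p. \<Sum>q\<in>S. c q * w q p) = (\<lambda>p. \<Sum>q\<in>S. c q * f (w q) p)"
  using assms(2,3)
proof (induction S rule: finite_induct)
  case empty then show ?case using lin_zero[OF assms(1)] by simp
next
  case (insert x F)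
  have "f (\<lambda>p. \<Sum>q\<in>insert x F. c q * w q p) = f (\<lambda>p. c x * w x p + (\<Sum>q\<in>F. c q * w q p))"
    using insert by simp
  also have "\<dots> = (\<lambda>p. f (\<lambda>p. c x * w x p) p + f (\<lambda>p. \<Sum>q\<in>F. c q * w q p) p)"
    by (rule linD2[OF assms(1)]) (use insert in \<open>auto intro: vsp_smult vsp_sum\<close>)
  also have "\<dots> = (\<lambda>p. \<Sum>q\<in>insert x F. c q * f (w q) p)"
    using insert linD3[OF assms(1), of "w x" "c x"] by simp
  finally show ?case .
qed

lemma vsp_expand:
  assumes "v \<in> vsp d" shows "v = (\<lambda>p. \<Sum>q<d. v q * (ebasis q p::'k::field))"
proof
  fix p show "v p = (\<Sum>q<d. v q * ebasis q p)"
  proof (cases "p < d")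
    case True
    then have "(\<Sum>q<d. v q * ebasis q p) = (\<Sum>q\<in>{p}. v q * ebasis q p)"
      by (intro sum.mono_neutral_right) (auto simp: ebasis_def)
    then show ?thesis by (simp add: ebasis_def)
  next
    case False then show ?thesis using assms by (auto simp: vsp_def ebasis_def)
  qed
qed

lemma lin_expand:
  assumes "lin d e (f::'k::field lmap)" "v \<in> vsp d"
  shows "f v = (\<lambda>p. \<Sum>q<d. v q * f (ebasis q) p)"
proof -
  have "f v = f (\<lambda>p. \<Sum>q<d. v q * ebasis q p)" using vsp_expand[OF assms(2)] by simp
  also have "\<dots> = (\<lambda>p. \<Sum>q<d. v q * f (ebasis q) p)" by (rule lin_sum[OF assms(1)]) auto
  finally show ?thesis .
qed

lemma lin_ext:
  assumes "lin d e (f::'k::field lmap)" "lin d e' g" "\<And>q. q < d \<Longrightarrow> f (ebasis q) = g (ebasis q)"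
  shows "mapeq d f g"
  unfolding mapeq_def
proof
  fix v :: "'k vect" assume v: "v \<in> vsp d"
  have "f v = (\<lambda>p. \<Sum>q<d. v q * f (ebasis q) p)" by (rule lin_expand[OF assms(1) v])
  also have "\<dots> = (\<lambda>p. \<Sum>q<d. v q * g (ebasis q) p)" using assms(3) by simp
  also have "\<dots> = g v" by (rule lin_expand[OF assms(2) v, symmetric])
  finally show "f v = g v" .
qed

lemma mapeq_refl[simp]: "mapeq d f f" by (simp add: mapeq_def)
lemma mapeq_sym: "mapeq d f g \<Longrightarrow> mapeq d g f" by (simp add: mapeq_def)
lemma mapeq_trans[trans]: "mapeq d f g \<Longrightarrow> mapeq d g h \<Longrightarrow> mapeq d f h" by (simp add: mapeq_def)
lemma mapeqD: "mapeq d f g \<Longrightarrow> v \<in> vsp d \<Longrightarrow> f v = g v" by (simp add: mapeq_def)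
lemma mapeq_compL: "mapeq e f g \<Longrightarrow> (\<And>v. v \<in> vsp d \<Longrightarrow> h v \<in> vsp e) \<Longrightarrow> mapeq d (f \<circ> h) (g \<circ> h)"
  by (simp add: mapeq_def)
lemma mapeq_compR: "mapeq d f g \<Longrightarrow> mapeq d (h \<circ> f) (h \<circ> g)"
  by (simp add: mapeq_def)

lemma lin_comp: "lin d e f \<Longrightarrow> lin e e' g \<Longrightarrow> lin d e' (g \<circ> f)"
  unfolding lin_def by (auto simp: vsp_smult)
lemma lin_id[simp]: "lin d d id" by (simp add: lin_def)
lemma lin_cong: "lin d e (f::'k::field lmap) \<Longrightarrow> mapeq d f g \<Longrightarrow> lin d e g"
  unfolding lin_def mapeq_def by (simp add: vsp_add vsp_smult)

lemma tv_vsp: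
  assumes "(a::'k::field vect) \<in> vsp d1" "b \<in> vsp d2" shows "tv d2 a b \<in> vsp (d1*d2)"
proof (rule vspI)
  fix p assume p: "d1*d2 \<le> p"
  show "tv d2 a b p = 0"
  proof (cases "d2 = 0")
    case True then show ?thesis using assms(2) by (simp add: tv_def vsp_def)
  next
    case False
    then have "d1 \<le> p div d2" using p by (metis div_le_mono div_mult_self_is_m neq0_conv)
    then show ?thesis using assms(1) by (simp add: tv_def vsp_def)
  qed
qed

lemma tv_ebasis: assumes b: "b < d2" shows "tv d2 (ebasis a) (ebasis b) = (ebasis (a*d2+b) :: 'k::field vect)"
proof
  fix p
  have iff: "(p div d2 = a \<and> p mod d2 = b) \<longleftrightarrow> p = a*d2+b"
  proof
    assume "p div d2 = a \<and> p mod d2 = b"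
    then show "p = a*d2+b" by (metis div_mult_mod_eq)
  next
    assume "p = a*d2+b" then show "p div d2 = a \<and> p mod d2 = b" using b by simp
  qed
  have "tv d2 (ebasis a) (ebasis b) p = (if p div d2 = a \<and> p mod d2 = b then 1 else (0::'k))"
    by (simp add: tv_def ebasis_def)
  also have "\<dots> = (if p = a*d2+b then 1 else 0)" using iff by simp
  also have "\<dots> = ebasis (a*d2+b) p" by (simp add: ebasis_def)
  finally show "tv d2 (ebasis a) (ebasis b) p = (ebasis (a*d2+b) :: 'k vect) p" .
qed

lemma ebasis_split: "q < d1*d2 \<Longrightarrow> (ebasis q :: 'k::field vect) = tv d2 (ebasis (q div d2)) (ebasis (q mod d2))"
  using divmod_bound[of q d1 d2] by (subst tv_ebasis) (auto simp: mult.commute)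

lemma tv_linL: "tv e (\<lambda>p. (u::'k::field vect) p + v p) w = (\<lambda>p. tv e u w p + tv e v w p)"
  by (simp add: tv_def fun_eq_iff algebra_simps)
lemma tv_linR: "tv e w (\<lambda>p. (u::'k::field vect) p + v p) = (\<lambda>p. tv e w u p + tv e w v p)"
  by (simp add: tv_def fun_eq_iff algebra_simps)
lemma tv_smultL: "tv e (\<lambda>p. c * u p) w = (\<lambda>p. (c::'k::field) * tv e u w p)"
  by (simp add: tv_def fun_eq_iff algebra_simps)
lemma tv_smultR: "tv e w (\<lambda>p. c * u p) = (\<lambda>p. (c::'k::field) * tv e w u p)"
  by (simp add: tv_def fun_eq_iff algebra_simps)

lemma tmap_alt: "tmap d1 d2 e2 f g u = (\<lambda>p. \<Sum>q<d1*d2. u q * tv e2 (f (ebasis (q div d2))) (g (ebasis (q mod d2))) p)"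
  by (simp add: tmap_def tv_def mult.assoc)

lemma tmap_tv:
  fixes f g :: "'k::field lmap"
  assumes f: "lin d1 e1 f" and g: "lin d2 e2 g" and u: "u \<in> vsp d1" and w: "w \<in> vsp d2"
  shows "tmap d1 d2 e2 f g (tv d2 u w) = tv e2 (f u) (g w)"
proof
  fix p
  have "tmap d1 d2 e2 f g (tv d2 u w) p =
     (\<Sum>a<d1. \<Sum>b<d2. (u a * f (ebasis a) (p div e2)) * (w b * g (ebasis b) (p mod e2)))"
    unfolding tmap_def sum_split_mult
    by (intro sum.cong refl) (simp add: tv_def ac_simps)
  also have "\<dots> = (\<Sum>a<d1. u a * f (ebasis a) (p div e2)) * (\<Sum>b<d2. w b * g (ebasis b) (p mod e2))"
    by (simp add: sum_product)
  also have "\<dots> = f u (p div e2) * g w (p mod e2)"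
    using lin_expand[OF f u] lin_expand[OF g w] by simp
  finally show "tmap d1 d2 e2 f g (tv d2 u w) p = tv e2 (f u) (g w) p" by (simp add: tv_def)
qed

lemma tmap_lin:
  fixes f g :: "'k::field lmap"
  assumes f: "lin d1 e1 f" and g: "lin d2 e2 g"
  shows "lin (d1*d2) (e1*e2) (tmap d1 d2 e2 f g)"
  unfolding lin_def
proof (intro conjI ballI allI)
  fix v :: "'k vect" assume v: "v \<in> vsp (d1*d2)"
  show "tmap d1 d2 e2 f g v \<in> vsp (e1*e2)"
    unfolding tmap_alt
  proof (rule vsp_sum)
    fix q assume "q \<in> {..<d1*d2}"
    then have "q div d2 < d1" "q mod d2 < d2" using divmod_bound by auto
    then show "tv e2 (f (ebasis (q div d2))) (g (ebasis (q mod d2))) \<in> vsp (e1*e2)"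
      using f g by (intro tv_vsp) (auto intro: linD1)
  qed
next
  fix u v :: "'k vect"
  show "tmap d1 d2 e2 f g (\<lambda>p. u p + v p) = (\<lambda>p. tmap d1 d2 e2 f g u p + tmap d1 d2 e2 f g v p)"
    by (simp add: tmap_alt sum.distrib algebra_simps)
next
  fix c :: 'k and v :: "'k vect"
  show "tmap d1 d2 e2 f g (\<lambda>p. c * v p) = (\<lambda>p. c * tmap d1 d2 e2 f g v p)"
    by (simp add: tmap_alt sum_distrib_left algebra_simps)
qed

lemma tmap_cong:
  assumes "mapeq d1 f f'" "mapeq d2 g g'"
  shows "tmap d1 d2 e2 f g = tmap d1 d2 e2 f' g'"
proof -
  have "\<And>q. q < d1*d2 \<Longrightarrow> q div d2 < d1 \<and> q mod d2 < d2" using divmod_bound by auto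
  then show ?thesis using assms unfolding tmap_def mapeq_def
    by (intro ext sum.cong refl) (auto)
qed

lemma tensor_ext:
  fixes F G :: "'k::field lmap"
  assumes F: "lin (d1*d2) e F" and G: "lin (d1*d2) e' G"
    and eq: "\<And>u w. u \<in> vsp d1 \<Longrightarrow> w \<in> vsp d2 \<Longrightarrow> F (tv d2 u w) = G (tv d2 u w)"
  shows "mapeq (d1*d2) F G"
proof (rule lin_ext[OF F G])
  fix q assume q: "q < d1*d2"
  then have "q div d2 < d1" "q mod d2 < d2" using divmod_bound by auto
  then show "F (ebasis q) = G (ebasis q)" using eq[OF ebasis_vsp ebasis_vsp] ebasis_split[OF q] by metis
qed

lemma lin_tvL: "w \<in> vsp d2 \<Longrightarrow> lin d1 (d1*d2) (\<lambda>u. tv d2 u (w::'k::field vect))"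
  unfolding lin_def by (auto simp: tv_vsp tv_linL tv_smultL)
lemma lin_tvR: "u \<in> vsp d1 \<Longrightarrow> lin d2 (d1*d2) (\<lambda>w. tv d2 (u::'k::field vect) w)"
  unfolding lin_def by (auto simp: tv_vsp tv_linR tv_smultR)

lemma tv_assoc:
  assumes v: "(v::'k::field vect) \<in> vsp b" and w: "w \<in> vsp c"
  shows "tv c (tv b u v) w = tv (b*c) u (tv c v w)"
proof
  fix p
  show "tv c (tv b u v) w p = tv (b*c) u (tv c v w) p"
  proof (cases "c = 0")
    case True then show ?thesis using w by (simp add: tv_def vsp_def)
  next
    case c: False
    show ?thesis
    proof (cases "b = 0")
      case True then show ?thesis using v by (simp add: tv_def vsp_def)
    next
      case b: False
      have 1: "p div (b*c) = p div c div b" by (metis div_mult2_eq mult.commute)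
      have "p mod (b*c) = c*(p div c mod b) + p mod c" by (metis mod_mult2_eq mult.commute)
      then have 2: "p mod (b*c) div c = p div c mod b"
        using c by simp
      have 3: "p mod (b*c) mod c = p mod c" by (simp add: mod_mod_cancel)
      show ?thesis by (simp add: tv_def 1 2 3 mult.assoc)
    qed
  qed
qed

lemma tv_unitL: "(u::'k::field vect) \<in> vsp d \<Longrightarrow> tv d (ebasis 0) u = u"
proof
  fix p assume u: "u \<in> vsp d"
  show "tv d (ebasis 0) u p = u p"
  proof (cases "p < d")
    case True then show ?thesis by (simp add: tv_def ebasis_def)
  next
    case False
    then have "u p = 0" using u by (simp add: vsp_def)
    moreover have "d = 0 \<or> p div d \<noteq> 0" using False by (auto simp: div_eq_0_iff)
    ultimately show ?thesis using u by (auto simp: tv_def ebasis_def vsp_def)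
  qed
qed

lemma tv_unitR: "tv 1 (u::'k::field vect) (ebasis 0) = u"
  by (simp add: tv_def ebasis_def)

lemma tensor_ext3:
  fixes F G :: "'k::field lmap"
  assumes F: "lin (d1*d2*d3) e F" and G: "lin (d1*d2*d3) e' G"
    and eq: "\<And>a b c :: 'k::field vect. a \<in> vsp d1 \<Longrightarrow> b \<in> vsp d2 \<Longrightarrow> c \<in> vsp d3 \<Longrightarrow> F (tv d3 (tv d2 a b) c) = G (tv d3 (tv d2 a b) c)"
  shows "mapeq (d1*d2*d3) F G"
proof (rule tensor_ext[OF F G])
  fix u w :: "'k vect" assume u: "u \<in> vsp (d1*d2)" and w: "w \<in> vsp d3"
  have "mapeq (d1*d2) (F \<circ> (\<lambda>u. tv d3 u w)) (G \<circ> (\<lambda>u. tv d3 u w))"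
    by (rule tensor_ext[OF lin_comp[OF lin_tvL[OF w] F] lin_comp[OF lin_tvL[OF w] G]])
       (simp add: eq w)
  then show "F (tv d3 u w) = G (tv d3 u w)" using u by (simp add: mapeq_def)
qed

lemma tmap_comp:
  fixes f g f' g' :: "'k::field lmap"
  assumes f: "lin d1 e1 f" and g: "lin d2 e2 g" and f': "lin e1 e1' f'" and g': "lin e2 e2' g'"
  shows "mapeq (d1*d2) (tmap e1 e2 e2' f' g' \<circ> tmap d1 d2 e2 f g) (tmap d1 d2 e2' (f' \<circ> f) (g' \<circ> g))"
  by (rule tensor_ext[OF lin_comp[OF tmap_lin[OF f g] tmap_lin[OF f' g']] tmap_lin[OF lin_comp[OF f f'] lin_comp[OF g g']]])
     (simp add: tmap_tv[OF f g] tmap_tv[OF f' g'] tmap_tv[OF lin_comp[OF f f'] lin_comp[OF g g']] linD1[OF f] linD1[OF g])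

lemma tmap_assoc:
  fixes f g h :: "'k::field lmap"
  assumes f: "lin d1 e1 f" and g: "lin d2 e2 g" and h: "lin d3 e3 h"
  shows "mapeq (d1*d2*d3) (tmap (d1*d2) d3 e3 (tmap d1 d2 e2 f g) h) (tmap d1 (d2*d3) (e2*e3) f (tmap d2 d3 e3 g h))"
proof (rule tensor_ext3)
  show "lin (d1*d2*d3) (e1*e2*e3) (tmap (d1*d2) d3 e3 (tmap d1 d2 e2 f g) h)"
    by (rule tmap_lin[OF tmap_lin[OF f g] h])
  show "lin (d1*d2*d3) (e1*(e2*e3)) (tmap d1 (d2*d3) (e2*e3) f (tmap d2 d3 e3 g h))"
    using tmap_lin[OF f tmap_lin[OF g h]] by (simp add: mult.assoc)
  fix a b c :: "'k vect" assume a: "a \<in> vsp d1" and b: "b \<in> vsp d2" and c: "c \<in> vsp d3"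
  show "tmap (d1*d2) d3 e3 (tmap d1 d2 e2 f g) h (tv d3 (tv d2 a b) c) = tmap d1 (d2*d3) (e2*e3) f (tmap d2 d3 e3 g h) (tv d3 (tv d2 a b) c)"
  proof -
    have "tmap (d1*d2) d3 e3 (tmap d1 d2 e2 f g) h (tv d3 (tv d2 a b) c) = tv e3 (tv e2 (f a) (g b)) (h c)"
      by (simp add: tmap_tv[OF tmap_lin[OF f g] h] tmap_tv[OF f g] tv_vsp a b c)
    also have "\<dots> = tv (e2*e3) (f a) (tv e3 (g b) (h c))" by (rule tv_assoc[OF linD1[OF g b] linD1[OF h c]])
    also have "\<dots> = tmap d1 (d2*d3) (e2*e3) f (tmap d2 d3 e3 g h) (tv (d2*d3) a (tv d3 b c))"
      by (simp add: tmap_tv[OF f tmap_lin[OF g h]] tmap_tv[OF g h] tv_vsp a b c)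
    also have "\<dots> = tmap d1 (d2*d3) (e2*e3) f (tmap d2 d3 e3 g h) (tv d3 (tv d2 a b) c)"
      by (simp add: tv_assoc[OF b c])
    finally show ?thesis .
  qed
qed

lemma tmap_unitL:
  assumes g: "lin d e (g::'k::field lmap)" shows "mapeq d (tmap 1 d e id g) g"
  unfolding mapeq_def
proof
  fix u :: "'k vect" assume u: "u \<in> vsp d"
  have "tmap 1 d e id g u = tmap 1 d e id g (tv d (ebasis 0) u)" using tv_unitL[OF u] by simp
  also have "\<dots> = tv e (id (ebasis 0)) (g u)" by (rule tmap_tv[OF lin_id g ebasis_vsp u]) simp
  also have "\<dots> = g u" by (simp add: tv_unitL linD1[OF g u])
  finally show "tmap 1 d e id g u = g u" .
qed

lemma tmap_unitR:
  assumes f: "lin d e (f::'k::field lmap)" shows "mapeq d (tmap d 1 1 f id) f"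
  unfolding mapeq_def
proof
  fix u :: "'k vect" assume u: "u \<in> vsp d"
  have "tmap d 1 1 f id u = tmap d 1 1 f id (tv 1 u (ebasis 0))" using tv_unitR[of u] by simp
  also have "\<dots> = tv 1 (f u) (id (ebasis 0))" by (rule tmap_tv[OF f lin_id u ebasis_vsp]) simp
  also have "\<dots> = f u" by (simp only: id_apply tv_unitR)
  finally show "tmap d 1 1 f id u = f u" .
qed

definition blin :: "nat \<Rightarrow> 'k::field lmap \<Rightarrow> bool" where
  "blin d f \<longleftrightarrow> lin d d f \<and> bij_betw f (vsp d) (vsp d)"

abbreviation iv :: "nat \<Rightarrow> 'k::field lmap \<Rightarrow> 'k::field lmap" where
  "iv d f \<equiv> inv_into (vsp d) f"

lemma blin_lin: "blin d f \<Longrightarrow> lin d d f" by (simp add: blin_def)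
lemma blin_vsp: "blin d (f::'k::field lmap) \<Longrightarrow> v \<in> vsp d \<Longrightarrow> f v \<in> vsp d" unfolding blin_def using linD1 by blast

lemma iv_left: "blin d f \<Longrightarrow> v \<in> vsp d \<Longrightarrow> iv d f (f v) = v"
  by (simp add: blin_def bij_betw_def inv_into_f_f)
lemma iv_right: "blin d f \<Longrightarrow> v \<in> vsp d \<Longrightarrow> f (iv d f v) = v"
  by (simp add: blin_def bij_betw_def f_inv_into_f)
lemma iv_vsp: "blin d f \<Longrightarrow> v \<in> vsp d \<Longrightarrow> iv d f v \<in> vsp d"
  by (simp add: blin_def bij_betw_def inv_into_into)

lemma iv_blin: assumes f: "blin d (f::'k::field lmap)" shows "blin d (iv d f)"
proof -
  have lin: "lin d d (iv d f)"
    unfolding lin_def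
  proof (intro conjI ballI allI)
    fix v :: "'k vect" assume "v \<in> vsp d" then show "iv d f v \<in> vsp d" by (rule iv_vsp[OF f])
  next
    fix u v :: "'k vect" assume u: "u \<in> vsp d" and v: "v \<in> vsp d"
    have "(\<lambda>p. u p + v p) = f (\<lambda>p. iv d f u p + iv d f v p)"
      using linD2[OF blin_lin[OF f] iv_vsp[OF f u] iv_vsp[OF f v]] iv_right[OF f u] iv_right[OF f v] by simp
    then show "iv d f (\<lambda>p. u p + v p) = (\<lambda>p. iv d f u p + iv d f v p)"
      using iv_left[OF f vsp_add[OF iv_vsp[OF f u] iv_vsp[OF f v]]] by simp
  next
    fix c :: 'k and v :: "'k vect" assume v: "v \<in> vsp d"
    have "(\<lambda>p. c * v p) = f (\<lambda>p. c * iv d f v p)"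
      using linD3[OF blin_lin[OF f] iv_vsp[OF f v]] iv_right[OF f v] by simp
    then show "iv d f (\<lambda>p. c * v p) = (\<lambda>p. c * iv d f v p)"
      using iv_left[OF f vsp_smult[OF iv_vsp[OF f v]]] by simp
  qed
  have "bij_betw (iv d f) (vsp d) (vsp d)"
    using f by (simp add: blin_def bij_betw_inv_into)
  then show ?thesis using lin by (simp add: blin_def)
qed

lemma blin_id[simp]: "blin d id" by (simp add: blin_def)

lemma blin_comp: "blin d f \<Longrightarrow> blin d g \<Longrightarrow> blin d (g \<circ> f)"
  unfolding blin_def by (auto intro: lin_comp bij_betw_trans)

lemma blin_funpow: "blin d f \<Longrightarrow> blin d (f ^^ m)"
  by (induction m) (auto simp: blin_comp simp del: comp_apply)

lemma blin_of_inverse: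
  assumes f: "lin d d (f::'k::field lmap)" and g: "lin d d g" and gf: "\<And>v. v \<in> vsp d \<Longrightarrow> g (f v) = v"
    and fg: "\<And>v. v \<in> vsp d \<Longrightarrow> f (g v) = v"
  shows "blin d f" "mapeq d (iv d f) g"
proof -
  have "bij_betw f (vsp d) (vsp d)"
    by (rule bij_betw_byWitness[where f'=g]) (auto simp: gf fg linD1[OF f] linD1[OF g])
  then show bf: "blin d f" using f by (simp add: blin_def)
  show "mapeq d (iv d f) g"
    unfolding mapeq_def
  proof
    fix v :: "'k vect" assume v: "v \<in> vsp d"
    have "iv d f v = iv d f (f (g v))" using fg[OF v] by simp
    also have "\<dots> = g v" by (rule iv_left[OF bf linD1[OF g v]])
    finally show "iv d f v = g v" .
  qed
qed

lemma zpow_blin: "blin d f \<Longrightarrow> blin d (zpow d f k)"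
  by (simp add: zpow_def blin_funpow iv_blin)

lemma zpow_vsp: "blin d f \<Longrightarrow> v \<in> vsp d \<Longrightarrow> zpow d f k v \<in> vsp d"
  using zpow_blin blin_vsp by blast

lemma zpow_0[simp]: "zpow d f 0 = id" by (simp add: zpow_def)
lemma zpow_1[simp]: "zpow d f 1 = f" by (simp add: zpow_def)
lemma zpow_m1[simp]: "zpow d f (-1) = iv d f" by (simp add: zpow_def)

lemma funpow_vsp: "blin d f \<Longrightarrow> v \<in> vsp d \<Longrightarrow> (f ^^ m) v \<in> vsp d"
  using blin_funpow blin_vsp by blast

lemma zpow_succ:
  assumes f: "blin d f" and v: "v \<in> vsp d"
  shows "zpow d f (k+1) v = f (zpow d f k v)" "zpow d f (k+1) v = zpow d f k (f v)"
proof -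
  have "zpow d f (k+1) v = f (zpow d f k v) \<and> zpow d f (k+1) v = zpow d f k (f v)"
  proof (cases "0 \<le> k")
    case True
    then have "nat (k+1) = Suc (nat k)" by simp
    then show ?thesis using True by (simp add: zpow_def funpow_Suc_right funpow_swap1 del: funpow.simps)
  next
    case False
    have m0: "nat (-k) = Suc (nat (-(k+1)))" using False by linarith
    obtain m where m: "nat (-k) = Suc m" "nat (-(k+1)) = m" using m0 by blast
    show ?thesis
    proof (cases "k = -1")
      case True then show ?thesis using f v by (simp add: iv_right iv_left)
    next
      case False2: False
      then have "\<not> 0 \<le> k+1" using False by simp
      then have z1: "zpow d f (k+1) v = (iv d f ^^ m) v" and z2: "zpow d f k = iv d f ^^ Suc m"
        using False m by (simp_all add: zpow_def)
      have "(iv d f ^^ Suc m) v = iv d f ((iv d f ^^ m) v)" by simp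
      then have A: "f ((iv d f ^^ Suc m) v) = (iv d f ^^ m) v"
        by (simp add: iv_right[OF f] funpow_vsp[OF iv_blin[OF f] v])
      have B: "(iv d f ^^ Suc m) (f v) = (iv d f ^^ m) v"
        by (simp only: funpow_Suc_right comp_apply iv_left[OF f v])
      show ?thesis using A B z1 z2 by simp
    qed
  qed
  then show "zpow d f (k+1) v = f (zpow d f k v)" "zpow d f (k+1) v = zpow d f k (f v)" by auto
qed


lemma zpow_pred:
  assumes f: "blin d f" and v: "v \<in> vsp d"
  shows "zpow d f (k-1) v = iv d f (zpow d f k v)" "zpow d f (k-1) v = zpow d f k (iv d f v)"
proof -
  have "zpow d f k v = f (zpow d f (k-1) v)" using zpow_succ(1)[OF f v, of "k-1"] by simp
  then show "zpow d f (k-1) v = iv d f (zpow d f k v)" by (simp add: iv_left[OF f zpow_vsp[OF f v]])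
  have "zpow d f k (iv d f v) = zpow d f (k-1) (f (iv d f v))" using zpow_succ(2)[OF f iv_vsp[OF f v], of "k-1"] by simp
  then show "zpow d f (k-1) v = zpow d f k (iv d f v)" by (simp add: iv_right[OF f v])
qed

lemma zpow_add:
  assumes f: "blin d f"
  shows "v \<in> vsp d \<Longrightarrow> zpow d f (k+l) v = zpow d f k (zpow d f l v)"
proof (induction l arbitrary: k v rule: int_induct[where k=0])
  case base then show ?case by simp
next
  case (step1 i)
  have "zpow d f (k+(i+1)) v = zpow d f ((k+1)+i) v" by (simp add: ac_simps)
  also have "\<dots> = zpow d f (k+1) (zpow d f i v)" using step1 by simp
  also have "\<dots> = zpow d f k (f (zpow d f i v))" by (rule zpow_succ(2)[OF f zpow_vsp[OF f step1.prems]])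
  also have "\<dots> = zpow d f k (zpow d f (i+1) v)" by (simp add: zpow_succ(1)[OF f step1.prems])
  finally show ?case .
next
  case (step2 i)
  have "zpow d f (k+(i-1)) v = zpow d f ((k-1)+i) v" using arg_cong[of "k+(i-1)" "(k-1)+i" "\<lambda>j. zpow d f j v"] by simp
  also have "\<dots> = zpow d f (k-1) (zpow d f i v)" using step2 by simp
  also have "\<dots> = zpow d f k (iv d f (zpow d f i v))" by (rule zpow_pred(2)[OF f zpow_vsp[OF f step2.prems]])
  also have "\<dots> = zpow d f k (zpow d f (i-1) v)" by (simp add: zpow_pred(1)[OF f step2.prems])
  finally show ?case .
qed

lemma zpow_inv: "blin d f \<Longrightarrow> v \<in> vsp d \<Longrightarrow> zpow d f (-k) (zpow d f k v) = v"
  using zpow_add[of d f v "-k" k] by simp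

lemma zpow_intertw:
  assumes a: "blin d a" and b: "blin d' b" and g: "\<And>v. v \<in> vsp d \<Longrightarrow> g v \<in> vsp d'"
    and c: "\<And>v. v \<in> vsp d \<Longrightarrow> g (a v) = b (g v)"
  shows "v \<in> vsp d \<Longrightarrow> g (zpow d a k v) = zpow d' b k (g v)"
proof (induction k arbitrary: v rule: int_induct[where k=0])
  case base then show ?case by simp
next
  case (step1 i)
  then show ?case by (simp add: zpow_succ(1)[OF a] zpow_succ(1)[OF b] g c zpow_vsp[OF a])
next
  case (step2 i)
  have ivc: "g (iv d a w) = iv d' b (g w)" if w: "w \<in> vsp d" for w
  proof -
    have "b (g (iv d a w)) = g w" using c[OF iv_vsp[OF a w]] iv_right[OF a w] by simp
    then show ?thesis using iv_left[OF b g[OF iv_vsp[OF a w]]] by metis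
  qed
  then show ?case using step2 by (simp add: zpow_pred(1)[OF a] zpow_pred(1)[OF b] g zpow_vsp[OF a])
qed

lemma zpow_invariant:
  assumes a: "blin d a" and c: "\<And>v. v \<in> vsp d \<Longrightarrow> e (a v) = e v"
  shows "v \<in> vsp d \<Longrightarrow> e (zpow d a k v) = e v"
proof (induction k arbitrary: v rule: int_induct[where k=0])
  case base then show ?case by simp
next
  case (step1 i)
  then show ?case by (simp add: zpow_succ(1)[OF a] c zpow_vsp[OF a])
next
  case (step2 i)
  have "e (iv d a w) = e w" if w: "w \<in> vsp d" for w
    using c[OF iv_vsp[OF a w]] iv_right[OF a w] by simp
  then show ?case using step2 by (simp add: zpow_pred(1)[OF a] zpow_vsp[OF a])
qed

lemma tmap_id: "mapeq (d1*d2) (tmap d1 d2 d2 id id) (id::'k::field lmap)"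
  by (rule tensor_ext[OF tmap_lin[OF lin_id lin_id] lin_id]) (simp add: tmap_tv[OF lin_id lin_id])

lemma blin_tmap:
  assumes a: "blin d1 (a::'k::field lmap)" and b: "blin d2 b"
  shows "blin (d1*d2) (tmap d1 d2 d2 a b)" "mapeq (d1*d2) (iv (d1*d2) (tmap d1 d2 d2 a b)) (tmap d1 d2 d2 (iv d1 a) (iv d2 b))"
proof -
  have la: "lin d1 d1 a" "lin d1 d1 (iv d1 a)" and lb: "lin d2 d2 b" "lin d2 d2 (iv d2 b)"
    using a b by (auto simp: blin_lin iv_blin)
  have e1: "mapeq d1 (iv d1 a \<circ> a) id" "mapeq d1 (a \<circ> iv d1 a) id"
    using a by (auto simp: mapeq_def iv_left iv_right)
  have e2: "mapeq d2 (iv d2 b \<circ> b) id" "mapeq d2 (b \<circ> iv d2 b) id"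
    using b by (auto simp: mapeq_def iv_left iv_right)
  have t1: "mapeq (d1*d2) (tmap d1 d2 d2 (iv d1 a) (iv d2 b) \<circ> tmap d1 d2 d2 a b) (tmap d1 d2 d2 id id)"
    using tmap_comp[OF la(1) lb(1) la(2) lb(2)] tmap_cong[OF e1(1) e2(1)] by simp
  have t2: "mapeq (d1*d2) (tmap d1 d2 d2 a b \<circ> tmap d1 d2 d2 (iv d1 a) (iv d2 b)) (tmap d1 d2 d2 id id)"
    using tmap_comp[OF la(2) lb(2) la(1) lb(1)] tmap_cong[OF e1(2) e2(2)] by simp
  have idt: "mapeq (d1*d2) (tmap d1 d2 d2 id id) (id::'k lmap)" by (rule tmap_id)
  note bi = blin_of_inverse[OF tmap_lin[OF la(1) lb(1)] tmap_lin[OF la(2) lb(2)]]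
  have g1: "\<And>v. v \<in> vsp (d1*d2) \<Longrightarrow> tmap d1 d2 d2 (iv d1 a) (iv d2 b) (tmap d1 d2 d2 a b v) = v"
    using mapeq_trans[OF t1 idt] by (simp add: mapeq_def)
  have g2: "\<And>v. v \<in> vsp (d1*d2) \<Longrightarrow> tmap d1 d2 d2 a b (tmap d1 d2 d2 (iv d1 a) (iv d2 b) v) = v"
    using mapeq_trans[OF t2 idt] by (simp add: mapeq_def)
  show "blin (d1*d2) (tmap d1 d2 d2 a b)" by (rule bi(1)[OF g1 g2])
  show "mapeq (d1*d2) (iv (d1*d2) (tmap d1 d2 d2 a b)) (tmap d1 d2 d2 (iv d1 a) (iv d2 b))" by (rule bi(2)[OF g1 g2])
qed

lemma zpow_tmap:
  assumes a: "blin d1 (a::'k::field lmap)" and b: "blin d2 b"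
  shows "mapeq (d1*d2) (zpow (d1*d2) (tmap d1 d2 d2 a b) k) (tmap d1 d2 d2 (zpow d1 a k) (zpow d2 b k))"
proof (induction k rule: int_induct[where k=0])
  case base
  show ?case by (simp only: zpow_0) (rule mapeq_sym[OF tmap_id])
next
  case (step1 i)
  note T = blin_tmap[OF a b]
  have l: "lin d1 d1 (zpow d1 a i)" "lin d2 d2 (zpow d2 b i)" using a b by (auto simp: blin_lin zpow_blin)
  have c1: "mapeq d1 (a \<circ> zpow d1 a i) (zpow d1 a (i+1))" using a by (simp add: mapeq_def zpow_succ(1))
  have c2: "mapeq d2 (b \<circ> zpow d2 b i) (zpow d2 b (i+1))" using b by (simp add: mapeq_def zpow_succ(1))
  have C: "mapeq (d1*d2) (tmap d1 d2 d2 a b \<circ> tmap d1 d2 d2 (zpow d1 a i) (zpow d2 b i)) (tmap d1 d2 d2 (zpow d1 a (i+1)) (zpow d2 b (i+1)))"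
    using tmap_comp[OF l blin_lin[OF a] blin_lin[OF b]] tmap_cong[OF c1 c2] by simp
  show ?case unfolding mapeq_def
  proof
    fix v :: "'k vect" assume v: "v \<in> vsp (d1*d2)"
    have "zpow (d1*d2) (tmap d1 d2 d2 a b) (i+1) v = tmap d1 d2 d2 a b (zpow (d1*d2) (tmap d1 d2 d2 a b) i v)"
      by (rule zpow_succ(1)[OF T(1) v])
    also have "\<dots> = tmap d1 d2 d2 a b (tmap d1 d2 d2 (zpow d1 a i) (zpow d2 b i) v)"
      using step1.IH v by (simp add: mapeq_def)
    also have "\<dots> = tmap d1 d2 d2 (zpow d1 a (i+1)) (zpow d2 b (i+1)) v" using C v by (simp add: mapeq_def)
    finally show "zpow (d1*d2) (tmap d1 d2 d2 a b) (i+1) v = tmap d1 d2 d2 (zpow d1 a (i+1)) (zpow d2 b (i+1)) v" .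
  qed
next
  case (step2 i)
  note T = blin_tmap[OF a b]
  have l: "lin d1 d1 (zpow d1 a (i-1))" "lin d2 d2 (zpow d2 b (i-1))" using a b by (auto simp: blin_lin zpow_blin)
  have c1: "mapeq d1 (a \<circ> zpow d1 a (i-1)) (zpow d1 a i)" using a zpow_succ(1)[OF a, of _ "i-1"] by (simp add: mapeq_def)
  have c2: "mapeq d2 (b \<circ> zpow d2 b (i-1)) (zpow d2 b i)" using b zpow_succ(1)[OF b, of _ "i-1"] by (simp add: mapeq_def)
  have C: "mapeq (d1*d2) (tmap d1 d2 d2 a b \<circ> tmap d1 d2 d2 (zpow d1 a (i-1)) (zpow d2 b (i-1))) (tmap d1 d2 d2 (zpow d1 a i) (zpow d2 b i))"
    using tmap_comp[OF l blin_lin[OF a] blin_lin[OF b]] tmap_cong[OF c1 c2] by simp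
  have lt: "lin (d1*d2) (d1*d2) (tmap d1 d2 d2 (zpow d1 a (i-1)) (zpow d2 b (i-1)))" by (rule tmap_lin[OF l])
  show ?case unfolding mapeq_def
  proof
    fix v :: "'k vect" assume v: "v \<in> vsp (d1*d2)"
    have "zpow (d1*d2) (tmap d1 d2 d2 a b) (i-1) v = iv (d1*d2) (tmap d1 d2 d2 a b) (zpow (d1*d2) (tmap d1 d2 d2 a b) i v)"
      by (rule zpow_pred(1)[OF T(1) v])
    also have "\<dots> = iv (d1*d2) (tmap d1 d2 d2 a b) (tmap d1 d2 d2 (zpow d1 a i) (zpow d2 b i) v)"
      using step2.IH v by (simp add: mapeq_def)
    also have "\<dots> = iv (d1*d2) (tmap d1 d2 d2 a b) (tmap d1 d2 d2 a b (tmap d1 d2 d2 (zpow d1 a (i-1)) (zpow d2 b (i-1)) v))"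
      using C v by (simp add: mapeq_def)
    also have "\<dots> = tmap d1 d2 d2 (zpow d1 a (i-1)) (zpow d2 b (i-1)) v"
      by (rule iv_left[OF T(1) linD1[OF lt v]])
    finally show "zpow (d1*d2) (tmap d1 d2 d2 a b) (i-1) v = tmap d1 d2 d2 (zpow d1 a (i-1)) (zpow d2 b (i-1)) v" .
  qed
qed

lemma lin_eps1: "linf d (e::'k::field vect \<Rightarrow> 'k::field) \<Longrightarrow> lin d 1 (eps1 e)"
  unfolding lin_def linf_def eps1_def vsp_def by (auto simp: fun_eq_iff)

lemma tmap_pt:
  fixes f g f' g' :: "'k::field lmap"
  assumes "lin d1 e1 f" "lin d2 e2 g" "lin e1 e1' f'" "lin e2 e2' g'" "v \<in> vsp (d1*d2)"
    "mapeq d1 (f' \<circ> f) F" "mapeq d2 (g' \<circ> g) G"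
  shows "tmap e1 e2 e2' f' g' (tmap d1 d2 e2 f g v) = tmap d1 d2 e2' F G v"
  using mapeqD[OF tmap_comp[OF assms(1-4)] assms(5)] tmap_cong[OF assms(6,7), of e2'] by simp

lemma tmap_assoc_pt:
  fixes f g h :: "'k::field lmap"
  assumes "lin d1 e1 f" "lin d2 e2 g" "lin d3 e3 h" "v \<in> vsp (d1*d2*d3)"
  shows "tmap (d1*d2) d3 e3 (tmap d1 d2 e2 f g) h v = tmap d1 (d2*d3) (e2*e3) f (tmap d2 d3 e3 g h) v"
  using mapeqD[OF tmap_assoc[OF assms(1-3)] assms(4)] .

lemma tmap_AL:
  fixes f g h :: "'k::field lmap"
  assumes "lin d1 e1 f" "lin d2 e2 g" "lin d3 e3 h" "w \<in> vsp d1" "V \<in> vsp (d2*d3)"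
  shows "tmap (d1*d2) d3 e3 (tmap d1 d2 e2 f g) h (tv (d2*d3) w V) = tv (e2*e3) (f w) (tmap d2 d3 e3 g h V)"
proof -
  have "tv (d2*d3) w V \<in> vsp (d1*d2*d3)" using tv_vsp[OF assms(4,5)] by (simp add: mult.assoc)
  then show ?thesis
    by (simp add: tmap_assoc_pt[OF assms(1-3)] tmap_tv[OF assms(1) tmap_lin[OF assms(2,3)] assms(4,5)])
qed

lemma tmap_id_cong: "tmap (d1*d2) d3 e3 id h = tmap (d1*d2) d3 e3 (tmap d1 d2 d2 id id) (h::'k::field lmap)"
  by (rule tmap_cong[OF mapeq_sym[OF tmap_id] mapeq_refl])

lemma tmap_AL_id:
  fixes h :: "'k::field lmap"
  assumes "lin d3 e3 h" "w \<in> vsp d1" "V \<in> vsp (d2*d3)"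
  shows "tmap (d1*d2) d3 e3 id h (tv (d2*d3) w V) = tv (d2*e3) w (tmap d2 d3 e3 id h V)"
  apply (subst tmap_id_cong[of d1 d2 d3 e3 h])
  using tmap_AL[OF lin_id lin_id assms] by simp

lemma hb_basic:
  assumes "hom_bialgebra A"
  shows "lin (hdim A * hdim A) (hdim A) (hmul A)" "hone A \<in> vsp (hdim A)"
    "lin (hdim A) (hdim A * hdim A) (hcomul A)" "linf (hdim A) (hcounit A)"
    "blin (hdim A) (halpha A)" "lin (hdim A) 1 (eps1 (hcounit A))"
proof -
  show "lin (hdim A * hdim A) (hdim A) (hmul A)" "hone A \<in> vsp (hdim A)"
    "lin (hdim A) (hdim A * hdim A) (hcomul A)" "linf (hdim A) (hcounit A)"
    "blin (hdim A) (halpha A)"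
    using assms by (auto simp: hom_bialgebra_def Let_def blin_def)
  then show "lin (hdim A) 1 (eps1 (hcounit A))" by (intro lin_eps1)
qed

lemma hb_alpha:
  assumes "hom_bialgebra A"
  shows "\<And>a b. a \<in> vsp (hdim A) \<Longrightarrow> b \<in> vsp (hdim A) \<Longrightarrow> halpha A (hmul A (tv (hdim A) a b)) = hmul A (tv (hdim A) (halpha A a) (halpha A b))"
    "halpha A (hone A) = hone A"
    "\<And>a. a \<in> vsp (hdim A) \<Longrightarrow> hcomul A (halpha A a) = tmap (hdim A) (hdim A) (hdim A) (halpha A) (halpha A) (hcomul A a)"
    "\<And>a. a \<in> vsp (hdim A) \<Longrightarrow> hcounit A (halpha A a) = hcounit A a"
  using assms by (auto simp: hom_bialgebra_def Let_def)

lemma hb_mul_alpha: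
  assumes A: "hom_bialgebra A" and v: "v \<in> vsp (hdim A * hdim A)"
  shows "halpha A (hmul A v) = hmul A (tmap (hdim A) (hdim A) (hdim A) (halpha A) (halpha A) v)"
proof -
  note b = hb_basic[OF A]
  have "mapeq (hdim A * hdim A) (halpha A \<circ> hmul A) (hmul A \<circ> tmap (hdim A) (hdim A) (hdim A) (halpha A) (halpha A))"
    by (rule tensor_ext[OF lin_comp[OF b(1) blin_lin[OF b(5)]] lin_comp[OF tmap_lin[OF blin_lin[OF b(5)] blin_lin[OF b(5)]] b(1)]])
       (simp add: hb_alpha(1)[OF A] tmap_tv[OF blin_lin[OF b(5)] blin_lin[OF b(5)]])
  then show ?thesis using v by (simp add: mapeq_def)
qed

lemma hb_zpow:
  assumes A: "hom_bialgebra A"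
  shows "\<And>v. v \<in> vsp (hdim A * hdim A) \<Longrightarrow> zpow (hdim A) (halpha A) k (hmul A v) = hmul A (tmap (hdim A) (hdim A) (hdim A) (zpow (hdim A) (halpha A) k) (zpow (hdim A) (halpha A) k) v)"
    "zpow (hdim A) (halpha A) k (hone A) = hone A"
    "\<And>a. a \<in> vsp (hdim A) \<Longrightarrow> hcomul A (zpow (hdim A) (halpha A) k a) = tmap (hdim A) (hdim A) (hdim A) (zpow (hdim A) (halpha A) k) (zpow (hdim A) (halpha A) k) (hcomul A a)"
    "\<And>a. a \<in> vsp (hdim A) \<Longrightarrow> hcounit A (zpow (hdim A) (halpha A) k a) = hcounit A a"
proof -
  note b = hb_basic[OF A]
  let ?d = "hdim A" and ?a = "halpha A"
  note T = blin_tmap[OF b(5) b(5)]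
  show "\<And>v. v \<in> vsp (?d * ?d) \<Longrightarrow> zpow ?d ?a k (hmul A v) = hmul A (tmap ?d ?d ?d (zpow ?d ?a k) (zpow ?d ?a k) v)"
  proof -
    fix v :: "'a vect" assume v: "v \<in> vsp (?d*?d)"
    have "hmul A (zpow (?d*?d) (tmap ?d ?d ?d ?a ?a) k v) = zpow ?d ?a k (hmul A v)"
      by (rule zpow_intertw[OF T(1) b(5) linD1[OF b(1)] _ v]) (simp_all add: hb_mul_alpha[OF A])
    then show "zpow ?d ?a k (hmul A v) = hmul A (tmap ?d ?d ?d (zpow ?d ?a k) (zpow ?d ?a k) v)"
      using mapeqD[OF zpow_tmap[OF b(5) b(5)] v] by simp
  qed
  show "zpow ?d ?a k (hone A) = hone A"
  proof (induction k rule: int_induct[where k=0])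
    case base then show ?case by simp
  next
    case (step1 i) then show ?case by (simp add: zpow_succ(1)[OF b(5) b(2)] hb_alpha(2)[OF A])
  next
    case (step2 i)
    have "iv ?d ?a (hone A) = hone A" using iv_left[OF b(5) b(2)] hb_alpha(2)[OF A] by simp
    then show ?case using step2 by (simp add: zpow_pred(1)[OF b(5) b(2)])
  qed
  show "\<And>a. a \<in> vsp ?d \<Longrightarrow> hcomul A (zpow ?d ?a k a) = tmap ?d ?d ?d (zpow ?d ?a k) (zpow ?d ?a k) (hcomul A a)"
  proof -
    fix a :: "'a vect" assume a: "a \<in> vsp ?d"
    have "hcomul A (zpow ?d ?a k a) = zpow (?d*?d) (tmap ?d ?d ?d ?a ?a) k (hcomul A a)"
      by (rule zpow_intertw[OF b(5) T(1) linD1[OF b(3)] _ a]) (simp_all add: hb_alpha(3)[OF A])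
    then show "hcomul A (zpow ?d ?a k a) = tmap ?d ?d ?d (zpow ?d ?a k) (zpow ?d ?a k) (hcomul A a)"
      using mapeqD[OF zpow_tmap[OF b(5) b(5)] linD1[OF b(3) a]] by simp
  qed
  show "\<And>a. a \<in> vsp ?d \<Longrightarrow> hcounit A (zpow ?d ?a k a) = hcounit A a"
    by (rule zpow_invariant[OF b(5)]) (simp_all add: hb_alpha(4)[OF A])
qed

lemma lin_comp': "lin d e f \<Longrightarrow> lin e' e'' g \<Longrightarrow> e = e' \<Longrightarrow> lin d e'' (g \<circ> f)"
  using lin_comp by blast
lemma lin_dim: "lin d e f \<Longrightarrow> d = d' \<Longrightarrow> e = e' \<Longrightarrow> lin d' e' f" by simp

lemma obj_blin: "obj X \<Longrightarrow> blin (fst X) (snd X)" by (simp add: obj_def blin_def)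

lemma reduce:
  fixes L R PL PR \<gamma> :: "'k::field lmap"
  assumes L: "lin (x*D) e L" and R: "lin (x*D) e' R"
    and eL: "\<And>w U. w \<in> vsp x \<Longrightarrow> U \<in> vsp D \<Longrightarrow> L (tv D w U) = tv E (\<gamma> w) (PL U)"
    and eR: "\<And>w U. w \<in> vsp x \<Longrightarrow> U \<in> vsp D \<Longrightarrow> R (tv D w U) = tv E (\<gamma> w) (PR U)"
    and P: "mapeq D PL PR"
  shows "mapeq (x*D) L R"
  by (rule tensor_ext[OF L R]) (simp add: eL eR mapeqD[OF P])

lemma reduce_unit:
  fixes L R PL PR :: "'k::field lmap"
  assumes M: "mapeq (1*D) L R"
    and eL: "\<And>U. U \<in> vsp D \<Longrightarrow> L (tv D (ebasis 0) U) = tv E (ebasis 0) (PL U)"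
    and eR: "\<And>U. U \<in> vsp D \<Longrightarrow> R (tv D (ebasis 0) U) = tv E (ebasis 0) (PR U)"
    and PL: "\<And>U. U \<in> vsp D \<Longrightarrow> PL U \<in> vsp E" and PR: "\<And>U. U \<in> vsp D \<Longrightarrow> PR U \<in> vsp E"
  shows "mapeq D PL PR"
  unfolding mapeq_def
proof
  fix U :: "'k vect" assume U: "U \<in> vsp D"
  have "PL U = tv E (ebasis 0) (PL U)" using tv_unitL[OF PL[OF U]] by simp
  also have "\<dots> = L U" using eL[OF U] tv_unitL[OF U] by simp
  also have "\<dots> = R U" using M U by (simp add: mapeq_def)
  also have "\<dots> = tv E (ebasis 0) (PR U)" using eR[OF U] tv_unitL[OF U] by simp
  also have "\<dots> = PR U" using tv_unitL[OF PR[OF U]] by simp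
  finally show "PL U = PR U" .
qed

lemma obj_unit: "obj (unit_obj :: 'k::field object)"
  by (simp add: obj_def unit_obj_def bij_betw_def)

locale PH =
  fixes B H :: "'k::field hbialg" and phi :: "'k lmap"
  assumes hB: "hom_bialgebra B" and hH: "hom_bialgebra H"
    and lphi: "lin (hdim B * hdim H) (hdim H * hdim B) phi"
    and cphi: "\<forall>u\<in>vsp (hdim B * hdim H).
           phi (tmap (hdim B) (hdim H) (hdim H) (halpha B) (halpha H) u)
           = tmap (hdim H) (hdim B) (hdim B) (halpha H) (halpha B) (phi u)"
begin

abbreviation "dB \<equiv> hdim B"
abbreviation "dH \<equiv> hdim H"
abbreviation "aB \<equiv> halpha B"
abbreviation "aH \<equiv> halpha H"
abbreviation "Z k \<equiv> zpow dB aB k"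
abbreviation "Z' k \<equiv> zpow dH aH k"

definition psi0 :: "int \<Rightarrow> 'k::field lmap" where
  "psi0 n = tmap dH dB dB id (Z n) \<circ> phi \<circ> tmap dB dH dH (Z (-n-1)) aH"

definition DB :: "'k::field lmap" where "DB = (\<lambda>h. tmap dB dB dB id (iv dB aB) (hcomul B h))"
definition DH :: "'k::field lmap" where "DH = (\<lambda>h. tmap dH dH dH id (iv dH aH) (hcomul H h))"

lemmas bB = hb_basic[OF hB]
lemmas bH = hb_basic[OF hH]

lemma laB: "lin dB dB aB" using blin_lin[OF bB(5)] .
lemma laH: "lin dH dH aH" using blin_lin[OF bH(5)] .
lemma lZ: "lin dB dB (Z k)" using blin_lin[OF zpow_blin[OF bB(5)]] .
lemma lZ': "lin dH dH (Z' k)" using blin_lin[OF zpow_blin[OF bH(5)]] .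
lemma liB: "lin dB dB (iv dB aB)" using blin_lin[OF iv_blin[OF bB(5)]] .
lemma liH: "lin dH dH (iv dH aH)" using blin_lin[OF iv_blin[OF bH(5)]] .

lemma lpsi0: "lin (dB*dH) (dH*dB) (psi0 n)"
  unfolding psi0_def
  by (rule lin_comp[OF tmap_lin[OF lZ laH] lin_comp[OF lphi tmap_lin[OF lin_id lZ]]])

lemma lDB: "lin dB (dB*dB) DB"
  unfolding DB_def using lin_comp[OF bB(3) tmap_lin[OF lin_id liB]] by (simp add: comp_def)
lemma lDH: "lin dH (dH*dH) DH"
  unfolding DH_def using lin_comp[OF bH(3) tmap_lin[OF lin_id liH]] by (simp add: comp_def)

lemma ddphi_eq: "ddphi n B H phi X = tmap (fst X) (dB*dH) (dH*dB) id (psi0 n)"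
  by (simp add: ddphi_def psi0_def)

lemma ddphi_tv: "w \<in> vsp (fst X) \<Longrightarrow> U \<in> vsp (dB*dH) \<Longrightarrow> ddphi n B H phi X (tv (dB*dH) w U) = tv (dH*dB) w (psi0 n U)"
  unfolding ddphi_eq by (simp add: tmap_tv[OF lin_id lpsi0])

lemma lddphi: "lin (fst X * (dB*dH)) (fst X * (dH*dB)) (ddphi n B H phi X)"
  unfolding ddphi_eq by (rule tmap_lin[OF lin_id lpsi0])

end

context PH begin

definition "PcL n = tmap dH dB (dB*dB) aH DB \<circ> psi0 n"
definition "PcR n = tmap (dB*dH) dB dB (psi0 n) id \<circ> tmap dB (dB*dH) (dH*dB) id (psi0 n) \<circ> tmap dB dH dH DB id"

lemma vpsi0: "U \<in> vsp (dB*dH) \<Longrightarrow> psi0 n U \<in> vsp (dH*dB)" using linD1[OF lpsi0] .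

lemma c_L:
  assumes X: "obj X" and w: "w \<in> vsp (fst X)" and U: "U \<in> vsp (dB*dH)"
  shows "(cdelta B (fobj H X) \<circ> ddphi n B H phi X) (tv (dB*dH) w U) = tv (dH*(dB*dB)) (snd X w) (PcL n U)"
proof -
  have 2: "cdelta B (fobj H X) = tmap (fst X * dH) dB (dB*dB) (tmap (fst X) dH dH (snd X) aH) DB"
    by (simp add: cdelta_def fobj_def DB_def)
  show ?thesis
    by (simp add: ddphi_tv[OF w U] 2 tmap_AL[OF blin_lin[OF obj_blin[OF X]] laH lDB w vpsi0[OF U]] PcL_def)
qed

lemma c_R:
  assumes X: "obj X" and w: "w \<in> vsp (fst X)" and U: "U \<in> vsp (dB*dH)"
  shows "(fmor B (fst (fobj H (fobj B X))) (ddphi n B H phi X) \<circ> ddphi n B H phi (fobj B X) \<circ> fmor H (fst (fobj B X)) (cdelta B X)) (tv (dB*dH) w U)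
     = tv (dH*(dB*dB)) (snd X w) (PcR n U)"
proof -
  let ?x = "fst X" and ?a = "snd X"
  note aX = blin_lin[OF obj_blin[OF X]]
  have W: "tmap dB dH dH DB id U \<in> vsp (dB*dB*dH)" using linD1[OF tmap_lin[OF lDB lin_id] U] .
  have W2: "tmap dB (dB*dH) (dH*dB) id (psi0 n) (tmap dB dH dH DB id U) \<in> vsp (dB*(dH*dB))"
    using linD1[OF tmap_lin[OF lin_id lpsi0]] W by (simp add: mult.assoc)
  have aw: "?a w \<in> vsp ?x" using linD1[OF aX w] .
  have s1: "fmor H (fst (fobj B X)) (cdelta B X) (tv (dB*dH) w U) = tv (dB*dB*dH) (?a w) (tmap dB dH dH DB id U)"
    unfolding fmor_def fobj_def cdelta_def DB_def[symmetric] fst_conv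
    by (rule tmap_AL[OF aX lDB lin_id w U])
  have s2: "ddphi n B H phi (fobj B X) (tv (dB*(dB*dH)) (?a w) (tmap dB dH dH DB id U))
      = tv (dB*(dH*dB)) (?a w) (tmap dB (dB*dH) (dH*dB) id (psi0 n) (tmap dB dH dH DB id U))"
    unfolding ddphi_eq fobj_def fst_conv
    by (rule tmap_AL_id[OF lpsi0 aw]) (use W in \<open>simp add: mult.assoc\<close>)
  have s3: "tmap (?x*(dB*dH)) dB dB (tmap ?x (dB*dH) (dH*dB) id (psi0 n)) id
        (tv ((dB*dH)*dB) (?a w) (tmap dB (dB*dH) (dH*dB) id (psi0 n) (tmap dB dH dH DB id U)))
      = tv ((dH*dB)*dB) (?a w) (tmap (dB*dH) dB dB (psi0 n) id (tmap dB (dB*dH) (dH*dB) id (psi0 n) (tmap dB dH dH DB id U)))"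
    using tmap_AL[OF lin_id lpsi0 lin_id aw, of "tmap dB (dB*dH) (dH*dB) id (psi0 n) (tmap dB dH dH DB id U)"] W2
    by (simp add: mult.assoc)
  show ?thesis
    using s1 s2 s3 unfolding PcR_def fmor_def ddphi_eq fobj_def fst_conv comp_def
    by (simp add: mult.assoc)
qed


lemma unit_fst[simp]: "fst (unit_obj::'k::field object) = 1" and unit_snd[simp]: "snd (unit_obj::'k::field object) = id"
  by (simp_all add: unit_obj_def)

lemma lcdeltaF: "obj X \<Longrightarrow> lin (fst X * dH * dB) (fst X * (dH * (dB * dB))) (cdelta B (fobj H X))"
  using tmap_lin[OF tmap_lin[OF blin_lin[OF obj_blin] laH] lDB, of X]
  by (simp add: cdelta_def fobj_def DB_def mult.assoc)

lemma lcdelta_FmB: "obj X \<Longrightarrow> lin (fst X * (dB * dH)) (fst X * (dB * (dB * dH))) (fmor H (fst (fobj B X)) (cdelta B X))"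
  using tmap_lin[OF tmap_lin[OF blin_lin[OF obj_blin] lDB] lin_id, of X dH]
  by (simp add: cdelta_def fobj_def DB_def fmor_def mult.assoc)

lemma lddphiG: "lin (fst X * (dB * (dB * dH))) (fst X * (dB * (dH * dB))) (ddphi n B H phi (fobj B X))"
  using lddphi[of "fobj B X" n] by (simp add: fobj_def mult.assoc)

lemma lGm_ddphi: "lin (fst X * (dB * (dH * dB))) (fst X * (dH * (dB * dB))) (fmor B (fst (fobj H (fobj B X))) (ddphi n B H phi X))"
  unfolding fmor_def fobj_def using tmap_lin[OF lddphi[of X n] lin_id[of dB]] by (simp add: mult.assoc)

lemma c_if:
  assumes X: "obj X" and P: "mapeq (dB*dH) (PcL n) (PcR n)"
  shows "mapeq (fst (fobj H (fobj B X))) (cdelta B (fobj H X) \<circ> ddphi n B H phi X)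
     (fmor B (fst (fobj H (fobj B X))) (ddphi n B H phi X) \<circ> ddphi n B H phi (fobj B X) \<circ> fmor H (fst (fobj B X)) (cdelta B X))"
proof -
  have L: "lin (fst X * (dB*dH)) (fst X * (dH * (dB * dB))) (cdelta B (fobj H X) \<circ> ddphi n B H phi X)"
    by (rule lin_comp'[OF lddphi lcdeltaF[OF X]]) (simp add: ac_simps)
  have R: "lin (fst X * (dB*dH)) (fst X * (dH * (dB * dB))) (fmor B (fst (fobj H (fobj B X))) (ddphi n B H phi X) \<circ> ddphi n B H phi (fobj B X) \<circ> fmor H (fst (fobj B X)) (cdelta B X))"
    by (rule lin_comp'[OF lcdelta_FmB[OF X] lin_comp'[OF lddphiG lGm_ddphi]]) (simp_all add: ac_simps)
  have "mapeq (fst X * (dB*dH)) (cdelta B (fobj H X) \<circ> ddphi n B H phi X)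
     (fmor B (fst (fobj H (fobj B X))) (ddphi n B H phi X) \<circ> ddphi n B H phi (fobj B X) \<circ> fmor H (fst (fobj B X)) (cdelta B X))"
    by (rule reduce[OF L R c_L[OF X] c_R[OF X] P])
  then show ?thesis by (simp add: fobj_def mult.assoc)
qed

lemma vPcL: "U \<in> vsp (dB*dH) \<Longrightarrow> PcL n U \<in> vsp (dH*(dB*dB))"
  unfolding PcL_def using linD1[OF tmap_lin[OF laH lDB] vpsi0] by (simp add: mult.assoc)
lemma vPcR: "U \<in> vsp (dB*dH) \<Longrightarrow> PcR n U \<in> vsp (dH*(dB*dB))"
proof -
  assume U: "U \<in> vsp (dB*dH)"
  have "lin (dB*dH) (dH*dB*dB) (PcR n)" unfolding PcR_def
    by (rule lin_comp'[OF tmap_lin[OF lDB lin_id] lin_comp'[OF tmap_lin[OF lin_id lpsi0] tmap_lin[OF lpsi0 lin_id]]]) (simp_all add: ac_simps)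
  then show ?thesis using linD1 U by (simp add: mult.assoc)
qed

lemma c_only:
  assumes C: "mapeq (fst (fobj H (fobj B (unit_obj::'k::field object)))) (cdelta B (fobj H unit_obj) \<circ> ddphi n B H phi unit_obj)
     (fmor B (fst (fobj H (fobj B unit_obj))) (ddphi n B H phi unit_obj) \<circ> ddphi n B H phi (fobj B unit_obj) \<circ> fmor H (fst (fobj B unit_obj)) (cdelta B unit_obj))"
  shows "mapeq (dB*dH) (PcL n) (PcR n)"
proof -
  let ?L = "cdelta B (fobj H unit_obj) \<circ> ddphi n B H phi (unit_obj::'k object)"
  let ?R = "fmor B (fst (fobj H (fobj B unit_obj))) (ddphi n B H phi unit_obj) \<circ> ddphi n B H phi (fobj B unit_obj) \<circ> fmor H (fst (fobj B (unit_obj::'k object))) (cdelta B unit_obj)"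
  have M: "mapeq (1*(dB*dH)) ?L ?R" using C by (simp add: fobj_def mult.assoc)
  show ?thesis
  proof (rule reduce_unit[OF M, where E="dH*(dB*dB)" and PL="PcL n" and PR="PcR n"])
    fix U :: "'k vect" assume U: "U \<in> vsp (dB*dH)"
    show "?L (tv (dB*dH) (ebasis 0) U) = tv (dH*(dB*dB)) (ebasis 0) (PcL n U)"
      using c_L[OF obj_unit _ U, of "ebasis 0" n] by simp
    show "?R (tv (dB*dH) (ebasis 0) U) = tv (dH*(dB*dB)) (ebasis 0) (PcR n U)"
      using c_R[OF obj_unit _ U, of "ebasis 0" n] by simp
  qed (simp_all add: vPcL vPcR)
qed


lemma iv_unit: "iv 1 id (ebasis 0) = (ebasis 0 :: 'k::field vect)"
  using iv_left[OF blin_id[of 1], of "ebasis 0"] by simp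

definition "PdL n = tmap dH dB dB DH id \<circ> psi0 n"
definition "PdR n = tmap dH (dB*dH) (dH*dB) id (psi0 n) \<circ> tmap (dB*dH) dH dH (psi0 n) id \<circ> tmap dB dH (dH*dH) aB DH"

lemma d_L:
  assumes X: "obj X" and w: "w \<in> vsp (fst X)" and U: "U \<in> vsp (dB*dH)"
  shows "(fmor B (fst (fobj H X)) (cdelta H X) \<circ> ddphi n B H phi X) (tv (dB*dH) w U) = tv (dH*(dH*dB)) (snd X w) (PdL n U)"
  using tmap_AL[OF blin_lin[OF obj_blin[OF X]] lDH lin_id w vpsi0[OF U], of n]
  by (simp add: ddphi_tv[OF w U] fmor_def fobj_def cdelta_def DH_def[symmetric] PdL_def mult.assoc)

lemma d_R:
  assumes X: "obj X" and w: "w \<in> vsp (fst X)" and U: "U \<in> vsp (dB*dH)"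
  shows "(ddphi n B H phi (fobj H X) \<circ> fmor H (fst (fobj H (fobj B X))) (ddphi n B H phi X) \<circ> cdelta H (fobj B X)) (tv (dB*dH) w U)
     = tv (dH*(dH*dB)) (snd X w) (PdR n U)"
proof -
  let ?x = "fst X" and ?a = "snd X"
  note aX = blin_lin[OF obj_blin[OF X]]
  have aw: "?a w \<in> vsp ?x" using linD1[OF aX w] .
  let ?W = "tmap dB dH (dH*dH) aB DH U"
  have W: "?W \<in> vsp (dB*dH*dH)" using linD1[OF tmap_lin[OF laB lDH] U] by (simp add: mult.assoc)
  let ?W2 = "tmap (dB*dH) dH dH (psi0 n) id ?W"
  have W2: "?W2 \<in> vsp (dH*(dB*dH))" using linD1[OF tmap_lin[OF lpsi0 lin_id] W] by (simp add: mult.assoc)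
  have s1: "cdelta H (fobj B X) (tv (dB*dH) w U) = tv (dB*(dH*dH)) (?a w) ?W"
    unfolding fobj_def cdelta_def DH_def[symmetric] fst_conv snd_conv
    by (rule tmap_AL[OF aX laB lDH w U])
  have s2: "tmap (?x*(dB*dH)) dH dH (tmap ?x (dB*dH) (dH*dB) id (psi0 n)) id (tv ((dB*dH)*dH) (?a w) ?W)
      = tv ((dH*dB)*dH) (?a w) ?W2"
    using tmap_AL[OF lin_id lpsi0 lin_id aw W] by simp
  have s3: "ddphi n B H phi (fobj H X) (tv (dH*(dB*dH)) (?a w) ?W2) = tv (dH*(dH*dB)) (?a w) (tmap dH (dB*dH) (dH*dB) id (psi0 n) ?W2)"
    unfolding ddphi_eq fobj_def fst_conv by (rule tmap_AL_id[OF lpsi0 aw W2])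
  show ?thesis
    using s1 s2 s3 unfolding PdR_def fmor_def ddphi_eq fobj_def fst_conv comp_def
    by (simp add: mult.assoc)
qed

lemma lPdL: "lin (dB*dH) (dH*(dH*dB)) (PdL n)"
  unfolding PdL_def by (rule lin_dim[OF lin_comp'[OF lpsi0 tmap_lin[OF lDH lin_id]]]) (simp_all add: ac_simps)
lemma lPdR: "lin (dB*dH) (dH*(dH*dB)) (PdR n)"
  unfolding PdR_def
  by (rule lin_dim[OF lin_comp'[OF tmap_lin[OF laB lDH] lin_comp'[OF tmap_lin[OF lpsi0 lin_id] tmap_lin[OF lin_id lpsi0]]]]) (simp_all add: ac_simps)

lemma d_if:
  assumes X: "obj X" and P: "mapeq (dB*dH) (PdL n) (PdR n)"
  shows "mapeq (fst (fobj H (fobj B X))) (fmor B (fst (fobj H X)) (cdelta H X) \<circ> ddphi n B H phi X)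
     (ddphi n B H phi (fobj H X) \<circ> fmor H (fst (fobj H (fobj B X))) (ddphi n B H phi X) \<circ> cdelta H (fobj B X))"
proof -
  have lc1: "lin (fst X * dH * dB) (fst X * (dH * dH) * dB) (fmor B (fst (fobj H X)) (cdelta H X))"
    unfolding fmor_def fobj_def cdelta_def DH_def[symmetric] fst_conv snd_conv
    by (rule tmap_lin[OF tmap_lin[OF blin_lin[OF obj_blin[OF X]] lDH] lin_id])
  have L: "lin (fst X * (dB*dH)) (fst X * (dH * (dH * dB))) (fmor B (fst (fobj H X)) (cdelta H X) \<circ> ddphi n B H phi X)"
    by (rule lin_dim[OF lin_comp'[OF lddphi lc1]]) (simp_all add: ac_simps)
  have lc2: "lin (fst X * dB * dH) (fst X * dB * (dH * dH)) (cdelta H (fobj B X))"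
    unfolding fobj_def cdelta_def DH_def[symmetric] fst_conv snd_conv
    by (rule tmap_lin[OF tmap_lin[OF blin_lin[OF obj_blin[OF X]] laB] lDH])
  have lc3: "lin (fst X * dB * dH * dH) (fst X * (dH * dB) * dH) (fmor H (fst (fobj H (fobj B X))) (ddphi n B H phi X))"
    unfolding fmor_def fobj_def fst_conv using tmap_lin[OF lddphi[of X n] lin_id[of dH]] by (simp add: mult.assoc)
  have lc4: "lin (fst X * dH * (dB * dH)) (fst X * dH * (dH * dB)) (ddphi n B H phi (fobj H X))"
    using lddphi[of "fobj H X" n] by (simp add: fobj_def)
  have R: "lin (fst X * (dB*dH)) (fst X * (dH * (dH * dB))) (ddphi n B H phi (fobj H X) \<circ> fmor H (fst (fobj H (fobj B X))) (ddphi n B H phi X) \<circ> cdelta H (fobj B X))"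
    by (rule lin_dim[OF lin_comp'[OF lc2 lin_comp'[OF lc3 lc4]]]) (simp_all add: ac_simps)
  have "mapeq (fst X * (dB*dH)) (fmor B (fst (fobj H X)) (cdelta H X) \<circ> ddphi n B H phi X)
     (ddphi n B H phi (fobj H X) \<circ> fmor H (fst (fobj H (fobj B X))) (ddphi n B H phi X) \<circ> cdelta H (fobj B X))"
    by (rule reduce[OF L R d_L[OF X] d_R[OF X] P])
  then show ?thesis by (simp add: fobj_def mult.assoc)
qed

lemma d_only:
  assumes C: "mapeq (fst (fobj H (fobj B (unit_obj::'k::field object)))) (fmor B (fst (fobj H unit_obj)) (cdelta H unit_obj) \<circ> ddphi n B H phi unit_obj)
     (ddphi n B H phi (fobj H unit_obj) \<circ> fmor H (fst (fobj H (fobj B unit_obj))) (ddphi n B H phi unit_obj) \<circ> cdelta H (fobj B (unit_obj::'k::field object)))"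
  shows "mapeq (dB*dH) (PdL n) (PdR n)"
proof -
  let ?L = "fmor B (fst (fobj H unit_obj)) (cdelta H unit_obj) \<circ> ddphi n B H phi (unit_obj::'k object)"
  let ?R = "ddphi n B H phi (fobj H unit_obj) \<circ> fmor H (fst (fobj H (fobj B unit_obj))) (ddphi n B H phi unit_obj) \<circ> cdelta H (fobj B (unit_obj::'k object))"
  have M: "mapeq (1*(dB*dH)) ?L ?R" using C by (simp add: fobj_def mult.assoc)
  show ?thesis
  proof (rule reduce_unit[OF M, where E="dH*(dH*dB)" and PL="PdL n" and PR="PdR n"])
    fix U :: "'k vect" assume U: "U \<in> vsp (dB*dH)"
    show "?L (tv (dB*dH) (ebasis 0) U) = tv (dH*(dH*dB)) (ebasis 0) (PdL n U)"
      using d_L[OF obj_unit _ U, of "ebasis 0" n] by simp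
    show "?R (tv (dB*dH) (ebasis 0) U) = tv (dH*(dH*dB)) (ebasis 0) (PdR n U)"
      using d_R[OF obj_unit _ U, of "ebasis 0" n] by simp
  qed (simp_all add: linD1[OF lPdL] linD1[OF lPdR])
qed

end

context PH begin

abbreviation "eH \<equiv> eps1 (hcounit H)"
abbreviation "eB \<equiv> eps1 (hcounit B)"

definition "PeL n = tmap dH dB dB eH id \<circ> psi0 n"
definition "PeR = tmap dB dH 1 (iv dB aB) eH"
definition "PfL n = tmap dH dB 1 (iv dH aH) eB \<circ> psi0 n"
definition "PfR = tmap dB dH dH eB id"

lemma ivX: "obj X \<Longrightarrow> lin (fst X) (fst X) (iv (fst X) (snd X))" using blin_lin[OF iv_blin[OF obj_blin]] .

lemma cepsG: "obj X \<Longrightarrow> cepsilon H (fobj B X) = tmap (fst X * dB) dH 1 (tmap (fst X) dB dB (iv (fst X) (snd X)) (iv dB aB)) eH"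
  unfolding cepsilon_def fobj_def fst_conv snd_conv
  by (rule tmap_cong[OF blin_tmap(2)[OF obj_blin bB(5)] mapeq_refl])
lemma cepsF: "obj X \<Longrightarrow> cepsilon B (fobj H X) = tmap (fst X * dH) dB 1 (tmap (fst X) dH dH (iv (fst X) (snd X)) (iv dH aH)) eB"
  unfolding cepsilon_def fobj_def fst_conv snd_conv
  by (rule tmap_cong[OF blin_tmap(2)[OF obj_blin bH(5)] mapeq_refl])

lemma e_L:
  assumes X: "obj X" and w: "w \<in> vsp (fst X)" and U: "U \<in> vsp (dB*dH)"
  shows "(fmor B (fst (fobj H X)) (cepsilon H X) \<circ> ddphi n B H phi X) (tv (dB*dH) w U) = tv dB (iv (fst X) (snd X) w) (PeL n U)"
  using tmap_AL[OF ivX[OF X] bH(6) lin_id w vpsi0[OF U], of n]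
  by (simp add: ddphi_tv[OF w U] fmor_def fobj_def cepsilon_def PeL_def)

lemma e_R:
  assumes X: "obj X" and w: "w \<in> vsp (fst X)" and U: "U \<in> vsp (dB*dH)"
  shows "cepsilon H (fobj B X) (tv (dB*dH) w U) = tv dB (iv (fst X) (snd X) w) (PeR U)"
  using tmap_AL[OF ivX[OF X] liB bH(6) w U]
  by (simp add: cepsG[OF X] PeR_def)

lemma f_L:
  assumes X: "obj X" and w: "w \<in> vsp (fst X)" and U: "U \<in> vsp (dB*dH)"
  shows "(cepsilon B (fobj H X) \<circ> ddphi n B H phi X) (tv (dB*dH) w U) = tv dH (iv (fst X) (snd X) w) (PfL n U)"
  using tmap_AL[OF ivX[OF X] liH bB(6) w vpsi0[OF U], of n]
  by (simp add: ddphi_tv[OF w U] cepsF[OF X] PfL_def)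

lemma f_R:
  assumes X: "obj X" and w: "w \<in> vsp (fst X)" and U: "U \<in> vsp (dB*dH)"
  shows "fmor H (fst (fobj B X)) (cepsilon B X) (tv (dB*dH) w U) = tv dH (iv (fst X) (snd X) w) (PfR U)"
  using tmap_AL[OF ivX[OF X] bB(6) lin_id w U]
  by (simp add: fmor_def fobj_def cepsilon_def PfR_def)

lemma lPeL: "lin (dB*dH) dB (PeL n)"
  unfolding PeL_def by (rule lin_dim[OF lin_comp'[OF lpsi0 tmap_lin[OF bH(6) lin_id]]]) simp_all
lemma lPeR: "lin (dB*dH) dB PeR"
  unfolding PeR_def by (rule lin_dim[OF tmap_lin[OF liB bH(6)]]) simp_all
lemma lPfL: "lin (dB*dH) dH (PfL n)"
  unfolding PfL_def by (rule lin_dim[OF lin_comp'[OF lpsi0 tmap_lin[OF liH bB(6)]]]) simp_all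
lemma lPfR: "lin (dB*dH) dH PfR"
  unfolding PfR_def by (rule lin_dim[OF tmap_lin[OF bB(6) lin_id]]) simp_all

lemma e_if:
  assumes X: "obj X" and P: "mapeq (dB*dH) (PeL n) PeR"
  shows "mapeq (fst (fobj H (fobj B X))) (fmor B (fst (fobj H X)) (cepsilon H X) \<circ> ddphi n B H phi X) (cepsilon H (fobj B X))"
proof -
  have lc1: "lin (fst X * dH * dB) (fst X * 1 * dB) (fmor B (fst (fobj H X)) (cepsilon H X))"
    unfolding fmor_def fobj_def cepsilon_def fst_conv snd_conv
    by (rule tmap_lin[OF tmap_lin[OF ivX[OF X] bH(6)] lin_id])
  have L: "lin (fst X * (dB*dH)) (fst X * dB) (fmor B (fst (fobj H X)) (cepsilon H X) \<circ> ddphi n B H phi X)"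
    by (rule lin_dim[OF lin_comp'[OF lddphi lc1]]) (simp_all add: ac_simps)
  have R: "lin (fst X * (dB*dH)) (fst X * dB) (cepsilon H (fobj B X))"
    unfolding cepsG[OF X] by (rule lin_dim[OF tmap_lin[OF tmap_lin[OF ivX[OF X] liB] bH(6)]]) (simp_all add: ac_simps)
  have "mapeq (fst X * (dB*dH)) (fmor B (fst (fobj H X)) (cepsilon H X) \<circ> ddphi n B H phi X) (cepsilon H (fobj B X))"
    by (rule reduce[OF L R e_L[OF X] e_R[OF X] P])
  then show ?thesis by (simp add: fobj_def mult.assoc)
qed

lemma e_only:
  assumes C: "mapeq (fst (fobj H (fobj B (unit_obj::'k::field object)))) (fmor B (fst (fobj H unit_obj)) (cepsilon H unit_obj) \<circ> ddphi n B H phi unit_obj) (cepsilon H (fobj B (unit_obj::'k::field object)))"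
  shows "mapeq (dB*dH) (PeL n) PeR"
proof -
  let ?L = "fmor B (fst (fobj H unit_obj)) (cepsilon H unit_obj) \<circ> ddphi n B H phi (unit_obj::'k object)"
  let ?R = "cepsilon H (fobj B (unit_obj::'k object))"
  have M: "mapeq (1*(dB*dH)) ?L ?R" using C by (simp add: fobj_def mult.assoc)
  show ?thesis
  proof (rule reduce_unit[OF M, where E="dB" and PL="PeL n" and PR="PeR"])
    fix U :: "'k vect" assume U: "U \<in> vsp (dB*dH)"
    show "?L (tv (dB*dH) (ebasis 0) U) = tv dB (ebasis 0) (PeL n U)"
      using e_L[OF obj_unit _ U, of "ebasis 0" n] by (simp add: iv_unit iv_unit[simplified])
    show "?R (tv (dB*dH) (ebasis 0) U) = tv dB (ebasis 0) (PeR U)"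
      using e_R[OF obj_unit _ U, of "ebasis 0"] by (simp add: iv_unit iv_unit[simplified])
  qed (simp_all add: linD1[OF lPeL] linD1[OF lPeR])
qed

lemma f_if:
  assumes X: "obj X" and P: "mapeq (dB*dH) (PfL n) PfR"
  shows "mapeq (fst (fobj H (fobj B X))) (cepsilon B (fobj H X) \<circ> ddphi n B H phi X) (fmor H (fst (fobj B X)) (cepsilon B X))"
proof -
  have lc1: "lin (fst X * dH * dB) (fst X * dH * 1) (cepsilon B (fobj H X))"
    unfolding cepsF[OF X] by (rule tmap_lin[OF tmap_lin[OF ivX[OF X] liH] bB(6)])
  have L: "lin (fst X * (dB*dH)) (fst X * dH) (cepsilon B (fobj H X) \<circ> ddphi n B H phi X)"
    by (rule lin_dim[OF lin_comp'[OF lddphi lc1]]) (simp_all add: ac_simps)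
  have R: "lin (fst X * (dB*dH)) (fst X * dH) (fmor H (fst (fobj B X)) (cepsilon B X))"
    unfolding fmor_def fobj_def cepsilon_def fst_conv snd_conv
    by (rule lin_dim[OF tmap_lin[OF tmap_lin[OF ivX[OF X] bB(6)] lin_id]]) (simp_all add: ac_simps)
  have "mapeq (fst X * (dB*dH)) (cepsilon B (fobj H X) \<circ> ddphi n B H phi X) (fmor H (fst (fobj B X)) (cepsilon B X))"
    by (rule reduce[OF L R f_L[OF X] f_R[OF X] P])
  then show ?thesis by (simp add: fobj_def mult.assoc)
qed

lemma f_only:
  assumes C: "mapeq (fst (fobj H (fobj B (unit_obj::'k::field object)))) (cepsilon B (fobj H unit_obj) \<circ> ddphi n B H phi unit_obj) (fmor H (fst (fobj B unit_obj)) (cepsilon B (unit_obj::'k::field object)))"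
  shows "mapeq (dB*dH) (PfL n) PfR"
proof -
  let ?L = "cepsilon B (fobj H unit_obj) \<circ> ddphi n B H phi (unit_obj::'k object)"
  let ?R = "fmor H (fst (fobj B unit_obj)) (cepsilon B (unit_obj::'k object))"
  have M: "mapeq (1*(dB*dH)) ?L ?R" using C by (simp add: fobj_def mult.assoc)
  show ?thesis
  proof (rule reduce_unit[OF M, where E="dH" and PL="PfL n" and PR="PfR"])
    fix U :: "'k vect" assume U: "U \<in> vsp (dB*dH)"
    show "?L (tv (dB*dH) (ebasis 0) U) = tv dH (ebasis 0) (PfL n U)"
      using f_L[OF obj_unit _ U, of "ebasis 0" n] by (simp add: iv_unit iv_unit[simplified])
    show "?R (tv (dB*dH) (ebasis 0) U) = tv dH (ebasis 0) (PfR U)"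
      using f_R[OF obj_unit _ U, of "ebasis 0"] by (simp add: iv_unit iv_unit[simplified])
  qed (simp_all add: linD1[OF lPfL] linD1[OF lPfR])
qed

end

context PH begin

lemma psi0_pt:
  assumes b: "b \<in> vsp dB" and h: "h \<in> vsp dH"
  shows "psi0 n (tv dH b h) = tmap dH dB dB id (Z n) (phi (tv dH (Z (-n-1) b) (aH h)))"
  by (simp add: psi0_def tmap_tv[OF lZ laH b h])

lemma Z_comm: "v \<in> vsp dB \<Longrightarrow> Z k (aB v) = aB (Z k v)"
  using zpow_succ[OF bB(5), of v k] by simp
lemma Z'_comm: "v \<in> vsp dH \<Longrightarrow> Z' k (aH v) = aH (Z' k v)"
  using zpow_succ[OF bH(5), of v k] by simp

lemma tv_aBaH: "c \<in> vsp dB \<Longrightarrow> k \<in> vsp dH \<Longrightarrow> tv dH (aB c) (aH k) = tmap dB dH dH aB aH (tv dH c k)"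
  by (simp add: tmap_tv[OF laB laH])

lemma psi0_alpha:
  assumes U: "U \<in> vsp (dB*dH)"
  shows "psi0 n (tmap dB dH dH aB aH U) = tmap dH dB dB aH aB (psi0 n U)"
proof -
  have "mapeq (dB*dH) (psi0 n \<circ> tmap dB dH dH aB aH) (tmap dH dB dB aH aB \<circ> psi0 n)"
  proof (rule tensor_ext[OF lin_comp[OF tmap_lin[OF laB laH] lpsi0] lin_comp[OF lpsi0 tmap_lin[OF laH laB]]])
    fix b h :: "'k vect" assume b: "b \<in> vsp dB" and h: "h \<in> vsp dH"
    let ?c = "Z (-n-1) b"
    have c: "?c \<in> vsp dB" using zpow_vsp[OF bB(5) b] .
    have Y: "phi (tv dH ?c (aH h)) \<in> vsp (dH*dB)" using linD1[OF lphi tv_vsp[OF c linD1[OF laH h]]] .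
    have e1: "mapeq dB (Z n \<circ> aB) (aB \<circ> Z n)" by (simp add: mapeq_def Z_comm)
    have "(psi0 n \<circ> tmap dB dH dH aB aH) (tv dH b h) = psi0 n (tv dH (aB b) (aH h))"
      by (simp add: tmap_tv[OF laB laH b h])
    also have "\<dots> = tmap dH dB dB id (Z n) (phi (tv dH (aB ?c) (aH (aH h))))"
      by (simp add: psi0_pt linD1[OF laB b] linD1[OF laH h] Z_comm b)
    also have "\<dots> = tmap dH dB dB id (Z n) (tmap dH dB dB aH aB (phi (tv dH ?c (aH h))))"
      by (simp add: tv_aBaH c linD1[OF laH h] cphi tv_vsp)
    also have "\<dots> = tmap dH dB dB aH (Z n \<circ> aB) (phi (tv dH ?c (aH h)))"
      by (rule tmap_pt[OF laH laB lin_id lZ Y]) simp_all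
    also have "\<dots> = tmap dH dB dB aH (aB \<circ> Z n) (phi (tv dH ?c (aH h)))"
      by (simp only: tmap_cong[OF mapeq_refl e1])
    also have "\<dots> = tmap dH dB dB aH aB (tmap dH dB dB id (Z n) (phi (tv dH ?c (aH h))))"
      by (rule tmap_pt[OF lin_id lZ laH laB Y, symmetric]) simp_all
    also have "\<dots> = (tmap dH dB dB aH aB \<circ> psi0 n) (tv dH b h)" by (simp add: psi0_pt b h)
    finally show "(psi0 n \<circ> tmap dB dH dH aB aH) (tv dH b h) = (tmap dH dB dB aH aB \<circ> psi0 n) (tv dH b h)" .
  qed
  then show ?thesis using U by (simp add: mapeq_def)
qed

lemma a_cond:
  assumes X: "obj X"
  shows "mor (fobj H (fobj B X)) (fobj B (fobj H X)) (ddphi n B H phi X)"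
proof -
  note aX = blin_lin[OF obj_blin[OF X]]
  have l: "lin (fst X * (dB*dH)) (fst X * (dH*dB)) (ddphi n B H phi X)" by (rule lddphi)
  have la1: "lin (fst X * dB * dH) (fst X * dB * dH) (tmap (fst X * dB) dH dH (tmap (fst X) dB dB (snd X) aB) aH)"
    by (rule tmap_lin[OF tmap_lin[OF aX laB] laH])
  have la2: "lin (fst X * dH * dB) (fst X * dH * dB) (tmap (fst X * dH) dB dB (tmap (fst X) dH dH (snd X) aH) aB)"
    by (rule tmap_lin[OF tmap_lin[OF aX laH] laB])
  have L: "lin (fst X * (dB*dH)) (fst X * (dH*dB)) (ddphi n B H phi X \<circ> tmap (fst X * dB) dH dH (tmap (fst X) dB dB (snd X) aB) aH)"
    by (rule lin_dim[OF lin_comp'[OF la1 l]]) (simp_all add: ac_simps)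
  have R: "lin (fst X * (dB*dH)) (fst X * (dH*dB)) (tmap (fst X * dH) dB dB (tmap (fst X) dH dH (snd X) aH) aB \<circ> ddphi n B H phi X)"
    by (rule lin_dim[OF lin_comp'[OF l la2]]) (simp_all add: ac_simps)
  have "mapeq (fst X * (dB*dH)) (ddphi n B H phi X \<circ> tmap (fst X * dB) dH dH (tmap (fst X) dB dB (snd X) aB) aH)
     (tmap (fst X * dH) dB dB (tmap (fst X) dH dH (snd X) aH) aB \<circ> ddphi n B H phi X)"
  proof (rule reduce[OF L R, where \<gamma>="snd X" and E="dH*dB" and PL="psi0 n \<circ> tmap dB dH dH aB aH" and PR="tmap dH dB dB aH aB \<circ> psi0 n"])
    fix w U :: "'k vect" assume w: "w \<in> vsp (fst X)" and U: "U \<in> vsp (dB*dH)"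
    show "(ddphi n B H phi X \<circ> tmap (fst X * dB) dH dH (tmap (fst X) dB dB (snd X) aB) aH) (tv (dB*dH) w U)
        = tv (dH*dB) (snd X w) ((psi0 n \<circ> tmap dB dH dH aB aH) U)"
      by (simp add: tmap_AL[OF aX laB laH w U] ddphi_tv[OF linD1[OF aX w] linD1[OF tmap_lin[OF laB laH] U]])
    show "(tmap (fst X * dH) dB dB (tmap (fst X) dH dH (snd X) aH) aB \<circ> ddphi n B H phi X) (tv (dB*dH) w U)
        = tv (dH*dB) (snd X w) ((tmap dH dB dB aH aB \<circ> psi0 n) U)"
      by (simp add: ddphi_tv[OF w U] tmap_AL[OF aX laH laB w vpsi0[OF U]])
  next
    show "mapeq (dB*dH) (psi0 n \<circ> tmap dB dH dH aB aH) (tmap dH dB dB aH aB \<circ> psi0 n)"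
      by (simp add: mapeq_def psi0_alpha)
  qed
  then show ?thesis
    using l by (simp add: mor_def mapeq_def fobj_def mult.assoc)
qed

lemma b_cond:
  assumes X: "obj X" and Y: "obj Y" and f: "mor X Y f"
  shows "mapeq (fst (fobj H (fobj B X))) (ddphi n B H phi Y \<circ> fmor H (fst (fobj B X)) (fmor B (fst X) f))
           (fmor B (fst (fobj H X)) (fmor H (fst X) f) \<circ> ddphi n B H phi X)"
proof -
  have lf: "lin (fst X) (fst Y) f" using f by (simp add: mor_def)
  have l1: "lin (fst X * dB * dH) (fst Y * dB * dH) (fmor H (fst (fobj B X)) (fmor B (fst X) f))"
    unfolding fmor_def fobj_def fst_conv by (rule tmap_lin[OF tmap_lin[OF lf lin_id] lin_id])
  have l2: "lin (fst X * dH * dB) (fst Y * dH * dB) (fmor B (fst (fobj H X)) (fmor H (fst X) f))"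
    unfolding fmor_def fobj_def fst_conv by (rule tmap_lin[OF tmap_lin[OF lf lin_id] lin_id])
  have L: "lin (fst X * (dB*dH)) (fst Y * (dH*dB)) (ddphi n B H phi Y \<circ> fmor H (fst (fobj B X)) (fmor B (fst X) f))"
    by (rule lin_dim[OF lin_comp'[OF l1 lddphi]]) (simp_all add: ac_simps)
  have R: "lin (fst X * (dB*dH)) (fst Y * (dH*dB)) (fmor B (fst (fobj H X)) (fmor H (fst X) f) \<circ> ddphi n B H phi X)"
    by (rule lin_dim[OF lin_comp'[OF lddphi l2]]) (simp_all add: ac_simps)
  have idB: "\<And>U. U \<in> vsp (dB*dH) \<Longrightarrow> tmap dB dH dH id id U = (U::'k vect)" using mapeqD[OF tmap_id[of dB dH]] by simp
  have idH: "\<And>U. U \<in> vsp (dH*dB) \<Longrightarrow> tmap dH dB dB id id U = (U::'k vect)" using mapeqD[OF tmap_id[of dH dB]] by simp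
  have "mapeq (fst X * (dB*dH)) (ddphi n B H phi Y \<circ> fmor H (fst (fobj B X)) (fmor B (fst X) f))
           (fmor B (fst (fobj H X)) (fmor H (fst X) f) \<circ> ddphi n B H phi X)"
  proof (rule reduce[OF L R, where \<gamma>="f" and E="dH*dB" and PL="psi0 n" and PR="psi0 n"])
    fix w U :: "'k vect" assume w: "w \<in> vsp (fst X)" and U: "U \<in> vsp (dB*dH)"
    show "(ddphi n B H phi Y \<circ> fmor H (fst (fobj B X)) (fmor B (fst X) f)) (tv (dB*dH) w U) = tv (dH*dB) (f w) (psi0 n U)"
      by (simp add: fmor_def fobj_def tmap_AL[OF lf lin_id lin_id w U] idB U ddphi_tv[OF linD1[OF lf w] U])
    show "(fmor B (fst (fobj H X)) (fmor H (fst X) f) \<circ> ddphi n B H phi X) (tv (dB*dH) w U) = tv (dH*dB) (f w) (psi0 n U)"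
      by (simp add: fmor_def fobj_def ddphi_tv[OF w U] tmap_AL[OF lf lin_id lin_id w vpsi0[OF U]] idH vpsi0[OF U])
  qed simp
  then show ?thesis by (simp add: fobj_def mult.assoc)
qed

end

context PH begin

lemma Zadd: "v \<in> vsp dB \<Longrightarrow> Z k (Z l v) = Z (k+l) v" using zpow_add[OF bB(5)] by simp
lemma Z'add: "v \<in> vsp dH \<Longrightarrow> Z' k (Z' l v) = Z' (k+l) v" using zpow_add[OF bH(5)] by simp
lemma vZ: "v \<in> vsp dB \<Longrightarrow> Z k v \<in> vsp dB" using zpow_vsp[OF bB(5)] .
lemma vZ': "v \<in> vsp dH \<Longrightarrow> Z' k v \<in> vsp dH" using zpow_vsp[OF bH(5)] .
lemma Zm1: "v \<in> vsp dB \<Longrightarrow> Z (-1) v = iv dB aB v" by simp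
lemma Z'm1: "v \<in> vsp dH \<Longrightarrow> Z' (-1) v = iv dH aH v" by simp
lemma aH_iv: "v \<in> vsp dH \<Longrightarrow> aH (iv dH aH v) = v" using iv_right[OF bH(5)] .
lemma iv_aH: "v \<in> vsp dH \<Longrightarrow> iv dH aH (aH v) = v" using iv_left[OF bH(5)] .
lemma vaH: "v \<in> vsp dH \<Longrightarrow> aH v \<in> vsp dH" using linD1[OF laH] .
lemma vivH: "v \<in> vsp dH \<Longrightarrow> iv dH aH v \<in> vsp dH" using iv_vsp[OF bH(5)] .
lemma vivB: "v \<in> vsp dB \<Longrightarrow> iv dB aB v \<in> vsp dB" using iv_vsp[OF bB(5)] .
lemma Zsmult: "v \<in> vsp dB \<Longrightarrow> Z k (\<lambda>p. c * v p) = (\<lambda>p. c * Z k v p)" using linD3[OF lZ] .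
lemma Z'smult: "v \<in> vsp dH \<Longrightarrow> Z' k (\<lambda>p. c * v p) = (\<lambda>p. c * Z' k v p)" using linD3[OF lZ'] .
lemma ivHsmult: "v \<in> vsp dH \<Longrightarrow> iv dH aH (\<lambda>p. c * v p) = (\<lambda>p. c * iv dH aH v p)" using linD3[OF liH] .
lemma aHsmult: "v \<in> vsp dH \<Longrightarrow> aH (\<lambda>p. c * v p) = (\<lambda>p. c * aH v p)" using linD3[OF laH] .
lemma Zinj: "u \<in> vsp dB \<Longrightarrow> v \<in> vsp dB \<Longrightarrow> Z k u = Z k v \<Longrightarrow> u = v"
  by (metis zpow_inv[OF bB(5)] minus_minus)
lemma aHinj: "u \<in> vsp dH \<Longrightarrow> v \<in> vsp dH \<Longrightarrow> aH u = aH v \<Longrightarrow> u = v"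
  by (metis iv_aH)
lemma ivHinj: "u \<in> vsp dH \<Longrightarrow> v \<in> vsp dH \<Longrightarrow> iv dH aH u = iv dH aH v \<Longrightarrow> u = v"
  by (metis aH_iv)

lemma tv_eps_R: "tv 1 v (eps1 e h) = (\<lambda>p. e h * (v::'k::field vect) p)"
  by (simp add: tv_def eps1_def fun_eq_iff mult.commute)
lemma tv_eps_L: "(h::'k::field vect) \<in> vsp d \<Longrightarrow> tv d (eps1 e v) h = (\<lambda>p. e v * h p)"
proof
  fix p assume h: "h \<in> vsp d"
  show "tv d (eps1 e v) h p = e v * h p"
  proof (cases "p < d")
    case True then show ?thesis by (simp add: tv_def eps1_def)
  next
    case False
    then have "h p = 0" using h by (simp add: vsp_def)
    moreover have "d = 0 \<or> p div d \<noteq> 0" using False by (auto simp: div_eq_0_iff)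
    ultimately show ?thesis using h by (auto simp: tv_def eps1_def vsp_def)
  qed
qed

definition "M3 \<longleftrightarrow> (\<forall>b\<in>vsp dB. \<forall>h\<in>vsp dH.
        tmap dH dB dB (eps1 (hcounit H)) id (phi (tv dH b h)) = (\<lambda>p. hcounit H h * b p))"
definition "M4 \<longleftrightarrow> (\<forall>b\<in>vsp dB. \<forall>h\<in>vsp dH.
        tmap dH dB 1 id (eps1 (hcounit B)) (phi (tv dH b h)) = (\<lambda>p. hcounit B b * h p))"

lemma vphi: "b \<in> vsp dB \<Longrightarrow> h \<in> vsp dH \<Longrightarrow> phi (tv dH b h) \<in> vsp (dH*dB)"
  using linD1[OF lphi tv_vsp] by blast

lemma e_pure:
  assumes b: "b \<in> vsp dB" and h: "h \<in> vsp dH"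
  shows "PeL n (tv dH b h) = Z n (tmap dH dB dB eH id (phi (tv dH (Z (-n-1) b) (aH h))))"
proof -
  let ?Y = "phi (tv dH (Z (-n-1) b) (aH h))"
  have Y: "?Y \<in> vsp (dH*dB)" using vphi[OF vZ[OF b] vaH[OF h]] .
  have "PeL n (tv dH b h) = tmap dH dB dB eH id (tmap dH dB dB id (Z n) ?Y)"
    by (simp add: PeL_def psi0_pt b h)
  also have "\<dots> = tmap dH dB dB eH (Z n) ?Y" by (rule tmap_pt[OF lin_id lZ bH(6) lin_id Y]) simp_all
  also have "\<dots> = tmap 1 dB dB id (Z n) (tmap dH dB dB eH id ?Y)" by (rule tmap_pt[OF bH(6) lin_id lin_id lZ Y, symmetric]) simp_all
  also have "\<dots> = Z n (tmap dH dB dB eH id ?Y)"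
    using mapeqD[OF tmap_unitL[OF lZ]] linD1[OF tmap_lin[OF bH(6) lin_id] Y] by simp
  finally show ?thesis .
qed

lemma PeR_pure: "b \<in> vsp dB \<Longrightarrow> h \<in> vsp dH \<Longrightarrow> PeR (tv dH b h) = (\<lambda>p. hcounit H h * iv dB aB b p)"
proof -
  assume b: "b \<in> vsp dB" and h: "h \<in> vsp dH"
  have "PeR (tv dH b h) = tv 1 (iv dB aB b) (eH h)" unfolding PeR_def by (rule tmap_tv[OF liB bH(6) b h])
  then show ?thesis by (simp only: tv_eps_R)
qed

lemma e_equiv: "mapeq (dB*dH) (PeL n) PeR \<longleftrightarrow> M3"
proof
  assume P: "mapeq (dB*dH) (PeL n) PeR"
  show M3 unfolding M3_def
  proof (intro ballI)
    fix b h :: "'k vect" assume b: "b \<in> vsp dB" and h: "h \<in> vsp dH"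
    let ?b = "Z (n+1) b" and ?h = "iv dH aH h"
    have T: "tmap dH dB dB eH id (phi (tv dH b h)) \<in> vsp dB" using linD1[OF tmap_lin[OF bH(6) lin_id] vphi[OF b h]] by simp
    have "PeL n (tv dH ?b ?h) = PeR (tv dH ?b ?h)" using mapeqD[OF P tv_vsp[OF vZ[OF b] vivH[OF h]]] .
    then have "Z n (tmap dH dB dB eH id (phi (tv dH b h))) = (\<lambda>p. hcounit H ?h * iv dB aB ?b p)"
      by (simp add: e_pure vZ b vivH h Zadd aH_iv PeR_pure)
    also have "\<dots> = Z n (\<lambda>p. hcounit H h * b p)"
    proof -
      have "iv dB aB ?b = Z n b" using zpow_pred(1)[OF bB(5) b, of "n+1"] by simp
      moreover have "hcounit H ?h = hcounit H h" using hb_alpha(4)[OF hH vivH[OF h]] aH_iv[OF h] by simp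
      ultimately show ?thesis by (simp add: Zsmult b)
    qed
    finally show "tmap dH dB dB eH id (phi (tv dH b h)) = (\<lambda>p. hcounit H h * b p)"
      by (rule Zinj[OF T vsp_smult[OF b]])
  qed
next
  assume M: M3
  show "mapeq (dB*dH) (PeL n) PeR"
  proof (rule tensor_ext[OF lPeL lPeR])
    fix b h :: "'k vect" assume b: "b \<in> vsp dB" and h: "h \<in> vsp dH"
    have "PeL n (tv dH b h) = Z n (\<lambda>p. hcounit H (aH h) * Z (-n-1) b p)"
      using M vZ[OF b] vaH[OF h] by (simp add: e_pure b h M3_def)
    also have "\<dots> = (\<lambda>p. hcounit H h * iv dB aB b p)"
      by (simp add: Zsmult vZ b Zadd hb_alpha(4)[OF hH h])
    also have "\<dots> = PeR (tv dH b h)" by (simp add: PeR_pure b h)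
    finally show "PeL n (tv dH b h) = PeR (tv dH b h)" .
  qed
qed


lemma f_pure:
  assumes b: "b \<in> vsp dB" and h: "h \<in> vsp dH"
  shows "PfL n (tv dH b h) = iv dH aH (tmap dH dB 1 id eB (phi (tv dH (Z (-n-1) b) (aH h))))"
proof -
  let ?Y = "phi (tv dH (Z (-n-1) b) (aH h))"
  have Y: "?Y \<in> vsp (dH*dB)" using vphi[OF vZ[OF b] vaH[OF h]] .
  have e: "mapeq dB (eB \<circ> Z n) eB"
    by (simp add: mapeq_def eps1_def hb_zpow(4)[OF hB] fun_eq_iff)
  have "PfL n (tv dH b h) = tmap dH dB 1 (iv dH aH) eB (tmap dH dB dB id (Z n) ?Y)"
    by (simp add: PfL_def psi0_pt b h)
  also have "\<dots> = tmap dH dB 1 (iv dH aH) eB ?Y" by (rule tmap_pt[OF lin_id lZ liH bB(6) Y]) (simp_all add: e)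
  also have "\<dots> = tmap dH 1 1 (iv dH aH) id (tmap dH dB 1 id eB ?Y)" by (rule tmap_pt[OF lin_id bB(6) liH lin_id Y, symmetric]) simp_all
  also have "\<dots> = iv dH aH (tmap dH dB 1 id eB ?Y)"
    using mapeqD[OF tmap_unitR[OF liH]] linD1[OF tmap_lin[OF lin_id bB(6)] Y] by simp
  finally show ?thesis .
qed

lemma PfR_pure: "b \<in> vsp dB \<Longrightarrow> h \<in> vsp dH \<Longrightarrow> PfR (tv dH b h) = (\<lambda>p. hcounit B b * h p)"
proof -
  assume b: "b \<in> vsp dB" and h: "h \<in> vsp dH"
  have "PfR (tv dH b h) = tv dH (eB b) (id h)" unfolding PfR_def by (rule tmap_tv[OF bB(6) lin_id b h])
  then show ?thesis using tv_eps_L[OF h] by simp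
qed

lemma f_equiv: "mapeq (dB*dH) (PfL n) PfR \<longleftrightarrow> M4"
proof
  assume P: "mapeq (dB*dH) (PfL n) PfR"
  show M4 unfolding M4_def
  proof (intro ballI)
    fix b h :: "'k vect" assume b: "b \<in> vsp dB" and h: "h \<in> vsp dH"
    let ?b = "Z (n+1) b" and ?h = "iv dH aH h"
    have T: "tmap dH dB 1 id eB (phi (tv dH b h)) \<in> vsp dH" using linD1[OF tmap_lin[OF lin_id bB(6)] vphi[OF b h]] by simp
    have "PfL n (tv dH ?b ?h) = PfR (tv dH ?b ?h)" using mapeqD[OF P tv_vsp[OF vZ[OF b] vivH[OF h]]] .
    then have "iv dH aH (tmap dH dB 1 id eB (phi (tv dH b h))) = (\<lambda>p. hcounit B ?b * ?h p)"
      by (simp add: f_pure vZ b vivH h Zadd aH_iv PfR_pure)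
    also have "\<dots> = iv dH aH (\<lambda>p. hcounit B b * h p)"
      by (simp add: hb_zpow(4)[OF hB b] ivHsmult h)
    finally show "tmap dH dB 1 id eB (phi (tv dH b h)) = (\<lambda>p. hcounit B b * h p)"
      by (rule ivHinj[OF T vsp_smult[OF h]])
  qed
next
  assume M: M4
  show "mapeq (dB*dH) (PfL n) PfR"
  proof (rule tensor_ext[OF lPfL lPfR])
    fix b h :: "'k vect" assume b: "b \<in> vsp dB" and h: "h \<in> vsp dH"
    have "PfL n (tv dH b h) = iv dH aH (\<lambda>p. hcounit B (Z (-n-1) b) * aH h p)"
      using M vZ[OF b] vaH[OF h] by (simp add: f_pure b h M4_def)
    also have "\<dots> = (\<lambda>p. hcounit B b * h p)"
      by (simp add: ivHsmult vaH h iv_aH hb_zpow(4)[OF hB b])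
    also have "\<dots> = PfR (tv dH b h)" by (simp add: PfR_pure b h)
    finally show "PfL n (tv dH b h) = PfR (tv dH b h)" .
  qed
qed

end

declare zpow_m1[simp del]

lemma vsp_assoc: "vsp (a*b*c) = vsp (a*(b*c))" by (simp add: mult.assoc)

context PH begin

lemma Z'm1_aH[simp]: "v \<in> vsp dH \<Longrightarrow> Z' (-1) (aH v) = v" by (simp add: zpow_m1 iv_aH)
lemma aH_Z'm1[simp]: "v \<in> vsp dH \<Longrightarrow> aH (Z' (-1) v) = v" by (simp add: zpow_m1 aH_iv)
lemma vaH'[simp]: "v \<in> vsp dH \<Longrightarrow> aH v \<in> vsp dH" by (rule vaH)

lemma blin_aBaH: "blin (dB*dH) (tmap dB dH dH aB aH)" using blin_tmap(1)[OF bB(5) bH(5)] .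
lemma blin_aHaB: "blin (dH*dB) (tmap dH dB dB aH aB)" using blin_tmap(1)[OF bH(5) bB(5)] .

lemma phiZ:
  assumes u: "u \<in> vsp (dB*dH)"
  shows "phi (tmap dB dH dH (Z k) (Z' k) u) = tmap dH dB dB (Z' k) (Z k) (phi u)"
proof -
  have "phi (zpow (dB*dH) (tmap dB dH dH aB aH) k u) = zpow (dH*dB) (tmap dH dB dB aH aB) k (phi u)"
    by (rule zpow_intertw[OF blin_aBaH blin_aHaB linD1[OF lphi] _ u]) (simp_all add: cphi)
  then show ?thesis
    using mapeqD[OF zpow_tmap[OF bB(5) bH(5)] u] mapeqD[OF zpow_tmap[OF bH(5) bB(5)] linD1[OF lphi u]] by simp
qed

lemma phiZ_pt:
  assumes c: "c \<in> vsp dB" and y: "y \<in> vsp dH"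
  shows "phi (tv dH (Z k c) (Z' k y)) = tmap dH dB dB (Z' k) (Z k) (phi (tv dH c y))"
  using phiZ[OF tv_vsp[OF c y], of k] by (simp add: tmap_tv[OF lZ lZ' c y])

lemma DBZ:
  assumes v: "v \<in> vsp dB"
  shows "DB (Z k v) = tmap dB dB dB (Z k) (Z (k-1)) (hcomul B v)"
proof -
  have e: "mapeq dB (iv dB aB \<circ> Z k) (Z (k-1))" by (simp add: mapeq_def zpow_pred(1)[OF bB(5)] zpow_m1)
  have "DB (Z k v) = tmap dB dB dB id (iv dB aB) (tmap dB dB dB (Z k) (Z k) (hcomul B v))"
    by (simp add: DB_def hb_zpow(3)[OF hB v])
  also have "\<dots> = tmap dB dB dB (Z k) (Z (k-1)) (hcomul B v)"
    by (rule tmap_pt[OF lZ lZ lin_id liB linD1[OF bB(3) v]]) (simp_all add: e)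
  finally show ?thesis .
qed

definition "J2 n = tmap dB dB dB (Z n) (Z (n-1))"
definition "J n = tmap dH (dB*dB) (dB*dB) id (J2 n)"
definition "M1L c k = tmap (dB*dH) dB dB phi id (tmap dB (dB*dH) (dH*dB) id phi (tv dH (hcomul B c) (aH k)))"
definition "M1R c k = tmap dH dB (dB*dB) aH (hcomul B) (phi (tv dH c k))"

lemma lJ2: "lin (dB*dB) (dB*dB) (J2 n)" unfolding J2_def by (rule tmap_lin[OF lZ lZ])
lemma blinJ: "blin (dH*(dB*dB)) (J n)"
  unfolding J_def J2_def by (rule blin_tmap(1)[OF blin_id blin_tmap(1)[OF zpow_blin[OF bB(5)] zpow_blin[OF bB(5)]]])

lemma c_pure_L:
  assumes b: "b \<in> vsp dB" and h: "h \<in> vsp dH"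
  shows "PcL n (tv dH b h) = J n (M1R (Z (-n-1) b) (aH h))"
proof -
  let ?Y = "phi (tv dH (Z (-n-1) b) (aH h))"
  have Y: "?Y \<in> vsp (dH*dB)" using vphi[OF vZ[OF b] vaH[OF h]] .
  have e: "mapeq dB (DB \<circ> Z n) (J2 n \<circ> hcomul B)" by (simp add: mapeq_def DBZ J2_def)
  have "PcL n (tv dH b h) = tmap dH dB (dB*dB) aH DB (tmap dH dB dB id (Z n) ?Y)"
    by (simp add: PcL_def psi0_pt b h)
  also have "\<dots> = tmap dH dB (dB*dB) aH (J2 n \<circ> hcomul B) ?Y"
    by (rule tmap_pt[OF lin_id lZ laH lDB Y]) (simp_all add: e)
  also have "\<dots> = J n (M1R (Z (-n-1) b) (aH h))"
    unfolding J_def M1R_def by (rule tmap_pt[OF laH bB(3) lin_id lJ2 Y, symmetric]) simp_all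
  finally show ?thesis .
qed

lemma Qlem:
  "mapeq (dB*dH) (psi0 n \<circ> tmap dB dH dH (Z n) (iv dH aH))
      (tmap dH dB dB (Z' (-1)) (Z (n-1)) \<circ> phi \<circ> tmap dB dH dH id aH)"
proof (rule tensor_ext)
  show "lin (dB*dH) (dH*dB) (psi0 n \<circ> tmap dB dH dH (Z n) (iv dH aH))"
    by (rule lin_comp[OF tmap_lin[OF lZ liH] lpsi0])
  show "lin (dB*dH) (dH*dB) (tmap dH dB dB (Z' (-1)) (Z (n-1)) \<circ> phi \<circ> tmap dB dH dH id aH)"
    by (rule lin_comp[OF tmap_lin[OF lin_id laH] lin_comp[OF lphi tmap_lin[OF lZ' lZ]]])
  fix x y :: "'k vect" assume x: "x \<in> vsp dB" and y: "y \<in> vsp dH"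
  have Y: "phi (tv dH x (aH y)) \<in> vsp (dH*dB)" using vphi[OF x vaH[OF y]] .
  have "(psi0 n \<circ> tmap dB dH dH (Z n) (iv dH aH)) (tv dH x y) = tmap dH dB dB id (Z n) (phi (tv dH (Z (-1) x) (Z' (-1) (aH y))))"
    by (simp add: tmap_tv[OF lZ liH x y] psi0_pt vZ x vivH y Zadd aH_iv iv_aH)
  also have "\<dots> = tmap dH dB dB id (Z n) (tmap dH dB dB (Z' (-1)) (Z (-1)) (phi (tv dH x (aH y))))"
    by (simp only: phiZ_pt[OF x vaH[OF y]])
  also have "\<dots> = tmap dH dB dB (Z' (-1)) (Z (n-1)) (phi (tv dH x (aH y)))"
    by (rule tmap_pt[OF lZ' lZ lin_id lZ Y]) (simp_all add: mapeq_def Zadd)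
  also have "\<dots> = (tmap dH dB dB (Z' (-1)) (Z (n-1)) \<circ> phi \<circ> tmap dB dH dH id aH) (tv dH x y)"
    by (simp add: tmap_tv[OF lin_id laH x y])
  finally show "(psi0 n \<circ> tmap dB dH dH (Z n) (iv dH aH)) (tv dH x y) = (tmap dH dB dB (Z' (-1)) (Z (n-1)) \<circ> phi \<circ> tmap dB dH dH id aH) (tv dH x y)" .
qed

lemma Q2lem:
  "mapeq (dB*dH) (psi0 n \<circ> tmap dB dH dH (Z (n+1)) (Z' (-1))) (tmap dH dB dB id (Z n) \<circ> phi)"
proof (rule tensor_ext)
  show "lin (dB*dH) (dH*dB) (psi0 n \<circ> tmap dB dH dH (Z (n+1)) (Z' (-1)))"
    by (rule lin_comp[OF tmap_lin[OF lZ lZ'] lpsi0])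
  show "lin (dB*dH) (dH*dB) (tmap dH dB dB id (Z n) \<circ> phi)"
    by (rule lin_comp[OF lphi tmap_lin[OF lin_id lZ]])
  fix x y :: "'k vect" assume x: "x \<in> vsp dB" and y: "y \<in> vsp dH"
  show "(psi0 n \<circ> tmap dB dH dH (Z (n+1)) (Z' (-1))) (tv dH x y) = (tmap dH dB dB id (Z n) \<circ> phi) (tv dH x y)"
    by (simp add: tmap_tv[OF lZ lZ' x y] psi0_pt vZ x vZ' y Zadd aH_iv)
qed

lemma c_pure_R:
  assumes b: "b \<in> vsp dB" and h: "h \<in> vsp dH"
  shows "PcR n (tv dH b h) = J n (M1L (Z (-n-1) b) (aH h))"
proof -
  let ?c = "Z (-n-1) b" and ?k = "aH h"
  have c: "?c \<in> vsp dB" using vZ[OF b] .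
  have k: "?k \<in> vsp dH" using vaH[OF h] .
  have bc: "b = Z (n+1) ?c" using b by (simp add: Zadd)
  have hk: "h = iv dH aH ?k" using h by (simp add: iv_aH)
  have cc: "hcomul B ?c \<in> vsp (dB*dB)" using linD1[OF bB(3) c] .
  let ?V = "tv dH (hcomul B ?c) ?k"
  have V: "?V \<in> vsp (dB*(dB*dH))" using tv_vsp[OF cc k] by (simp add: mult.assoc)
  let ?W = "tmap dB (dB*dH) (dH*dB) id phi (tv dH (hcomul B ?c) (aH ?k))"
  have W: "?W \<in> vsp (dB*dH*dB)"
    using linD1[OF tmap_lin[OF lin_id lphi]] tv_vsp[OF cc vaH[OF k]] by (simp add: mult.assoc)
  have lJ2': "lin (dB*dB) (dB*dB) (tmap dB dB dB (Z (n+1)) (Z n))" by (rule tmap_lin[OF lZ lZ])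
  have s1: "tmap dB dH dH DB id (tv dH b h) = tmap dB (dB*dH) (dB*dH) (Z (n+1)) (tmap dB dH dH (Z n) (iv dH aH)) ?V"
  proof -
    have "tmap dB dH dH DB id (tv dH b h) = tv dH (DB b) h" using tmap_tv[OF lDB lin_id b h] by simp
    also have "\<dots> = tv dH (tmap dB dB dB (Z (n+1)) (Z n) (hcomul B ?c)) (iv dH aH ?k)"
      using DBZ[OF c, of "n+1"] bc hk by simp
    also have "\<dots> = tmap (dB*dB) dH dH (tmap dB dB dB (Z (n+1)) (Z n)) (iv dH aH) ?V"
      by (rule tmap_tv[OF lJ2' liH cc k, symmetric])
    also have "\<dots> = tmap dB (dB*dH) (dB*dH) (Z (n+1)) (tmap dB dH dH (Z n) (iv dH aH)) ?V"
      using tmap_assoc_pt[OF lZ lZ liH] V by (simp add: mult.assoc)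
    finally show ?thesis .
  qed
  have idV: "tmap dB (dB*dH) (dB*dH) id (tmap dB dH dH id aH) ?V = tv dH (hcomul B ?c) (aH ?k)"
  proof -
    have "tmap dB (dB*dH) (dB*dH) id (tmap dB dH dH id aH) ?V = tmap (dB*dB) dH dH (tmap dB dB dB id id) aH ?V"
      using tmap_assoc_pt[OF lin_id lin_id laH] V by (simp add: mult.assoc)
    also have "\<dots> = tmap (dB*dB) dH dH id aH ?V" by (simp only: tmap_id_cong[symmetric])
    also have "\<dots> = tv dH (hcomul B ?c) (aH ?k)" using tmap_tv[OF lin_id laH cc k] by simp
    finally show ?thesis .
  qed
  have s2: "tmap dB (dB*dH) (dH*dB) id (psi0 n) (tmap dB dH dH DB id (tv dH b h))
      = tmap dB (dH*dB) (dH*dB) (Z (n+1)) (tmap dH dB dB (Z' (-1)) (Z (n-1))) ?W"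
  proof -
    have V': "tmap dB (dB*dH) (dB*dH) id (tmap dB dH dH id aH) ?V \<in> vsp (dB*(dB*dH))"
      using linD1[OF tmap_lin[OF lin_id tmap_lin[OF lin_id laH]] V] .
    have "tmap dB (dB*dH) (dH*dB) id (psi0 n) (tmap dB (dB*dH) (dB*dH) (Z (n+1)) (tmap dB dH dH (Z n) (iv dH aH)) ?V)
        = tmap dB (dB*dH) (dH*dB) (Z (n+1)) (tmap dH dB dB (Z' (-1)) (Z (n-1)) \<circ> phi \<circ> tmap dB dH dH id aH) ?V"
      by (rule tmap_pt[OF lZ tmap_lin[OF lZ liH] lin_id lpsi0 V]) (simp_all add: Qlem)
    also have "\<dots> = tmap dB (dB*dH) (dH*dB) (Z (n+1)) (tmap dH dB dB (Z' (-1)) (Z (n-1)) \<circ> phi) (tmap dB (dB*dH) (dB*dH) id (tmap dB dH dH id aH) ?V)"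
      by (rule tmap_pt[OF lin_id tmap_lin[OF lin_id laH] lZ lin_comp[OF lphi tmap_lin[OF lZ' lZ]] V, symmetric]) simp_all
    also have "\<dots> = tmap dB (dH*dB) (dH*dB) (Z (n+1)) (tmap dH dB dB (Z' (-1)) (Z (n-1))) ?W"
      unfolding idV
      by (rule tmap_pt[OF lin_id lphi lZ tmap_lin[OF lZ' lZ], symmetric]) (use tv_vsp[OF cc vaH[OF k]] in \<open>simp_all add: mult.assoc\<close>)
    finally show ?thesis using s1 by simp
  qed
  have s3: "tmap (dB*dH) dB dB (psi0 n) id (tmap dB (dH*dB) (dH*dB) (Z (n+1)) (tmap dH dB dB (Z' (-1)) (Z (n-1))) ?W)
      = J n (M1L ?c ?k)"
  proof -
    have "tmap dB (dH*dB) (dH*dB) (Z (n+1)) (tmap dH dB dB (Z' (-1)) (Z (n-1))) ?W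
        = tmap (dB*dH) dB dB (tmap dB dH dH (Z (n+1)) (Z' (-1))) (Z (n-1)) ?W"
      using tmap_assoc_pt[OF lZ lZ' lZ W] by simp
    then have "tmap (dB*dH) dB dB (psi0 n) id (tmap dB (dH*dB) (dH*dB) (Z (n+1)) (tmap dH dB dB (Z' (-1)) (Z (n-1))) ?W)
        = tmap (dB*dH) dB dB (psi0 n) id (tmap (dB*dH) dB dB (tmap dB dH dH (Z (n+1)) (Z' (-1))) (Z (n-1)) ?W)" by simp
    also have "\<dots> = tmap (dB*dH) dB dB (tmap dH dB dB id (Z n) \<circ> phi) (Z (n-1)) ?W"
      by (rule tmap_pt[OF tmap_lin[OF lZ lZ'] lZ lpsi0 lin_id W]) (simp_all add: Q2lem)
    also have "\<dots> = tmap (dH*dB) dB dB (tmap dH dB dB id (Z n)) (Z (n-1)) (tmap (dB*dH) dB dB phi id ?W)"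
      by (rule tmap_pt[OF lphi lin_id tmap_lin[OF lin_id lZ] lZ W, symmetric]) simp_all
    also have "\<dots> = J n (M1L ?c ?k)"
      unfolding J_def J2_def M1L_def
      using tmap_assoc_pt[OF lin_id lZ lZ] linD1[OF tmap_lin[OF lphi lin_id] W] by (simp add: mult.assoc)
    finally show ?thesis .
  qed
  show ?thesis using s2 s3 by (simp add: PcR_def)
qed


definition "M1 \<longleftrightarrow> (\<forall>b\<in>vsp dB. \<forall>h\<in>vsp dH. M1L b h = M1R b h)"

lemma lPcL: "lin (dB*dH) (dH*(dB*dB)) (PcL n)"
  unfolding PcL_def by (rule lin_dim[OF lin_comp'[OF lpsi0 tmap_lin[OF laH lDB]]]) simp_all
lemma lPcR: "lin (dB*dH) (dH*(dB*dB)) (PcR n)"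
  unfolding PcR_def
  by (rule lin_dim[OF lin_comp'[OF tmap_lin[OF lDB lin_id] lin_comp'[OF tmap_lin[OF lin_id lpsi0] tmap_lin[OF lpsi0 lin_id]]]]) (simp_all add: ac_simps)

lemma vM1R: "c \<in> vsp dB \<Longrightarrow> k \<in> vsp dH \<Longrightarrow> M1R c k \<in> vsp (dH*(dB*dB))"
  unfolding M1R_def using linD1[OF tmap_lin[OF laH bB(3)] vphi] by blast
lemma vM1L: "c \<in> vsp dB \<Longrightarrow> k \<in> vsp dH \<Longrightarrow> M1L c k \<in> vsp (dH*(dB*dB))"
proof -
  assume c: "c \<in> vsp dB" and k: "k \<in> vsp dH"
  have "tv dH (hcomul B c) (aH k) \<in> vsp (dB*(dB*dH))" using tv_vsp[OF linD1[OF bB(3) c] vaH[OF k]] by (simp add: mult.assoc)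
  then have "tmap dB (dB*dH) (dH*dB) id phi (tv dH (hcomul B c) (aH k)) \<in> vsp (dB*dH*dB)"
    using linD1[OF tmap_lin[OF lin_id lphi]] by (simp add: mult.assoc)
  then show ?thesis unfolding M1L_def using linD1[OF tmap_lin[OF lphi lin_id]] by (simp add: mult.assoc)
qed

lemma c_equiv: "mapeq (dB*dH) (PcL n) (PcR n) \<longleftrightarrow> M1"
proof
  assume P: "mapeq (dB*dH) (PcL n) (PcR n)"
  show M1 unfolding M1_def
  proof (intro ballI)
    fix c k :: "'k vect" assume c: "c \<in> vsp dB" and k: "k \<in> vsp dH"
    let ?b = "Z (n+1) c" and ?h = "iv dH aH k"
    have "PcL n (tv dH ?b ?h) = PcR n (tv dH ?b ?h)" using mapeqD[OF P tv_vsp[OF vZ[OF c] vivH[OF k]]] .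
    then have "J n (M1R c k) = J n (M1L c k)"
      using c_pure_L[OF vZ[OF c] vivH[OF k], of n] c_pure_R[OF vZ[OF c] vivH[OF k], of n]
      by (simp add: Zadd c aH_iv k)
    then show "M1L c k = M1R c k" using iv_left[OF blinJ vM1L[OF c k]] iv_left[OF blinJ vM1R[OF c k]] by metis
  qed
next
  assume M: M1
  show "mapeq (dB*dH) (PcL n) (PcR n)"
  proof (rule tensor_ext[OF lPcL lPcR])
    fix b h :: "'k vect" assume b: "b \<in> vsp dB" and h: "h \<in> vsp dH"
    show "PcL n (tv dH b h) = PcR n (tv dH b h)"
      using M vZ[OF b] vaH[OF h] by (simp add: c_pure_L c_pure_R b h M1_def)
  qed
qed

end

context PH begin

lemma lZ'': "lin dH dH (Z' k)" by (rule lZ')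

lemma DHZ:
  assumes v: "v \<in> vsp dH"
  shows "DH (Z' k v) = tmap dH dH dH (Z' k) (Z' (k-1)) (hcomul H v)"
proof -
  have e: "mapeq dH (iv dH aH \<circ> Z' k) (Z' (k-1))" by (simp add: mapeq_def zpow_pred(1)[OF bH(5)] zpow_m1)
  have "DH (Z' k v) = tmap dH dH dH id (iv dH aH) (tmap dH dH dH (Z' k) (Z' k) (hcomul H v))"
    by (simp add: DH_def hb_zpow(3)[OF hH v])
  also have "\<dots> = tmap dH dH dH (Z' k) (Z' (k-1)) (hcomul H v)"
    by (rule tmap_pt[OF lZ' lZ' lin_id liH linD1[OF bH(3) v]]) (simp_all add: e)
  finally show ?thesis .
qed

lemma aH_Z': "v \<in> vsp dH \<Longrightarrow> aH (Z' k v) = Z' (k+1) v" using zpow_succ(1)[OF bH(5), of v k] by simp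
lemma aB_Z: "v \<in> vsp dB \<Longrightarrow> aB (Z k v) = Z (k+1) v" using zpow_succ(1)[OF bB(5), of v k] by simp
lemma Z_aB: "v \<in> vsp dB \<Longrightarrow> Z k (aB v) = Z (k+1) v" using zpow_succ(2)[OF bB(5), of v k] by simp

definition "K n = tmap dH (dH*dB) (dH*dB) id (tmap dH dB dB (Z' (-1)) (Z (n-1)))"
definition "M2L c k = tmap dH (dB*dH) (dH*dB) id phi (tmap (dB*dH) dH dH phi id (tv (dH*dH) (aB c) (hcomul H k)))"
definition "M2R c k = tmap dH dB dB (hcomul H) aB (phi (tv dH c k))"
definition "M2 \<longleftrightarrow> (\<forall>b\<in>vsp dB. \<forall>h\<in>vsp dH. M2L b h = M2R b h)"

lemma blinK: "blin (dH*(dH*dB)) (K n)"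
  unfolding K_def by (rule blin_tmap(1)[OF blin_id blin_tmap(1)[OF zpow_blin[OF bH(5)] zpow_blin[OF bB(5)]]])

lemma vM2R: "c \<in> vsp dB \<Longrightarrow> k \<in> vsp dH \<Longrightarrow> M2R c k \<in> vsp (dH*(dH*dB))"
  unfolding M2R_def using linD1[OF tmap_lin[OF bH(3) laB] vphi] by (simp add: mult.assoc)
lemma vM2L: "c \<in> vsp dB \<Longrightarrow> k \<in> vsp dH \<Longrightarrow> M2L c k \<in> vsp (dH*(dH*dB))"
proof -
  assume c: "c \<in> vsp dB" and k: "k \<in> vsp dH"
  have "tv (dH*dH) (aB c) (hcomul H k) \<in> vsp (dB*dH*dH)" using tv_vsp[OF linD1[OF laB c] linD1[OF bH(3) k]] by (simp add: mult.assoc)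
  then have "tmap (dB*dH) dH dH phi id (tv (dH*dH) (aB c) (hcomul H k)) \<in> vsp (dH*(dB*dH))"
    using linD1[OF tmap_lin[OF lphi lin_id]] by (simp add: mult.assoc)
  then show ?thesis unfolding M2L_def using linD1[OF tmap_lin[OF lin_id lphi]] by (simp add: mult.assoc)
qed

lemma d_pure_L:
  assumes b: "b \<in> vsp dB" and h: "h \<in> vsp dH"
  shows "PdL n (tv dH b h) = K n (M2R (Z (-n-1) b) (aH h))"
proof -
  let ?Y = "phi (tv dH (Z (-n-1) b) (aH h))"
  have Y: "?Y \<in> vsp (dH*dB)" using vphi[OF vZ[OF b] vaH[OF h]] .
  have e1: "mapeq dH (tmap dH dH dH id (Z' (-1)) \<circ> hcomul H) DH" by (simp add: mapeq_def DH_def zpow_m1)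
  have e2: "mapeq dB (Z (n-1) \<circ> aB) (Z n)" by (simp add: mapeq_def Z_aB)
  have "PdL n (tv dH b h) = tmap dH dB dB DH id (tmap dH dB dB id (Z n) ?Y)"
    by (simp add: PdL_def psi0_pt b h)
  also have "\<dots> = tmap dH dB dB DH (Z n) ?Y"
    by (rule tmap_pt[OF lin_id lZ lDH lin_id Y]) simp_all
  also have "\<dots> = tmap (dH*dH) dB dB (tmap dH dH dH id (Z' (-1))) (Z (n-1)) (tmap dH dB dB (hcomul H) aB ?Y)"
    by (rule tmap_pt[OF bH(3) laB tmap_lin[OF lin_id lZ'] lZ Y, symmetric]) (simp_all add: e1 e2)
  also have "\<dots> = K n (M2R (Z (-n-1) b) (aH h))"
    unfolding K_def M2R_def
    using tmap_assoc_pt[OF lin_id lZ' lZ] linD1[OF tmap_lin[OF bH(3) laB] Y] by (simp add: mult.assoc)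
  finally show ?thesis .
qed

lemma Q3lem:
  "mapeq (dB*dH) (psi0 n \<circ> tmap dB dH dH (Z n) (Z' (-2))) (tmap dH dB dB (Z' (-1)) (Z (n-1)) \<circ> phi)"
proof (rule tensor_ext)
  show "lin (dB*dH) (dH*dB) (psi0 n \<circ> tmap dB dH dH (Z n) (Z' (-2)))"
    by (rule lin_comp[OF tmap_lin[OF lZ lZ'] lpsi0])
  show "lin (dB*dH) (dH*dB) (tmap dH dB dB (Z' (-1)) (Z (n-1)) \<circ> phi)"
    by (rule lin_comp[OF lphi tmap_lin[OF lZ' lZ]])
  fix x y :: "'k vect" assume x: "x \<in> vsp dB" and y: "y \<in> vsp dH"
  have Y: "phi (tv dH x y) \<in> vsp (dH*dB)" using vphi[OF x y] .
  have "(psi0 n \<circ> tmap dB dH dH (Z n) (Z' (-2))) (tv dH x y) = tmap dH dB dB id (Z n) (phi (tv dH (Z (-1) x) (Z' (-1) y)))"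
    by (simp add: tmap_tv[OF lZ lZ' x y] psi0_pt vZ x vZ' y Zadd aH_Z')
  also have "\<dots> = tmap dH dB dB id (Z n) (tmap dH dB dB (Z' (-1)) (Z (-1)) (phi (tv dH x y)))"
    by (simp only: phiZ_pt[OF x y])
  also have "\<dots> = tmap dH dB dB (Z' (-1)) (Z (n-1)) (phi (tv dH x y))"
    by (rule tmap_pt[OF lZ' lZ lin_id lZ Y]) (simp_all add: mapeq_def Zadd)
  finally show "(psi0 n \<circ> tmap dB dH dH (Z n) (Z' (-2))) (tv dH x y) = (tmap dH dB dB (Z' (-1)) (Z (n-1)) \<circ> phi) (tv dH x y)"
    by simp
qed

lemma d_pure_R:
  assumes b: "b \<in> vsp dB" and h: "h \<in> vsp dH"
  shows "PdR n (tv dH b h) = K n (M2L (Z (-n-1) b) (aH h))"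
proof -
  let ?c = "Z (-n-1) b" and ?k = "aH h"
  have c: "?c \<in> vsp dB" using vZ[OF b] .
  have k: "?k \<in> vsp dH" using vaH[OF h] .
  have bc: "b = Z (n+1) ?c" using b by (simp add: Zadd)
  have hk: "h = Z' (-1) ?k" using h by simp
  have ck: "hcomul H ?k \<in> vsp (dH*dH)" using linD1[OF bH(3) k] .
  have ac: "aB ?c \<in> vsp dB" using linD1[OF laB c] .
  let ?V = "tv (dH*dH) (aB ?c) (hcomul H ?k)"
  have V: "?V \<in> vsp (dB*dH*dH)" using tv_vsp[OF ac ck] by (simp add: mult.assoc)
  let ?W = "tmap (dB*dH) dH dH phi id ?V"
  have W: "?W \<in> vsp (dH*dB*dH)" using linD1[OF tmap_lin[OF lphi lin_id] V] by simp
  have s1: "tmap dB dH (dH*dH) aB DH (tv dH b h) = tmap (dB*dH) dH dH (tmap dB dH dH (Z (n+1)) (Z' (-1))) (Z' (-2)) ?V"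
  proof -
    have "tmap dB dH (dH*dH) aB DH (tv dH b h) = tv (dH*dH) (aB b) (DH h)" by (rule tmap_tv[OF laB lDH b h])
    also have "\<dots> = tv (dH*dH) (Z (n+1) (aB ?c)) (tmap dH dH dH (Z' (-1)) (Z' (-2)) (hcomul H ?k))"
    proof -
      have "aB b = Z (n+1) (aB ?c)" using Z_comm[OF c, of "n+1"] bc by metis
      moreover have "DH h = tmap dH dH dH (Z' (-1)) (Z' (-2)) (hcomul H ?k)" using DHZ[OF k, of "-1"] hk by simp
      ultimately show ?thesis by simp
    qed
    also have "\<dots> = tmap dB (dH*dH) (dH*dH) (Z (n+1)) (tmap dH dH dH (Z' (-1)) (Z' (-2))) ?V"
      by (rule tmap_tv[OF lZ tmap_lin[OF lZ' lZ'] ac ck, symmetric])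
    also have "\<dots> = tmap (dB*dH) dH dH (tmap dB dH dH (Z (n+1)) (Z' (-1))) (Z' (-2)) ?V"
      using tmap_assoc_pt[OF lZ lZ' lZ' V] by simp
    finally show ?thesis .
  qed
  have s2: "tmap (dB*dH) dH dH (psi0 n) id (tmap (dB*dH) dH dH (tmap dB dH dH (Z (n+1)) (Z' (-1))) (Z' (-2)) ?V)
      = tmap dH (dB*dH) (dB*dH) id (tmap dB dH dH (Z n) (Z' (-2))) ?W"
  proof -
    have "tmap (dB*dH) dH dH (psi0 n) id (tmap (dB*dH) dH dH (tmap dB dH dH (Z (n+1)) (Z' (-1))) (Z' (-2)) ?V)
        = tmap (dB*dH) dH dH (tmap dH dB dB id (Z n) \<circ> phi) (Z' (-2)) ?V"
      by (rule tmap_pt[OF tmap_lin[OF lZ lZ'] lZ' lpsi0 lin_id V]) (simp_all add: Q2lem)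
    also have "\<dots> = tmap (dH*dB) dH dH (tmap dH dB dB id (Z n)) (Z' (-2)) ?W"
      by (rule tmap_pt[OF lphi lin_id tmap_lin[OF lin_id lZ] lZ' V, symmetric]) simp_all
    also have "\<dots> = tmap dH (dB*dH) (dB*dH) id (tmap dB dH dH (Z n) (Z' (-2))) ?W"
      using tmap_assoc_pt[OF lin_id lZ lZ' W] by simp
    finally show ?thesis .
  qed
  have s3: "tmap dH (dB*dH) (dH*dB) id (psi0 n) (tmap dH (dB*dH) (dB*dH) id (tmap dB dH dH (Z n) (Z' (-2))) ?W)
      = K n (M2L ?c ?k)"
  proof -
    have W': "?W \<in> vsp (dH*(dB*dH))" using W by (simp add: mult.assoc)
    have "tmap dH (dB*dH) (dH*dB) id (psi0 n) (tmap dH (dB*dH) (dB*dH) id (tmap dB dH dH (Z n) (Z' (-2))) ?W)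
        = tmap dH (dB*dH) (dH*dB) id (tmap dH dB dB (Z' (-1)) (Z (n-1)) \<circ> phi) ?W"
      by (rule tmap_pt[OF lin_id tmap_lin[OF lZ lZ'] lin_id lpsi0 W']) (simp_all add: Q3lem)
    also have "\<dots> = tmap dH (dH*dB) (dH*dB) id (tmap dH dB dB (Z' (-1)) (Z (n-1))) (tmap dH (dB*dH) (dH*dB) id phi ?W)"
      by (rule tmap_pt[OF lin_id lphi lin_id tmap_lin[OF lZ' lZ] W', symmetric]) simp_all
    also have "\<dots> = K n (M2L ?c ?k)" by (simp add: K_def M2L_def)
    finally show ?thesis .
  qed
  show ?thesis using s1 s2 s3 by (simp add: PdR_def)
qed

lemma d_equiv: "mapeq (dB*dH) (PdL n) (PdR n) \<longleftrightarrow> M2"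
proof
  assume P: "mapeq (dB*dH) (PdL n) (PdR n)"
  show M2 unfolding M2_def
  proof (intro ballI)
    fix c k :: "'k vect" assume c: "c \<in> vsp dB" and k: "k \<in> vsp dH"
    let ?b = "Z (n+1) c" and ?h = "Z' (-1) k"
    have "PdL n (tv dH ?b ?h) = PdR n (tv dH ?b ?h)" using mapeqD[OF P tv_vsp[OF vZ[OF c] vZ'[OF k]]] .
    then have "K n (M2R c k) = K n (M2L c k)"
      using d_pure_L[OF vZ[OF c] vZ'[OF k], of n] d_pure_R[OF vZ[OF c] vZ'[OF k], of n]
      by (simp add: Zadd c k)
    then show "M2L c k = M2R c k" using iv_left[OF blinK vM2L[OF c k]] iv_left[OF blinK vM2R[OF c k]] by metis
  qed
next
  assume M: M2
  show "mapeq (dB*dH) (PdL n) (PdR n)"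
  proof (rule tensor_ext[OF lPdL lPdR])
    fix b h :: "'k vect" assume b: "b \<in> vsp dB" and h: "h \<in> vsp dH"
    show "PdL n (tv dH b h) = PdR n (tv dH b h)"
      using M vZ[OF b] vaH[OF h] by (simp add: d_pure_L d_pure_R b h M2_def)
  qed
qed

end

lemma divmod_eq: "(r::nat) < n \<Longrightarrow> (X*n + r) div n = X \<and> (X*n + r) mod n = r"
proof -
  assume r: "r < n"
  then have "n \<noteq> 0" by auto
  then show ?thesis using r by (simp add: add.commute)
qed

lemma sw_tv:
  fixes x1 x2 x3 x4 :: "'k::field vect"
  assumes x1: "x1 \<in> vsp d1" and x2: "x2 \<in> vsp d2" and x3: "x3 \<in> vsp d3" and x4: "x4 \<in> vsp d4"
  shows "sw d1 d2 d3 d4 (tv (d3*d4) (tv d2 x1 x2) (tv d4 x3 x4)) = tv (d2*d4) (tv d3 x1 x3) (tv d4 x2 x4)"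
proof
  fix p
  have R: "tv (d2*d4) (tv d3 x1 x3) (tv d4 x2 x4) \<in> vsp (d1*d3*(d2*d4))"
    by (intro tv_vsp x1 x2 x3 x4)
  show "sw d1 d2 d3 d4 (tv (d3*d4) (tv d2 x1 x2) (tv d4 x3 x4)) p = tv (d2*d4) (tv d3 x1 x3) (tv d4 x2 x4) p"
  proof (cases "p < d1*d3*(d2*d4)")
    case False
    then show ?thesis using vspD[OF R] by (simp add: sw_def)
  next
    case True
    then have "0 < d1*d3*(d2*d4)" by linarith
    then have pos: "0 < d2" "0 < d4" "0 < d3" by auto
    define A where "A = p div (d2*d4) div d3"
    define Bb where "Bb = p mod (d2*d4) div d4"
    define C where "C = p div (d2*d4) mod d3"
    define D where "D = p mod (d2*d4) mod d4"
    have Bb: "Bb < d2" unfolding Bb_def using pos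
      by (metis less_mult_imp_div_less mod_less_divisor mult_pos_pos)
    have D: "D < d4" unfolding D_def using pos by simp
    have C: "C < d3" unfolding C_def using pos by simp
    have CD: "C*d4 + D < d3*d4"
    proof -
      have "C*d4 + D < C*d4 + d4" using D by simp
      also have "\<dots> = (C+1)*d4" by simp
      also have "\<dots> \<le> d3*d4" using C by (intro mult_right_mono) auto
      finally show ?thesis .
    qed
    define q where "q = (A*d2 + Bb)*(d3*d4) + (C*d4 + D)"
    have q1: "q div (d3*d4) = A*d2 + Bb" unfolding q_def using divmod_eq[OF CD] by blast
    have q2: "q mod (d3*d4) = C*d4 + D" unfolding q_def using divmod_eq[OF CD] by blast
    have q3: "(A*d2 + Bb) div d2 = A" "(A*d2 + Bb) mod d2 = Bb" using Bb by simp_all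
    have q4: "(C*d4 + D) div d4 = C" "(C*d4 + D) mod d4 = D" using D by simp_all
    have "sw d1 d2 d3 d4 (tv (d3*d4) (tv d2 x1 x2) (tv d4 x3 x4)) p = tv (d3*d4) (tv d2 x1 x2) (tv d4 x3 x4) q"
      using True unfolding sw_def q_def A_def Bb_def C_def D_def by simp
    also have "\<dots> = x1 A * x2 Bb * (x3 C * x4 D)"
      unfolding tv_def q1 q2 q3 q4 ..
    also have "\<dots> = tv (d2*d4) (tv d3 x1 x3) (tv d4 x2 x4) p"
      unfolding tv_def A_def Bb_def C_def D_def by (simp add: ac_simps)
    finally show ?thesis .
  qed
qed

lemma tensor_ext33:
  fixes F G :: "'k::field lmap"
  assumes F: "lin (a1*a2*a3*(b1*b2*b3)) e F" and G: "lin (a1*a2*a3*(b1*b2*b3)) e' G"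
    and eq: "\<And>x1 x2 x3 y1 y2 y3 :: 'k::field vect. x1 \<in> vsp a1 \<Longrightarrow> x2 \<in> vsp a2 \<Longrightarrow> x3 \<in> vsp a3 \<Longrightarrow>
       y1 \<in> vsp b1 \<Longrightarrow> y2 \<in> vsp b2 \<Longrightarrow> y3 \<in> vsp b3 \<Longrightarrow>
       F (tv (b1*b2*b3) (tv a3 (tv a2 x1 x2) x3) (tv b3 (tv b2 y1 y2) y3)) = G (tv (b1*b2*b3) (tv a3 (tv a2 x1 x2) x3) (tv b3 (tv b2 y1 y2) y3))"
  shows "mapeq (a1*a2*a3*(b1*b2*b3)) F G"
proof (rule tensor_ext[OF F G])
  fix x y :: "'k vect" assume x: "x \<in> vsp (a1*a2*a3)" and y: "y \<in> vsp (b1*b2*b3)"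
  have "mapeq (a1*a2*a3) (F \<circ> (\<lambda>x. tv (b1*b2*b3) x y)) (G \<circ> (\<lambda>x. tv (b1*b2*b3) x y))"
  proof (rule tensor_ext3[OF lin_comp[OF lin_tvL[OF y] F] lin_comp[OF lin_tvL[OF y] G]])
    fix x1 x2 x3 :: "'k vect" assume x1: "x1 \<in> vsp a1" and x2: "x2 \<in> vsp a2" and x3: "x3 \<in> vsp a3"
    have xx: "tv a3 (tv a2 x1 x2) x3 \<in> vsp (a1*a2*a3)" by (intro tv_vsp x1 x2 x3)
    have "mapeq (b1*b2*b3) (F \<circ> (\<lambda>y. tv (b1*b2*b3) (tv a3 (tv a2 x1 x2) x3) y)) (G \<circ> (\<lambda>y. tv (b1*b2*b3) (tv a3 (tv a2 x1 x2) x3) y))"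
      by (rule tensor_ext3[OF lin_comp[OF lin_tvR[OF xx] F] lin_comp[OF lin_tvR[OF xx] G]]) (simp add: eq x1 x2 x3)
    then show "(F \<circ> (\<lambda>x. tv (b1*b2*b3) x y)) (tv a3 (tv a2 x1 x2) x3) = (G \<circ> (\<lambda>x. tv (b1*b2*b3) x y)) (tv a3 (tv a2 x1 x2) x3)"
      using y by (simp add: mapeq_def)
  qed
  then show "F (tv (b1*b2*b3) x y) = G (tv (b1*b2*b3) x y)" using x by (simp add: mapeq_def)
qed

lemma bilin_ext:
  fixes F G :: "'k::field vect \<Rightarrow> 'k::field vect \<Rightarrow> 'k::field vect"
  assumes FL: "\<And>V. V \<in> vsp (c1*c2) \<Longrightarrow> lin (a1*a2) e (\<lambda>U. F U V)" and FR: "\<And>U. U \<in> vsp (a1*a2) \<Longrightarrow> lin (c1*c2) e (F U)"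
    and GL: "\<And>V. V \<in> vsp (c1*c2) \<Longrightarrow> lin (a1*a2) e' (\<lambda>U. G U V)" and GR: "\<And>U. U \<in> vsp (a1*a2) \<Longrightarrow> lin (c1*c2) e' (G U)"
    and eq: "\<And>u1 u2 v1 v2. u1 \<in> vsp a1 \<Longrightarrow> u2 \<in> vsp a2 \<Longrightarrow> v1 \<in> vsp c1 \<Longrightarrow> v2 \<in> vsp c2 \<Longrightarrow>
       F (tv a2 u1 u2) (tv c2 v1 v2) = G (tv a2 u1 u2) (tv c2 v1 v2)"
    and U: "U \<in> vsp (a1*a2)" and V: "V \<in> vsp (c1*c2)"
  shows "F U V = G U V"
proof -
  have "mapeq (c1*c2) (F U) (G U)"
  proof (rule tensor_ext[OF FR[OF U] GR[OF U]])
    fix v1 v2 :: "'k vect" assume v1: "v1 \<in> vsp c1" and v2: "v2 \<in> vsp c2"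
    have vv: "tv c2 v1 v2 \<in> vsp (c1*c2)" using tv_vsp[OF v1 v2] .
    have "mapeq (a1*a2) (\<lambda>U. F U (tv c2 v1 v2)) (\<lambda>U. G U (tv c2 v1 v2))"
      by (rule tensor_ext[OF FL[OF vv] GL[OF vv]]) (simp add: eq v1 v2)
    then show "F U (tv c2 v1 v2) = G U (tv c2 v1 v2)" using U by (simp add: mapeq_def)
  qed
  then show ?thesis using V by (simp add: mapeq_def)
qed

lemma lin_expand2:
  assumes m: "lin (d*d) e (f::'k::field lmap)" and x: "x \<in> vsp d" and y: "y \<in> vsp d"
  shows "f (tv d x y) p = (\<Sum>a<d. \<Sum>b<d. x a * y b * f (tv d (ebasis a) (ebasis b)) p)"
proof -
  have "f (tv d x y) p = (\<Sum>q<d*d. tv d x y q * f (ebasis q) p)"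
    using lin_expand[OF m tv_vsp[OF x y]] by simp
  also have "\<dots> = (\<Sum>a<d. \<Sum>b<d. tv d x y (a*d+b) * f (ebasis (a*d+b)) p)" by (rule sum_split_mult)
  also have "\<dots> = (\<Sum>a<d. \<Sum>b<d. x a * y b * f (tv d (ebasis a) (ebasis b)) p)"
  proof (intro sum.cong refl)
    fix a b assume "b \<in> {..<d}"
    then have b: "b < d" by simp
    have "tv d x y (a*d+b) = x a * y b" using b by (simp add: tv_def)
    then show "tv d x y (a*d+b) * f (ebasis (a*d+b)) p = x a * y b * f (tv d (ebasis a) (ebasis b)) p"
      by (simp add: tv_ebasis[OF b])
  qed
  finally show ?thesis .
qed

lemma tprod_tv:
  fixes m1 m2 :: "'k::field lmap"
  assumes m1: "lin (d1*d1) e1 m1" and m2: "lin (d2*d2) e2 m2"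
    and x1: "x1 \<in> vsp d1" and x2: "x2 \<in> vsp d2" and y1: "y1 \<in> vsp d1" and y2: "y2 \<in> vsp d2"
  shows "tprod d1 m1 d2 m2 (tv d2 x1 x2) (tv d2 y1 y2) = tv d2 (m1 (tv d1 x1 y1)) (m2 (tv d2 x2 y2))"
proof
  fix p
  let ?P = "p div d2" and ?Q = "p mod d2"
  let ?f = "\<lambda>a1 b1. m1 (tv d1 (ebasis a1) (ebasis b1)) ?P"
  let ?g = "\<lambda>a2 b2. m2 (tv d2 (ebasis a2) (ebasis b2)) ?Q"
  have "tprod d1 m1 d2 m2 (tv d2 x1 x2) (tv d2 y1 y2) p
      = (\<Sum>a1<d1. \<Sum>a2<d2. \<Sum>b1<d1. \<Sum>b2<d2. (x1 a1 * y1 b1 * ?f a1 b1) * (x2 a2 * y2 b2 * ?g a2 b2))"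
    unfolding tprod_def sum_split_mult
    by (intro sum.cong refl) (simp add: tv_def ac_simps)
  also have "\<dots> = (\<Sum>a1<d1. \<Sum>b1<d1. x1 a1 * y1 b1 * ?f a1 b1) * (\<Sum>a2<d2. \<Sum>b2<d2. x2 a2 * y2 b2 * ?g a2 b2)"
    by (simp only: sum_product)
  also have "\<dots> = m1 (tv d1 x1 y1) ?P * m2 (tv d2 x2 y2) ?Q"
    by (simp add: lin_expand2[OF m1 x1 y1] lin_expand2[OF m2 x2 y2])
  finally show "tprod d1 m1 d2 m2 (tv d2 x1 x2) (tv d2 y1 y2) p = tv d2 (m1 (tv d1 x1 y1)) (m2 (tv d2 x2 y2)) p"
    by (simp add: tv_def)
qed

lemma tprod_vsp:
  fixes m1 m2 :: "'k::field lmap"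
  assumes m1: "lin (d1*d1) d1 m1" and m2: "lin (d2*d2) d2 m2"
  shows "tprod d1 m1 d2 m2 x y \<in> vsp (d1*d2)"
  unfolding tprod_def
proof (intro vspI sum.neutral ballI)
  fix p q r assume p: "d1*d2 \<le> p" and q: "q \<in> {..<d1*d2}" and r: "r \<in> {..<d1*d2}"
  have "q div d2 < d1" "r div d2 < d1" "q mod d2 < d2" "r mod d2 < d2" using q r divmod_bound by auto
  then have "tv d2 (m1 (tv d1 (ebasis (q div d2)) (ebasis (r div d2)))) (m2 (tv d2 (ebasis (q mod d2)) (ebasis (r mod d2)))) \<in> vsp (d1*d2)"
    by (intro tv_vsp linD1[OF m1] linD1[OF m2] tv_vsp ebasis_vsp)
  then show "x q * y r * tv d2 (m1 (tv d1 (ebasis (q div d2)) (ebasis (r div d2)))) (m2 (tv d2 (ebasis (q mod d2)) (ebasis (r mod d2)))) p = 0"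
    using p by (simp add: vsp_def)
qed

lemma tprod_addL: "tprod d1 m1 d2 m2 (\<lambda>p. (u::'k::field vect) p + v p) y = (\<lambda>p. tprod d1 m1 d2 m2 u y p + tprod d1 m1 d2 m2 v y p)"
  by (simp add: tprod_def distrib_right sum.distrib fun_eq_iff)
lemma tprod_addR: "tprod d1 m1 d2 m2 y (\<lambda>p. (u::'k::field vect) p + v p) = (\<lambda>p. tprod d1 m1 d2 m2 y u p + tprod d1 m1 d2 m2 y v p)"
  by (simp add: tprod_def distrib_right distrib_left sum.distrib fun_eq_iff)
lemma tprod_smultL: "tprod d1 m1 d2 m2 (\<lambda>p. c * (u::'k::field vect) p) y = (\<lambda>p. c * tprod d1 m1 d2 m2 u y p)"
  by (simp add: tprod_def sum_distrib_left mult.assoc fun_eq_iff)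
lemma tprod_smultR: "tprod d1 m1 d2 m2 y (\<lambda>p. c * (u::'k::field vect) p) = (\<lambda>p. c * tprod d1 m1 d2 m2 y u p)"
  by (simp add: tprod_def sum_distrib_left mult.left_commute mult.assoc fun_eq_iff)

lemma tprod_linL:
  fixes m1 m2 :: "'k::field lmap"
  assumes m1: "lin (d1*d1) d1 m1" and m2: "lin (d2*d2) d2 m2"
  shows "lin (d1*d2) (d1*d2) (\<lambda>x. tprod d1 m1 d2 m2 x y)"
  unfolding lin_def using tprod_vsp[OF m1 m2] by (simp add: tprod_addL tprod_smultL)

lemma tprod_linR:
  fixes m1 m2 :: "'k::field lmap"
  assumes m1: "lin (d1*d1) d1 m1" and m2: "lin (d2*d2) d2 m2"
  shows "lin (d1*d2) (d1*d2) (tprod d1 m1 d2 m2 x)"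
  unfolding lin_def using tprod_vsp[OF m1 m2] by (simp add: tprod_addR tprod_smultR)

lemma lin_sw: "lin (d1*d2*(d3*d4)) (d1*d3*(d2*d4)) (sw d1 d2 d3 d4 :: 'k::field lmap)"
  unfolding lin_def by (auto simp: sw_def vsp_def fun_eq_iff)

lemma lin_MA:
  assumes A: "hom_bialgebra A"
  shows "lin (hdim A * hdim A) (hdim A) (\<lambda>c. hmul A (tmap (hdim A) (hdim A) (hdim A) (zpow (hdim A) (halpha A) i) (zpow (hdim A) (halpha A) j) c))"
  using lin_comp[OF tmap_lin[OF blin_lin[OF zpow_blin[OF hb_basic(5)[OF A]]] blin_lin[OF zpow_blin[OF hb_basic(5)[OF A]]]] hb_basic(1)[OF A]]
  by (simp add: comp_def)

lemma lin_mon2: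
  assumes A: "hom_bialgebra A"
  shows "lin (fst X * hdim A * (fst Y * hdim A)) (fst X * fst Y * hdim A) (mon2 i j A X Y)"
  unfolding mon2_def by (rule lin_comp[OF lin_sw tmap_lin[OF lin_id lin_MA[OF A]]])

lemma mon2_tv:
  assumes A: "hom_bialgebra A" and x: "x \<in> vsp (fst X)" and y: "y \<in> vsp (fst Y)"
    and a: "a \<in> vsp (hdim A)" and b: "b \<in> vsp (hdim A)"
  shows "mon2 i j A X Y (tv (fst Y * hdim A) (tv (hdim A) x a) (tv (hdim A) y b))
     = tv (hdim A) (tv (fst Y) x y) (hmul A (tv (hdim A) (zpow (hdim A) (halpha A) i a) (zpow (hdim A) (halpha A) j b)))"
proof -
  note z = blin_lin[OF zpow_blin[OF hb_basic(5)[OF A]]]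
  show ?thesis
    unfolding mon2_def comp_def
    by (simp add: sw_tv x y a b tmap_tv[OF lin_id lin_MA[OF A]] tv_vsp tmap_tv[OF z z a b])
qed

context PH begin

definition "TT i j U V = tprod dH (hmul H) dB (hmul B) (tmap dH dB dB (Z' i) (Z i) U) (tmap dH dB dB (Z' j) (Z j) V)"

lemma lTT_L: "V \<in> vsp (dH*dB) \<Longrightarrow> lin (dH*dB) (dH*dB) (\<lambda>U. TT i j U V)"
  unfolding TT_def using lin_comp[OF tmap_lin[OF lZ' lZ] tprod_linL[OF bH(1) bB(1)]] by (simp add: comp_def)
lemma lTT_R: "U \<in> vsp (dH*dB) \<Longrightarrow> lin (dH*dB) (dH*dB) (TT i j U)"
  unfolding TT_def using lin_comp[OF tmap_lin[OF lZ' lZ] tprod_linR[OF bH(1) bB(1)]] by (simp add: comp_def)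

lemma TT_tv:
  assumes "u1 \<in> vsp dH" "u2 \<in> vsp dB" "v1 \<in> vsp dH" "v2 \<in> vsp dB"
  shows "TT i j (tv dB u1 u2) (tv dB v1 v2) = tv dB (hmul H (tv dH (Z' i u1) (Z' j v1))) (hmul B (tv dB (Z i u2) (Z j v2)))"
  unfolding TT_def using assms
  by (simp add: tmap_tv[OF lZ' lZ] tprod_tv[OF bH(1) bB(1)] vZ vZ')

lemma g_L:
  assumes M: "obj M" and N: "obj N" and m1: "m1 \<in> vsp (fst M)" and n1: "n1 \<in> vsp (fst N)"
    and b: "b \<in> vsp dB" and c: "c \<in> vsp dB" and h: "h \<in> vsp dH" and g: "g \<in> vsp dH"
  shows "(ddphi n B H phi (otens M N) \<circ> fmor H (fst (otens (fobj B M) (fobj B N))) (mon2 i j B M N) \<circ> mon2 i j H (fobj B M) (fobj B N))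
     (tv (fst N*dB*dH) (tv dH (tv dB m1 b) h) (tv dH (tv dB n1 c) g))
   = tv (dH*dB) (tv (fst N) m1 n1) (psi0 n (tv dH (hmul B (tv dB (Z i b) (Z j c))) (hmul H (tv dH (Z' i h) (Z' j g)))))"
proof -
  have X: "tv dB m1 b \<in> vsp (fst (fobj B M))" using tv_vsp[OF m1 b] by (simp add: fobj_def)
  have Y: "tv dB n1 c \<in> vsp (fst (fobj B N))" using tv_vsp[OF n1 c] by (simp add: fobj_def)
  have s1: "mon2 i j H (fobj B M) (fobj B N) (tv (fst N*dB*dH) (tv dH (tv dB m1 b) h) (tv dH (tv dB n1 c) g))
     = tv dH (tv (fst N*dB) (tv dB m1 b) (tv dB n1 c)) (hmul H (tv dH (Z' i h) (Z' j g)))"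
    using mon2_tv[OF hH X Y h g, of i j] by (simp add: fobj_def)
  have XY: "tv (fst N*dB) (tv dB m1 b) (tv dB n1 c) \<in> vsp (fst M*dB*(fst N*dB))" using tv_vsp[OF tv_vsp[OF m1 b] tv_vsp[OF n1 c]] .
  have hg: "hmul H (tv dH (Z' i h) (Z' j g)) \<in> vsp dH" using linD1[OF bH(1) tv_vsp[OF vZ'[OF h] vZ'[OF g]]] .
  have bc: "hmul B (tv dB (Z i b) (Z j c)) \<in> vsp dB" using linD1[OF bB(1) tv_vsp[OF vZ[OF b] vZ[OF c]]] .
  have s2: "fmor H (fst (otens (fobj B M) (fobj B N))) (mon2 i j B M N) (tv dH (tv (fst N*dB) (tv dB m1 b) (tv dB n1 c)) (hmul H (tv dH (Z' i h) (Z' j g))))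
     = tv dH (tv dB (tv (fst N) m1 n1) (hmul B (tv dB (Z i b) (Z j c)))) (hmul H (tv dH (Z' i h) (Z' j g)))"
    unfolding fmor_def
    using tmap_tv[OF lin_mon2[OF hB, of M N i j] lin_id XY hg] mon2_tv[OF hB m1 n1 b c, of i j]
    by (simp add: otens_def fobj_def)
  have mn: "tv (fst N) m1 n1 \<in> vsp (fst (otens M N))" using tv_vsp[OF m1 n1] by (simp add: otens_def)
  have s3: "ddphi n B H phi (otens M N) (tv dH (tv dB (tv (fst N) m1 n1) (hmul B (tv dB (Z i b) (Z j c)))) (hmul H (tv dH (Z' i h) (Z' j g))))
     = tv (dH*dB) (tv (fst N) m1 n1) (psi0 n (tv dH (hmul B (tv dB (Z i b) (Z j c))) (hmul H (tv dH (Z' i h) (Z' j g)))))"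
    using ddphi_tv[OF mn tv_vsp[OF bc hg], of n] tv_assoc[OF bc hg, of "tv (fst N) m1 n1"] by simp
  show ?thesis using s1 s2 s3 by simp
qed


lemma g_Op_pure:
  assumes M: "obj M" and N: "obj N" and m1: "m1 \<in> vsp (fst M)" and n1: "n1 \<in> vsp (fst N)"
    and u1: "u1 \<in> vsp dH" and u2: "u2 \<in> vsp dB" and v1: "v1 \<in> vsp dH" and v2: "v2 \<in> vsp dB"
  shows "(fmor B (fst (otens (fobj H M) (fobj H N))) (mon2 i j H M N) \<circ> mon2 i j B (fobj H M) (fobj H N))
      (tv (fst N*dH*dB) (tv (dH*dB) m1 (tv dB u1 u2)) (tv (dH*dB) n1 (tv dB v1 v2)))
    = tv (dH*dB) (tv (fst N) m1 n1) (TT i j (tv dB u1 u2) (tv dB v1 v2))"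
proof -
  have X: "tv dH m1 u1 \<in> vsp (fst (fobj H M))" using tv_vsp[OF m1 u1] by (simp add: fobj_def)
  have Y: "tv dH n1 v1 \<in> vsp (fst (fobj H N))" using tv_vsp[OF n1 v1] by (simp add: fobj_def)
  have e1: "tv (dH*dB) m1 (tv dB u1 u2) = tv dB (tv dH m1 u1) u2" using tv_assoc[OF u1 u2] by simp
  have e2: "tv (dH*dB) n1 (tv dB v1 v2) = tv dB (tv dH n1 v1) v2" using tv_assoc[OF v1 v2] by simp
  have s1: "mon2 i j B (fobj H M) (fobj H N) (tv (fst N*dH*dB) (tv dB (tv dH m1 u1) u2) (tv dB (tv dH n1 v1) v2))
     = tv dB (tv (fst N*dH) (tv dH m1 u1) (tv dH n1 v1)) (hmul B (tv dB (Z i u2) (Z j v2)))"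
    using mon2_tv[OF hB X Y u2 v2, of i j] by (simp add: fobj_def)
  have XY: "tv (fst N*dH) (tv dH m1 u1) (tv dH n1 v1) \<in> vsp (fst M*dH*(fst N*dH))" using tv_vsp[OF tv_vsp[OF m1 u1] tv_vsp[OF n1 v1]] .
  have bc: "hmul B (tv dB (Z i u2) (Z j v2)) \<in> vsp dB" using linD1[OF bB(1) tv_vsp[OF vZ[OF u2] vZ[OF v2]]] .
  have hg: "hmul H (tv dH (Z' i u1) (Z' j v1)) \<in> vsp dH" using linD1[OF bH(1) tv_vsp[OF vZ'[OF u1] vZ'[OF v1]]] .
  have s2: "fmor B (fst (otens (fobj H M) (fobj H N))) (mon2 i j H M N) (tv dB (tv (fst N*dH) (tv dH m1 u1) (tv dH n1 v1)) (hmul B (tv dB (Z i u2) (Z j v2))))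
     = tv dB (tv dH (tv (fst N) m1 n1) (hmul H (tv dH (Z' i u1) (Z' j v1)))) (hmul B (tv dB (Z i u2) (Z j v2)))"
    unfolding fmor_def
    using tmap_tv[OF lin_mon2[OF hH, of M N i j] lin_id XY bc] mon2_tv[OF hH m1 n1 u1 v1, of i j]
    by (simp add: otens_def fobj_def)
  show ?thesis
    using s1 s2 e1 e2 TT_tv[OF u1 u2 v1 v2, of i j] tv_assoc[OF hg bc, of "tv (fst N) m1 n1"] by simp
qed

lemma lin_Op:
  assumes M: "obj M" and N: "obj N"
  shows "lin (fst M*dH*dB*(fst N*dH*dB)) (fst M*fst N*dH*dB)
     (fmor B (fst (otens (fobj H M) (fobj H N))) (mon2 i j H M N) \<circ> mon2 i j B (fobj H M) (fobj H N))"
proof -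
  have l1: "lin (fst M*dH*dB*(fst N*dH*dB)) (fst M*dH*(fst N*dH)*dB) (mon2 i j B (fobj H M) (fobj H N))"
    using lin_mon2[OF hB, of "fobj H M" "fobj H N" i j] by (simp add: fobj_def)
  have l2: "lin (fst M*dH*(fst N*dH)*dB) (fst M*fst N*dH*dB) (fmor B (fst (otens (fobj H M) (fobj H N))) (mon2 i j H M N))"
    unfolding fmor_def using tmap_lin[OF lin_mon2[OF hH, of M N i j] lin_id[of dB]] by (simp add: otens_def fobj_def)
  show ?thesis by (rule lin_comp[OF l1 l2])
qed

lemma g_Op:
  assumes M: "obj M" and N: "obj N" and m1: "m1 \<in> vsp (fst M)" and n1: "n1 \<in> vsp (fst N)"
    and U: "U \<in> vsp (dH*dB)" and V: "V \<in> vsp (dH*dB)"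
  shows "(fmor B (fst (otens (fobj H M) (fobj H N))) (mon2 i j H M N) \<circ> mon2 i j B (fobj H M) (fobj H N))
      (tv (fst N*dH*dB) (tv (dH*dB) m1 U) (tv (dH*dB) n1 V))
    = tv (dH*dB) (tv (fst N) m1 n1) (TT i j U V)"
proof -
  let ?Op = "fmor B (fst (otens (fobj H M) (fobj H N))) (mon2 i j H M N) \<circ> mon2 i j B (fobj H M) (fobj H N)"
  note lO = lin_Op[OF M N, of i j]
  have FL: "lin (dH*dB) (fst M*fst N*dH*dB) (\<lambda>U. ?Op (tv (fst N*dH*dB) (tv (dH*dB) m1 U) (tv (dH*dB) n1 V)))"
    if V: "V \<in> vsp (dH*dB)" for V
  proof -
    have Y: "tv (dH*dB) n1 V \<in> vsp (fst N*dH*dB)" using tv_vsp[OF n1 V] by (simp add: mult.assoc)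
    show ?thesis
      using lin_comp'[OF lin_comp'[OF lin_tvR[OF m1] lin_tvL[OF Y]] lO] by (simp add: comp_def ac_simps)
  qed
  have FR: "lin (dH*dB) (fst M*fst N*dH*dB) (\<lambda>V. ?Op (tv (fst N*dH*dB) (tv (dH*dB) m1 U) (tv (dH*dB) n1 V)))"
    if U: "U \<in> vsp (dH*dB)" for U
  proof -
    have X: "tv (dH*dB) m1 U \<in> vsp (fst M*dH*dB)" using tv_vsp[OF m1 U] by (simp add: mult.assoc)
    have "lin (dH*dB) (fst N*dH*dB) (\<lambda>V. tv (dH*dB) n1 V)" using lin_tvR[OF n1] by (simp add: mult.assoc)
    then show ?thesis
      using lin_comp'[OF lin_comp'[OF _ lin_tvR[OF X]] lO] by (simp add: comp_def ac_simps)
  qed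
  have mn: "tv (fst N) m1 n1 \<in> vsp (fst M * fst N)" using tv_vsp[OF m1 n1] .
  have GL: "lin (dH*dB) (fst M*fst N*(dH*dB)) (\<lambda>U. tv (dH*dB) (tv (fst N) m1 n1) (TT i j U V))"
    if V: "V \<in> vsp (dH*dB)" for V
    using lin_comp[OF lTT_L[OF V] lin_tvR[OF mn]] by (simp add: comp_def)
  have GR: "lin (dH*dB) (fst M*fst N*(dH*dB)) (\<lambda>V. tv (dH*dB) (tv (fst N) m1 n1) (TT i j U V))"
    if U: "U \<in> vsp (dH*dB)" for U
    using lin_comp[OF lTT_R[OF U] lin_tvR[OF mn]] by (simp add: comp_def)
  show ?thesis
    apply (rule bilin_ext[where F="\<lambda>U V. ?Op (tv (fst N*dH*dB) (tv (dH*dB) m1 U) (tv (dH*dB) n1 V))"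
          and G="\<lambda>U V. tv (dH*dB) (tv (fst N) m1 n1) (TT i j U V)", OF FL FR GL GR _ U V])
    apply assumption+
    apply (rule g_Op_pure[OF M N m1 n1])
    apply assumption+
    done
qed

lemma g_R:
  assumes M: "obj M" and N: "obj N" and m1: "m1 \<in> vsp (fst M)" and n1: "n1 \<in> vsp (fst N)"
    and b: "b \<in> vsp dB" and c: "c \<in> vsp dB" and h: "h \<in> vsp dH" and g: "g \<in> vsp dH"
  shows "(fmor B (fst (otens (fobj H M) (fobj H N))) (mon2 i j H M N) \<circ> mon2 i j B (fobj H M) (fobj H N)
           \<circ> tmap (fst (fobj H (fobj B M))) (fst (fobj H (fobj B N))) (fst (fobj B (fobj H N))) (ddphi n B H phi M) (ddphi n B H phi N))
     (tv (fst N*dB*dH) (tv dH (tv dB m1 b) h) (tv dH (tv dB n1 c) g))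
   = tv (dH*dB) (tv (fst N) m1 n1) (TT i j (psi0 n (tv dH b h)) (psi0 n (tv dH c g)))"
proof -
  have lM: "lin (fst M*dB*dH) (fst M*dH*dB) (ddphi n B H phi M)" using lddphi[of M n] by (simp add: mult.assoc)
  have lN: "lin (fst N*dB*dH) (fst N*dH*dB) (ddphi n B H phi N)" using lddphi[of N n] by (simp add: mult.assoc)
  have x: "tv dH (tv dB m1 b) h \<in> vsp (fst M*dB*dH)" by (intro tv_vsp m1 b h)
  have y: "tv dH (tv dB n1 c) g \<in> vsp (fst N*dB*dH)" by (intro tv_vsp n1 c g)
  have pM: "ddphi n B H phi M (tv dH (tv dB m1 b) h) = tv (dH*dB) m1 (psi0 n (tv dH b h))"
    using tv_assoc[OF b h, of m1] ddphi_tv[OF m1 tv_vsp[OF b h], of n] by simp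
  have pN: "ddphi n B H phi N (tv dH (tv dB n1 c) g) = tv (dH*dB) n1 (psi0 n (tv dH c g))"
    using tv_assoc[OF c g, of n1] ddphi_tv[OF n1 tv_vsp[OF c g], of n] by simp
  have "tmap (fst (fobj H (fobj B M))) (fst (fobj H (fobj B N))) (fst (fobj B (fobj H N))) (ddphi n B H phi M) (ddphi n B H phi N)
      (tv (fst N*dB*dH) (tv dH (tv dB m1 b) h) (tv dH (tv dB n1 c) g))
      = tv (fst N*dH*dB) (tv (dH*dB) m1 (psi0 n (tv dH b h))) (tv (dH*dB) n1 (psi0 n (tv dH c g)))"
    using tmap_tv[OF lM lN x y] pM pN by (simp add: fobj_def)
  then show ?thesis
    using g_Op[OF M N m1 n1 vpsi0[OF tv_vsp[OF b h]] vpsi0[OF tv_vsp[OF c g]], of i j] by simp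
qed

end

context PH begin

definition "Gin n i j \<longleftrightarrow> (\<forall>b\<in>vsp dB. \<forall>c\<in>vsp dB. \<forall>h\<in>vsp dH. \<forall>g\<in>vsp dH.
   psi0 n (tv dH (hmul B (tv dB (Z i b) (Z j c))) (hmul H (tv dH (Z' i h) (Z' j g))))
   = TT i j (psi0 n (tv dH b h)) (psi0 n (tv dH c g)))"

lemma lin_gL:
  assumes M: "obj M" and N: "obj N"
  shows "lin (fst M*dB*dH*(fst N*dB*dH)) (fst M*fst N*(dH*dB))
    (ddphi n B H phi (otens M N) \<circ> fmor H (fst (otens (fobj B M) (fobj B N))) (mon2 i j B M N) \<circ> mon2 i j H (fobj B M) (fobj B N))"
proof -
  have l1: "lin (fst M*dB*dH*(fst N*dB*dH)) (fst M*dB*(fst N*dB)*dH) (mon2 i j H (fobj B M) (fobj B N))"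
    using lin_mon2[OF hH, of "fobj B M" "fobj B N" i j] by (simp add: fobj_def)
  have l2: "lin (fst M*dB*(fst N*dB)*dH) (fst M*fst N*dB*dH) (fmor H (fst (otens (fobj B M) (fobj B N))) (mon2 i j B M N))"
    unfolding fmor_def using tmap_lin[OF lin_mon2[OF hB, of M N i j] lin_id[of dH]] by (simp add: otens_def fobj_def)
  have l3: "lin (fst M*fst N*(dB*dH)) (fst M*fst N*(dH*dB)) (ddphi n B H phi (otens M N))"
    using lddphi[of "otens M N" n] by (simp add: otens_def)
  show ?thesis by (rule lin_dim[OF lin_comp'[OF l1 lin_comp'[OF l2 l3]]]) (simp_all add: ac_simps)
qed

lemma lin_gR:
  assumes M: "obj M" and N: "obj N"
  shows "lin (fst M*dB*dH*(fst N*dB*dH)) (fst M*fst N*dH*dB)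
    (fmor B (fst (otens (fobj H M) (fobj H N))) (mon2 i j H M N) \<circ> mon2 i j B (fobj H M) (fobj H N)
           \<circ> tmap (fst (fobj H (fobj B M))) (fst (fobj H (fobj B N))) (fst (fobj B (fobj H N))) (ddphi n B H phi M) (ddphi n B H phi N))"
proof -
  have lM: "lin (fst M*dB*dH) (fst M*dH*dB) (ddphi n B H phi M)" using lddphi[of M n] by (simp add: mult.assoc)
  have lN: "lin (fst N*dB*dH) (fst N*dH*dB) (ddphi n B H phi N)" using lddphi[of N n] by (simp add: mult.assoc)
  have l0: "lin (fst M*dB*dH*(fst N*dB*dH)) (fst M*dH*dB*(fst N*dH*dB))
     (tmap (fst (fobj H (fobj B M))) (fst (fobj H (fobj B N))) (fst (fobj B (fobj H N))) (ddphi n B H phi M) (ddphi n B H phi N))"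
    using tmap_lin[OF lM lN] by (simp add: fobj_def)
  show ?thesis by (rule lin_comp[OF l0 lin_Op[OF M N]])
qed

lemma g_if:
  assumes M: "obj M" and N: "obj N" and G: "Gin n i j"
  shows "mapeq (fst (otens (fobj H (fobj B M)) (fobj H (fobj B N))))
            (ddphi n B H phi (otens M N) \<circ> fmor H (fst (otens (fobj B M) (fobj B N))) (mon2 i j B M N) \<circ> mon2 i j H (fobj B M) (fobj B N))
            (fmor B (fst (otens (fobj H M) (fobj H N))) (mon2 i j H M N) \<circ> mon2 i j B (fobj H M) (fobj H N)
           \<circ> tmap (fst (fobj H (fobj B M))) (fst (fobj H (fobj B N))) (fst (fobj B (fobj H N))) (ddphi n B H phi M) (ddphi n B H phi N))"
proof -
  have "mapeq (fst M*dB*dH*(fst N*dB*dH))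
            (ddphi n B H phi (otens M N) \<circ> fmor H (fst (otens (fobj B M) (fobj B N))) (mon2 i j B M N) \<circ> mon2 i j H (fobj B M) (fobj B N))
            (fmor B (fst (otens (fobj H M) (fobj H N))) (mon2 i j H M N) \<circ> mon2 i j B (fobj H M) (fobj H N)
           \<circ> tmap (fst (fobj H (fobj B M))) (fst (fobj H (fobj B N))) (fst (fobj B (fobj H N))) (ddphi n B H phi M) (ddphi n B H phi N))"
  proof (rule tensor_ext33[OF lin_gL[OF M N] lin_gR[OF M N]])
    fix m1 b h n1 c g :: "'k vect"
    assume m1: "m1 \<in> vsp (fst M)" and b: "b \<in> vsp dB" and h: "h \<in> vsp dH"
      and n1: "n1 \<in> vsp (fst N)" and c: "c \<in> vsp dB" and g: "g \<in> vsp dH"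
    show "(ddphi n B H phi (otens M N) \<circ> fmor H (fst (otens (fobj B M) (fobj B N))) (mon2 i j B M N) \<circ> mon2 i j H (fobj B M) (fobj B N))
            (tv (fst N*dB*dH) (tv dH (tv dB m1 b) h) (tv dH (tv dB n1 c) g)) =
          (fmor B (fst (otens (fobj H M) (fobj H N))) (mon2 i j H M N) \<circ> mon2 i j B (fobj H M) (fobj H N)
           \<circ> tmap (fst (fobj H (fobj B M))) (fst (fobj H (fobj B N))) (fst (fobj B (fobj H N))) (ddphi n B H phi M) (ddphi n B H phi N))
            (tv (fst N*dB*dH) (tv dH (tv dB m1 b) h) (tv dH (tv dB n1 c) g))"
      unfolding g_L[OF M N m1 n1 b c h g] g_R[OF M N m1 n1 b c h g]
      using G b c h g by (simp add: Gin_def)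
  qed
  then show ?thesis by (simp add: otens_def fobj_def)
qed

lemma g_only:
  assumes C: "mapeq (fst (otens (fobj H (fobj B unit_obj)) (fobj H (fobj B (unit_obj::'k::field object)))))
            (ddphi n B H phi (otens unit_obj unit_obj) \<circ> fmor H (fst (otens (fobj B unit_obj) (fobj B unit_obj))) (mon2 i j B unit_obj unit_obj) \<circ> mon2 i j H (fobj B unit_obj) (fobj B unit_obj))
            (fmor B (fst (otens (fobj H unit_obj) (fobj H unit_obj))) (mon2 i j H unit_obj unit_obj) \<circ> mon2 i j B (fobj H unit_obj) (fobj H unit_obj)
           \<circ> tmap (fst (fobj H (fobj B unit_obj))) (fst (fobj H (fobj B unit_obj))) (fst (fobj B (fobj H unit_obj))) (ddphi n B H phi unit_obj) (ddphi n B H phi (unit_obj::'k::field object)))"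
  shows "Gin n i j"
  unfolding Gin_def
proof (intro ballI)
  fix b c h g :: "'k vect" assume b: "b \<in> vsp dB" and c: "c \<in> vsp dB" and h: "h \<in> vsp dH" and g: "g \<in> vsp dH"
  have e0: "(ebasis 0 :: 'k vect) \<in> vsp (fst (unit_obj::'k object))" by simp
  have x: "tv (fst (unit_obj::'k object)*dB*dH) (tv dH (tv dB (ebasis 0) b) h) (tv dH (tv dB (ebasis 0) c) g)
      \<in> vsp (fst (otens (fobj H (fobj B unit_obj)) (fobj H (fobj B (unit_obj::'k object)))))"
    using tv_vsp[OF tv_vsp[OF tv_vsp[OF e0 b] h] tv_vsp[OF tv_vsp[OF e0 c] g]] by (simp add: otens_def fobj_def)
  have E: "tv (dH*dB) (tv (fst (unit_obj::'k object)) (ebasis 0) (ebasis 0)) X = X" if "X \<in> vsp (dH*dB)" for X :: "'k vect"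
    using tv_unitL[OF that] tv_unitR[of "ebasis 0 :: 'k vect"] by simp
  have bc: "tv dH (hmul B (tv dB (Z i b) (Z j c))) (hmul H (tv dH (Z' i h) (Z' j g))) \<in> vsp (dB*dH)"
    using tv_vsp[OF linD1[OF bB(1) tv_vsp[OF vZ[OF b] vZ[OF c]]] linD1[OF bH(1) tv_vsp[OF vZ'[OF h] vZ'[OF g]]]] .
  have TTv: "TT i j (psi0 n (tv dH b h)) (psi0 n (tv dH c g)) \<in> vsp (dH*dB)"
    using linD1[OF lTT_L[OF vpsi0[OF tv_vsp[OF c g]]] vpsi0[OF tv_vsp[OF b h]]] .
  show "psi0 n (tv dH (hmul B (tv dB (Z i b) (Z j c))) (hmul H (tv dH (Z' i h) (Z' j g)))) = TT i j (psi0 n (tv dH b h)) (psi0 n (tv dH c g))"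
    using mapeqD[OF C x] g_L[OF obj_unit obj_unit e0 e0 b c h g, of n i j] g_R[OF obj_unit obj_unit e0 e0 b c h g, of i j n]
      E[OF vpsi0[OF bc]] E[OF TTv] by simp
qed

end

context PH begin

lemma lmon0: "hom_bialgebra A \<Longrightarrow> lin 1 (1 * hdim A) (mon0 A)"
proof -
  assume A: "hom_bialgebra A"
  have "mon0 A = (\<lambda>u. tv (hdim A) u (hone A))" by (simp add: mon0_def fun_eq_iff)
  then show ?thesis using lin_tvL[OF hb_basic(2)[OF A], of 1] by simp
qed

lemma mon0_e0: "hom_bialgebra A \<Longrightarrow> mon0 A (ebasis 0) = hone A"
  by (simp add: mon0_def tv_unitL hb_basic(2))

lemma h_L: "(ddphi n B H phi unit_obj \<circ> fmor H (fst (unit_obj::'k::field object)) (mon0 B) \<circ> mon0 H) (ebasis 0) = psi0 n (tv dH (hone B) (hone H))"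
proof -
  have "fmor H 1 (mon0 B) (hone H) = fmor H 1 (mon0 B) (tv dH (ebasis 0) (hone H))" using tv_unitL[OF bH(2)] by simp
  also have "\<dots> = tv dH (mon0 B (ebasis 0)) (id (hone H))"
    unfolding fmor_def by (rule tmap_tv[OF lmon0[OF hB] lin_id _ bH(2)]) simp
  also have "\<dots> = tv dH (hone B) (hone H)" by (simp add: mon0_e0[OF hB])
  finally have 1: "fmor H 1 (mon0 B) (hone H) = tv dH (hone B) (hone H)" .
  have 2: "ddphi n B H phi unit_obj (tv dH (hone B) (hone H)) = psi0 n (tv dH (hone B) (hone H))"
    using mapeqD[OF tmap_unitL[OF lpsi0] tv_vsp[OF bB(2) bH(2)]] by (simp add: ddphi_eq)
  show ?thesis using 1 2 by (simp add: mon0_e0[OF hH])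
qed

lemma h_R: "(fmor B (fst (unit_obj::'k::field object)) (mon0 H) \<circ> mon0 B) (ebasis 0) = tv dB (hone H) (hone B)"
proof -
  have "fmor B 1 (mon0 H) (hone B) = fmor B 1 (mon0 H) (tv dB (ebasis 0) (hone B))" using tv_unitL[OF bB(2)] by simp
  also have "\<dots> = tv dB (mon0 H (ebasis 0)) (id (hone B))"
    unfolding fmor_def by (rule tmap_tv[OF lmon0[OF hH] lin_id _ bB(2)]) simp
  also have "\<dots> = tv dB (hone H) (hone B)" by (simp add: mon0_e0[OF hH])
  finally show ?thesis by (simp add: mon0_e0[OF hB])
qed

lemma h_equiv:
  "mapeq (fst (unit_obj::'k::field object)) (ddphi n B H phi unit_obj \<circ> fmor H (fst (unit_obj::'k::field object)) (mon0 B) \<circ> mon0 H) (fmor B (fst (unit_obj::'k::field object)) (mon0 H) \<circ> mon0 B)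
   \<longleftrightarrow> phi (tv dH (hone B) (hone H)) = tv dB (hone H) (hone B)"
proof -
  have lL: "lin 1 (1*(dH*dB)) (ddphi n B H phi unit_obj \<circ> fmor H (fst (unit_obj::'k object)) (mon0 B) \<circ> mon0 H)"
  proof -
    have l2: "lin (1*dH) (1*dB*dH) (fmor H (fst (unit_obj::'k object)) (mon0 B))" unfolding fmor_def unit_fst by (rule tmap_lin[OF lmon0[OF hB] lin_id])
    have l3: "lin (1*(dB*dH)) (1*(dH*dB)) (ddphi n B H phi (unit_obj::'k object))" using lddphi[of unit_obj n] by simp
    show ?thesis by (rule lin_dim[OF lin_comp'[OF lmon0[OF hH] lin_comp'[OF l2 l3]]]) simp_all
  qed
  have lR: "lin 1 (1*dH*dB) (fmor B (fst (unit_obj::'k object)) (mon0 H) \<circ> mon0 B)"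
    unfolding fmor_def unit_fst by (rule lin_dim[OF lin_comp'[OF lmon0[OF hB] tmap_lin[OF lmon0[OF hH] lin_id]]]) simp_all
  have T: "blin (dH*dB) (tmap dH dB dB id (Z n))" by (rule blin_tmap(1)[OF blin_id zpow_blin[OF bB(5)]])
  have P: "psi0 n (tv dH (hone B) (hone H)) = tmap dH dB dB id (Z n) (phi (tv dH (hone B) (hone H)))"
    using psi0_pt[OF bB(2) bH(2)] by (simp add: hb_zpow(2)[OF hB] hb_alpha(2)[OF hH])
  have T1: "tmap dH dB dB id (Z n) (tv dB (hone H) (hone B)) = tv dB (hone H) (hone B)"
    using tmap_tv[OF lin_id lZ bH(2) bB(2), of n] by (simp add: hb_zpow(2)[OF hB])
  have v1: "phi (tv dH (hone B) (hone H)) \<in> vsp (dH*dB)" using vphi[OF bB(2) bH(2)] .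
  have v2: "tv dB (hone H) (hone B) \<in> vsp (dH*dB)" using tv_vsp[OF bH(2) bB(2)] .
  have "mapeq (fst (unit_obj::'k object)) (ddphi n B H phi unit_obj \<circ> fmor H (fst (unit_obj::'k object)) (mon0 B) \<circ> mon0 H) (fmor B (fst (unit_obj::'k object)) (mon0 H) \<circ> mon0 B)
    \<longleftrightarrow> psi0 n (tv dH (hone B) (hone H)) = tv dB (hone H) (hone B)"
  proof
    assume "mapeq (fst (unit_obj::'k object)) (ddphi n B H phi unit_obj \<circ> fmor H (fst (unit_obj::'k object)) (mon0 B) \<circ> mon0 H) (fmor B (fst (unit_obj::'k object)) (mon0 H) \<circ> mon0 B)"
    from mapeqD[OF this, of "ebasis 0"] show "psi0 n (tv dH (hone B) (hone H)) = tv dB (hone H) (hone B)"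
      using h_L h_R by simp
  next
    assume e: "psi0 n (tv dH (hone B) (hone H)) = tv dB (hone H) (hone B)"
    have "mapeq 1 (ddphi n B H phi unit_obj \<circ> fmor H (fst (unit_obj::'k object)) (mon0 B) \<circ> mon0 H) (fmor B (fst (unit_obj::'k object)) (mon0 H) \<circ> mon0 B)"
      by (rule lin_ext[OF lL lR]) (use h_L h_R e in simp)
    then show "mapeq (fst (unit_obj::'k object)) (ddphi n B H phi unit_obj \<circ> fmor H (fst (unit_obj::'k object)) (mon0 B) \<circ> mon0 H) (fmor B (fst (unit_obj::'k object)) (mon0 H) \<circ> mon0 B)"
      by simp
  qed
  also have "\<dots> \<longleftrightarrow> phi (tv dH (hone B) (hone H)) = tv dB (hone H) (hone B)"
    using P T1 iv_left[OF T v1] iv_left[OF T v2] by metis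
  finally show ?thesis .
qed


lemma Zk: "v \<in> vsp dB \<Longrightarrow> k + l = m \<Longrightarrow> Z k (Z l v) = Z m v" using Zadd by simp
lemma Z'k: "v \<in> vsp dH \<Longrightarrow> k + l = m \<Longrightarrow> Z' k (Z' l v) = Z' m v" using Z'add by simp

lemma mulBZ: "x \<in> vsp dB \<Longrightarrow> y \<in> vsp dB \<Longrightarrow> Z k (hmul B (tv dB x y)) = hmul B (tv dB (Z k x) (Z k y))"
  using hb_zpow(1)[OF hB tv_vsp, of x y k] tmap_tv[OF lZ lZ, of x y k k] by simp

lemma mulH_aH: "x \<in> vsp dH \<Longrightarrow> y \<in> vsp dH \<Longrightarrow> aH (hmul H (tv dH x y)) = hmul H (tv dH (aH x) (aH y))"
  using hb_alpha(1)[OF hH] by simp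

lemma tprod_Z:
  assumes X: "X \<in> vsp (dH*dB)" and Y: "Y \<in> vsp (dH*dB)"
  shows "tprod dH (hmul H) dB (hmul B) (tmap dH dB dB id (Z n) X) (tmap dH dB dB id (Z n) Y)
       = tmap dH dB dB id (Z n) (tprod dH (hmul H) dB (hmul B) X Y)"
proof (rule bilin_ext[where F="\<lambda>X Y. tprod dH (hmul H) dB (hmul B) (tmap dH dB dB id (Z n) X) (tmap dH dB dB id (Z n) Y)"
      and G="\<lambda>X Y. tmap dH dB dB id (Z n) (tprod dH (hmul H) dB (hmul B) X Y)", OF _ _ _ _ _ X Y])
  note T = tmap_lin[OF lin_id[of dH] lZ[of n]]
  show "lin (dH*dB) (dH*dB) (\<lambda>X. tprod dH (hmul H) dB (hmul B) (tmap dH dB dB id (Z n) X) (tmap dH dB dB id (Z n) V))" for V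
    using lin_comp[OF T tprod_linL[OF bH(1) bB(1)]] by (simp add: comp_def)
  show "lin (dH*dB) (dH*dB) (\<lambda>V. tprod dH (hmul H) dB (hmul B) (tmap dH dB dB id (Z n) U) (tmap dH dB dB id (Z n) V))" for U
    using lin_comp[OF T tprod_linR[OF bH(1) bB(1)]] by (simp add: comp_def)
  show "lin (dH*dB) (dH*dB) (\<lambda>X. tmap dH dB dB id (Z n) (tprod dH (hmul H) dB (hmul B) X V))" for V
    using lin_comp[OF tprod_linL[OF bH(1) bB(1)] T] by (simp add: comp_def)
  show "lin (dH*dB) (dH*dB) (\<lambda>V. tmap dH dB dB id (Z n) (tprod dH (hmul H) dB (hmul B) U V))" for U
    using lin_comp[OF tprod_linR[OF bH(1) bB(1)] T] by (simp add: comp_def)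
  fix u1 u2 v1 v2 :: "'k vect" assume u1: "u1 \<in> vsp dH" and u2: "u2 \<in> vsp dB" and v1: "v1 \<in> vsp dH" and v2: "v2 \<in> vsp dB"
  show "tprod dH (hmul H) dB (hmul B) (tmap dH dB dB id (Z n) (tv dB u1 u2)) (tmap dH dB dB id (Z n) (tv dB v1 v2))
       = tmap dH dB dB id (Z n) (tprod dH (hmul H) dB (hmul B) (tv dB u1 u2) (tv dB v1 v2))"
    by (simp add: tmap_tv[OF lin_id lZ] u1 u2 v1 v2 vZ tprod_tv[OF bH(1) bB(1)] linD1[OF bH(1)] linD1[OF bB(1)] tv_vsp mulBZ)
qed

lemma ZZcomm:
  assumes Y: "Y \<in> vsp (dH*dB)"
  shows "tmap dH dB dB (Z' i) (Z i) (tmap dH dB dB id (Z n) Y) = tmap dH dB dB id (Z n) (tmap dH dB dB (Z' i) (Z i) Y)"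
proof -
  have "tmap dH dB dB (Z' i) (Z i) (tmap dH dB dB id (Z n) Y) = tmap dH dB dB (Z' i) (Z (i+n)) Y"
    by (rule tmap_pt[OF lin_id lZ lZ' lZ Y]) (simp_all add: mapeq_def Zadd)
  also have "\<dots> = tmap dH dB dB id (Z n) (tmap dH dB dB (Z' i) (Z i) Y)"
    by (rule tmap_pt[OF lZ' lZ lin_id lZ Y, symmetric]) (simp_all add: mapeq_def Zadd add.commute)
  finally show ?thesis .
qed

lemma Gin_pure:
  assumes b: "b \<in> vsp dB" and c: "c \<in> vsp dB" and h: "h \<in> vsp dH" and g: "g \<in> vsp dH"
  shows "psi0 n (tv dH (hmul B (tv dB (Z i b) (Z j c))) (hmul H (tv dH (Z' i h) (Z' j g))))
      = tmap dH dB dB id (Z n) (phi (tv dH (hmul B (tv dB (Z (i-n-1) b) (Z (j-n-1) c))) (hmul H (tv dH (Z' (i+1) h) (Z' (j+1) g)))))"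
    "TT i j (psi0 n (tv dH b h)) (psi0 n (tv dH c g))
      = tmap dH dB dB id (Z n) (tprod dH (hmul H) dB (hmul B) (phi (tv dH (Z (i-n-1) b) (Z' (i+1) h))) (phi (tv dH (Z (j-n-1) c) (Z' (j+1) g))))"
proof -
  have m1: "hmul B (tv dB (Z i b) (Z j c)) \<in> vsp dB" using linD1[OF bB(1) tv_vsp[OF vZ[OF b] vZ[OF c]]] .
  have m2: "hmul H (tv dH (Z' i h) (Z' j g)) \<in> vsp dH" using linD1[OF bH(1) tv_vsp[OF vZ'[OF h] vZ'[OF g]]] .
  have z1: "Z (-n-1) (hmul B (tv dB (Z i b) (Z j c))) = hmul B (tv dB (Z (i-n-1) b) (Z (j-n-1) c))"
    using mulBZ[OF vZ[OF b] vZ[OF c], of "-n-1" i j] Zk[OF b, of "-n-1" i "i-n-1"] Zk[OF c, of "-n-1" j "j-n-1"] by simp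
  have z2: "aH (hmul H (tv dH (Z' i h) (Z' j g))) = hmul H (tv dH (Z' (i+1) h) (Z' (j+1) g))"
    using mulH_aH[OF vZ'[OF h] vZ'[OF g]] aH_Z'[OF h] aH_Z'[OF g] by simp
  show "psi0 n (tv dH (hmul B (tv dB (Z i b) (Z j c))) (hmul H (tv dH (Z' i h) (Z' j g))))
      = tmap dH dB dB id (Z n) (phi (tv dH (hmul B (tv dB (Z (i-n-1) b) (Z (j-n-1) c))) (hmul H (tv dH (Z' (i+1) h) (Z' (j+1) g)))))"
    using psi0_pt[OF m1 m2, of n] z1 z2 by simp
  have P: "tmap dH dB dB (Z' k) (Z k) (psi0 n (tv dH x y)) = tmap dH dB dB id (Z n) (phi (tv dH (Z (k-n-1) x) (Z' (k+1) y)))"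
    if x: "x \<in> vsp dB" and y: "y \<in> vsp dH" for k x y
  proof -
    have Y: "phi (tv dH (Z (-n-1) x) (aH y)) \<in> vsp (dH*dB)" using vphi[OF vZ[OF x] vaH[OF y]] .
    have "tmap dH dB dB (Z' k) (Z k) (psi0 n (tv dH x y)) = tmap dH dB dB id (Z n) (tmap dH dB dB (Z' k) (Z k) (phi (tv dH (Z (-n-1) x) (aH y))))"
      by (simp add: psi0_pt x y ZZcomm[OF Y])
    also have "\<dots> = tmap dH dB dB id (Z n) (phi (tv dH (Z k (Z (-n-1) x)) (Z' k (aH y))))"
      by (simp add: phiZ_pt vZ x vaH y)
    also have "\<dots> = tmap dH dB dB id (Z n) (phi (tv dH (Z (k-n-1) x) (Z' (k+1) y)))"
    proof -
      have "Z k (Z (-n-1) x) = Z (k-n-1) x" by (rule Zk[OF x]) simp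
      moreover have "Z' k (aH y) = Z' (k+1) y" using Z'_comm[OF y, of k] aH_Z'[OF y] by simp
      ultimately show ?thesis by simp
    qed
    finally show ?thesis .
  qed
  show "TT i j (psi0 n (tv dH b h)) (psi0 n (tv dH c g))
      = tmap dH dB dB id (Z n) (tprod dH (hmul H) dB (hmul B) (phi (tv dH (Z (i-n-1) b) (Z' (i+1) h))) (phi (tv dH (Z (j-n-1) c) (Z' (j+1) g))))"
    unfolding TT_def P[OF b h] P[OF c g]
    by (rule tprod_Z[OF vphi[OF vZ[OF b] vZ'[OF h]] vphi[OF vZ[OF c] vZ'[OF g]]])
qed

definition "M5 \<longleftrightarrow> (\<forall>a\<in>vsp dB. \<forall>b\<in>vsp dB. \<forall>h\<in>vsp dH. \<forall>g\<in>vsp dH.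
       tprod dH (hmul H) dB (hmul B) (phi (tv dH a h)) (phi (tv dH b g))
       = phi (tv dH (hmul B (tv dB a b)) (hmul H (tv dH h g))))"

lemma Gin_equiv: "Gin n i j \<longleftrightarrow> M5"
proof
  have T: "blin (dH*dB) (tmap dH dB dB id (Z n))" by (rule blin_tmap(1)[OF blin_id zpow_blin[OF bB(5)]])
  assume G: "Gin n i j"
  show M5 unfolding M5_def
  proof (intro ballI)
    fix a b h g :: "'k vect" assume a: "a \<in> vsp dB" and b: "b \<in> vsp dB" and h: "h \<in> vsp dH" and g: "g \<in> vsp dH"
    let ?b = "Z (n+1-i) a" and ?c = "Z (n+1-j) b" and ?h = "Z' (-i-1) h" and ?g = "Z' (-j-1) g"
    have e: "Z (i-n-1) ?b = a" "Z (j-n-1) ?c = b" "Z' (i+1) ?h = h" "Z' (j+1) ?g = g"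
      using Zk[OF a, of "i-n-1" "n+1-i" 0] Zk[OF b, of "j-n-1" "n+1-j" 0] Z'k[OF h, of "i+1" "-i-1" 0] Z'k[OF g, of "j+1" "-j-1" 0]
      by simp_all
    have "psi0 n (tv dH (hmul B (tv dB (Z i ?b) (Z j ?c))) (hmul H (tv dH (Z' i ?h) (Z' j ?g))))
        = TT i j (psi0 n (tv dH ?b ?h)) (psi0 n (tv dH ?c ?g))"
      using G vZ[OF a] vZ[OF b] vZ'[OF h] vZ'[OF g] by (simp add: Gin_def)
    then have "tmap dH dB dB id (Z n) (phi (tv dH (hmul B (tv dB a b)) (hmul H (tv dH h g))))
       = tmap dH dB dB id (Z n) (tprod dH (hmul H) dB (hmul B) (phi (tv dH a h)) (phi (tv dH b g)))"
      using Gin_pure[OF vZ[OF a, of "n+1-i"] vZ[OF b, of "n+1-j"] vZ'[OF h, of "-i-1"] vZ'[OF g, of "-j-1"], where n=n and i=i and j=j] e by simp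
    moreover have "phi (tv dH (hmul B (tv dB a b)) (hmul H (tv dH h g))) \<in> vsp (dH*dB)"
      using vphi[OF linD1[OF bB(1) tv_vsp[OF a b]] linD1[OF bH(1) tv_vsp[OF h g]]] .
    moreover have "tprod dH (hmul H) dB (hmul B) (phi (tv dH a h)) (phi (tv dH b g)) \<in> vsp (dH*dB)"
      by (rule tprod_vsp[OF bH(1) bB(1)])
    ultimately show "tprod dH (hmul H) dB (hmul B) (phi (tv dH a h)) (phi (tv dH b g))
       = phi (tv dH (hmul B (tv dB a b)) (hmul H (tv dH h g)))"
      using iv_left[OF T] by metis
  qed
next
  assume M: M5
  show "Gin n i j" unfolding Gin_def
  proof (intro ballI)
    fix b c h g :: "'k vect" assume b: "b \<in> vsp dB" and c: "c \<in> vsp dB" and h: "h \<in> vsp dH" and g: "g \<in> vsp dH"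
    show "psi0 n (tv dH (hmul B (tv dB (Z i b) (Z j c))) (hmul H (tv dH (Z' i h) (Z' j g))))
      = TT i j (psi0 n (tv dH b h)) (psi0 n (tv dH c g))"
      unfolding Gin_pure[OF b c h g] using M vZ[OF b] vZ[OF c] vZ'[OF h] vZ'[OF g] by (simp add: M5_def)
  qed
qed

end

theorem proposition4p8:
  fixes B H :: "('k::field_char_0) hbialg"
    and phi :: "'k lmap"
    and i j n :: int
  assumes "hom_bialgebra B" and "hom_bialgebra H"
    and "lin (hdim B * hdim H) (hdim H * hdim B) phi"
    and "\<forall>u\<in>vsp (hdim B * hdim H).
           phi (tmap (hdim B) (hdim H) (hdim H) (halpha B) (halpha H) u)
           = tmap (hdim H) (hdim B) (hdim B) (halpha H) (halpha B) (phi u)"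
  shows "mon_comonad_distr_law i j B H (ddphi n B H phi)
         \<longleftrightarrow> hom_cotwistor B H phi \<and> cond_M5 B H phi \<and> cond_M6 B H phi"
proof -
  interpret PH B H phi using assms by unfold_locales
  have hc: "hom_cotwistor B H phi \<longleftrightarrow> M1 \<and> M2 \<and> M3 \<and> M4"
    by (simp only: hom_cotwistor_def Let_def M1_def M1L_def M1R_def M2_def M2L_def M2R_def M3_def M4_def)
  have c5: "cond_M5 B H phi \<longleftrightarrow> M5" by (simp only: cond_M5_def M5_def Let_def)
  have c6: "cond_M6 B H phi \<longleftrightarrow> phi (tv dH (hone B) (hone H)) = tv dB (hone H) (hone B)" by (simp add: cond_M6_def)
  have m1': "M1 \<Longrightarrow> mapeq (dB*dH) (PcL n) (PcR n)" using c_equiv by blast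
  have m2': "M2 \<Longrightarrow> mapeq (dB*dH) (PdL n) (PdR n)" using d_equiv by blast
  have m3': "M3 \<Longrightarrow> mapeq (dB*dH) (PeL n) PeR" using e_equiv by blast
  have m4': "M4 \<Longrightarrow> mapeq (dB*dH) (PfL n) PfR" using f_equiv by blast
  have m5': "M5 \<Longrightarrow> Gin n i j" using Gin_equiv by blast
  show ?thesis
    unfolding mon_comonad_distr_law_def Let_def hc c5 c6
    apply (intro iffI)
    subgoal premises L
    proof -
      note L3 = L[THEN conjunct2, THEN conjunct2, THEN conjunct1, rule_format, OF obj_unit]
      note L4 = L[THEN conjunct2, THEN conjunct2, THEN conjunct2, THEN conjunct1, rule_format, OF obj_unit]
      note L5 = L[THEN conjunct2, THEN conjunct2, THEN conjunct2, THEN conjunct2, THEN conjunct1, rule_format, OF obj_unit]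
      note L6 = L[THEN conjunct2, THEN conjunct2, THEN conjunct2, THEN conjunct2, THEN conjunct2, THEN conjunct1, rule_format, OF obj_unit]
      note L7 = L[THEN conjunct2, THEN conjunct2, THEN conjunct2, THEN conjunct2, THEN conjunct2, THEN conjunct2, THEN conjunct1, rule_format, OF obj_unit obj_unit]
      note L8 = L[THEN conjunct2, THEN conjunct2, THEN conjunct2, THEN conjunct2, THEN conjunct2, THEN conjunct2, THEN conjunct2]
      have "M1" using c_only[OF L3] c_equiv by blast
      moreover have "M2" using d_only[OF L4] d_equiv by blast
      moreover have "M3" using e_only[OF L5] e_equiv by blast
      moreover have "M4" using f_only[OF L6] f_equiv by blast
      moreover have "M5" using g_only[OF L7] Gin_equiv by blast
      moreover have "phi (tv dH (hone B) (hone H)) = tv dB (hone H) (hone B)"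
        using h_equiv[of n] L8 by simp
      ultimately show ?thesis by blast
    qed
    subgoal premises R
    proof -
      have m1: M1 and m2: M2 and m3: M3 and m4: M4 and m5: M5
        and m6: "phi (tv dH (hone B) (hone H)) = tv dB (hone H) (hone B)" using R by blast+
      have h8: "mapeq 1 (ddphi n B H phi unit_obj \<circ> fmor H (fst (unit_obj::'k object)) (mon0 B) \<circ> mon0 H)
         (fmor B (fst (unit_obj::'k object)) (mon0 H) \<circ> mon0 B)"
        using h_equiv[of n] m6 by simp
      show ?thesis
        apply (intro conjI allI impI)
        apply (rule a_cond; assumption)
        apply (rule b_cond; assumption)
        apply (rule c_if[OF _ m1'[OF m1]]; assumption)
        apply (rule d_if[OF _ m2'[OF m2]]; assumption)
        apply (rule e_if[OF _ m3'[OF m3]]; assumption)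
        apply (rule f_if[OF _ m4'[OF m4]]; assumption)
        apply (rule g_if[OF _ _ m5'[OF m5]]; assumption)
        apply (rule h8)
        done
    qed
    done
qed

end
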